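(* Let $\Lambda=k(\Gamma,\mathcal{A},I)$ be a generalized bound path algebra, $i\in\Gamma_0$, $1\le j\le s_i$. Let $((M_l)_{l\in\Gamma_0},(\phi_\alpha)_{\alpha\in\Gamma_1})$ be the representation of $P(i,j)=\overline{e_{ij}}\Lambda$, so that $M_i=P_i^j=e_{ij}A_i$. Then $\operatorname{rad}P(i,j)$ is given by the representation $((N_l)_{l\in\Gamma_0},(\psi_\alpha)_{\alpha\in\Gamma_1})$, where: - $N_i=\operatorname{rad}P_i^j$; - $N_l=M_l$ for $l\neq i$; - $\psi_\alpha=\phi_\alpha|_{N_{s(\alpha)}}$ for every $\alpha\in\Gamma_1$.
   Context: $k$ is an algebraically closed field, $\Gamma$ a finite acyclic quiver, and $\mathcal{A}=\{A_i:i\in\Gamma_0\}$ finite-dimensional basic $k$-algebras with $A_i\cong k\Sigma_i/\Omega_i$. $I$ is a finite set of relations in $\Gamma$ generating an admissible ideal. $\Lambda=k(\Gamma,\mathcal{A},I)=k(\Gamma,\mathcal{A})/(\mathcal{A}(I))$ is the generalized bound path algebra: - $k(\Gamma,\mathcal{A})$ is spanned by $\mathcal{A}$-paths $a_1\beta_1\cdots a_n\beta_na_{n+1}$ ($a_i\in A_{s(\beta_i)}$, $a_{n+1}\in A_{e(\beta_n)}$) modulo multilinearity, with concatenation product; - $\mathcal{A}(I)$ consists of the elements $\sum_r\lambda_r\beta_{r1}\overline{\gamma_{r1}}\cdots\overline{\gamma_{r(m_r-1)}}\beta_{rm_r}$ with $\sum_r\lambda_r\beta_{r1}\cdots\beta_{rm_r}\in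 I$ and $\gamma_{rj}$ paths in $\Sigma_{e(\beta_{rj})}$. For each $i$, $\{e_{i1},\dots,e_{is_i}\}$ is a complete set of primitive pairwise orthogonal idempotents of $A_i$, and $P_i^j=e_{ij}A_i$. Right $\Lambda$-modules are identified with representations: $X_l=X\cdot1_l$ (an $A_l$-module) and $\phi_\alpha(x)=x\alpha$ for $\alpha:l\to l'$. A subrepresentation corresponds to a submodule. *)

theory Defs
  imports "HOL-Computational_Algebra.Polynomial" "HOL-Library.FuncSet"
begin

record ('k, 'a) alg =
  acar :: "'a set"
  aadd :: "'a \<Rightarrow> 'a \<Rightarrow> 'a"
  amul :: "'a \<Rightarrow> 'a \<Rightarrow> 'a"
  asmul :: "'k \<Rightarrow> 'a \<Rightarrow> 'a"
  azero :: "'a"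
  aone :: "'a"

definition is_subspace :: "('k, 'a) alg \<Rightarrow> 'a set \<Rightarrow> bool" where
  "is_subspace A J \<longleftrightarrow> J \<subseteq> acar A \<and> azero A \<in> J \<and>
     (\<forall>x\<in>J. \<forall>y\<in>J. aadd A x y \<in> J) \<and> (\<forall>c. \<forall>x\<in>J. asmul A c x \<in> J)"

definition is_ideal :: "('k, 'a) alg \<Rightarrow> 'a set \<Rightarrow> bool" where
  "is_ideal A J \<longleftrightarrow> is_subspace A J \<and>
     (\<forall>x\<in>J. \<forall>r\<in>acar A. amul A r x \<in> J \<and> amul A x r \<in> J)"

definition span :: "('k, 'a) alg \<Rightarrow> 'a set \<Rightarrow> 'a set" where
  "span A S = \<Inter>{J. is_subspace A J \<and> S \<subseteq> J}"

definition ideal_gen :: "('k, 'a) alg \<Rightarrow> 'a set \<Rightarrow> 'a set" where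
  "ideal_gen A S = \<Inter>{J. is_ideal A J \<and> S \<subseteq> J}"

definition cos :: "('k, 'a) alg \<Rightarrow> 'a set \<Rightarrow> 'a \<Rightarrow> 'a set" where
  "cos A J x = {y \<in> acar A. \<exists>j\<in>J. y = aadd A x j}"

definition rep :: "'a set \<Rightarrow> 'a" where
  "rep X = (SOME x. x \<in> X)"

definition quot :: "('k, 'a) alg \<Rightarrow> 'a set \<Rightarrow> ('k, 'a set) alg" where
  "quot A J = \<lparr> acar = cos A J ` acar A,
     aadd = (\<lambda>X Y. cos A J (aadd A (rep X) (rep Y))),
     amul = (\<lambda>X Y. cos A J (amul A (rep X) (rep Y))),
     asmul = (\<lambda>c X. cos A J (asmul A c (rep X))),
     azero = cos A J (azero A),
     aone = cos A J (aone A) \<rparr>"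

text \<open>Algebra with basis B and partial multiplication of basis elements
  (finitely supported functions B \<Rightarrow> k); the unit is the sum of the elements of U.\<close>
definition fsupp :: "('b \<Rightarrow> 'k::zero) \<Rightarrow> 'b set" where
  "fsupp f = {x. f x \<noteq> 0}"

definition delta :: "'b \<Rightarrow> 'b \<Rightarrow> 'k::{zero,one}" where
  "delta w = (\<lambda>x. if x = w then 1 else 0)"

definition salg :: "'b set \<Rightarrow> ('b \<Rightarrow> 'b \<Rightarrow> 'b option) \<Rightarrow> 'b set \<Rightarrow> ('k::field, 'b \<Rightarrow> 'k) alg" where
  "salg B pp U = \<lparr> acar = {f. finite (fsupp f) \<and> fsupp f \<subseteq> B},
     aadd = (\<lambda>f g x. f x + g x),
     amul = (\<lambda>f g w. \<Sum>u\<in>fsupp f. \<Sum>v\<in>fsupp g. (if pp u v = Some w then f u * g v else 0)),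
     asmul = (\<lambda>c f x. c * f x),
     azero = (\<lambda>x. 0),
     aone = (\<lambda>x. if x \<in> U then 1 else 0) \<rparr>"

record ('v, 'e) quiver =
  qV :: "'v set"
  qE :: "'e set"
  qs :: "'e \<Rightarrow> 'v"
  qt :: "'e \<Rightarrow> 'v"

definition finite_quiver :: "('v, 'e) quiver \<Rightarrow> bool" where
  "finite_quiver Q \<longleftrightarrow> finite (qV Q) \<and> finite (qE Q) \<and>
     (\<forall>a\<in>qE Q. qs Q a \<in> qV Q \<and> qt Q a \<in> qV Q)"

text \<open>A path is (start vertex, list of arrows), composed left to right
  (the end of an arrow is the start of the next one); (v, []) is the trivial path.\<close>
definition is_path :: "('v, 'e) quiver \<Rightarrow> 'v \<times> 'e list \<Rightarrow> bool" where
  "is_path Q p \<longleftrightarrow> fst p \<in> qV Q \<and> set (snd p) \<subseteq> qE Q \<and>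
     (snd p \<noteq> [] \<longrightarrow> qs Q (hd (snd p)) = fst p) \<and>
     (\<forall>r. Suc r < length (snd p) \<longrightarrow> qs Q (snd p ! Suc r) = qt Q (snd p ! r))"

definition pend :: "('v, 'e) quiver \<Rightarrow> 'v \<times> 'e list \<Rightarrow> 'v" where
  "pend Q p = (if snd p = [] then fst p else qt Q (last (snd p)))"

text \<open>r-th vertex visited by the path (r = 0 .. length).\<close>
definition vtx :: "('v, 'e) quiver \<Rightarrow> 'v \<times> 'e list \<Rightarrow> nat \<Rightarrow> 'v" where
  "vtx Q p r = (if r = 0 then fst p else qt Q (snd p ! (r - 1)))"

definition pcat :: "('v, 'e) quiver \<Rightarrow> 'v \<times> 'e list \<Rightarrow> 'v \<times> 'e list \<Rightarrow> ('v \<times> 'e list) option" where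
  "pcat Q p q = (if pend Q p = fst q then Some (fst p, snd p @ snd q) else None)"

definition acyclic_quiver :: "('v, 'e) quiver \<Rightarrow> bool" where
  "acyclic_quiver Q \<longleftrightarrow> (\<forall>p. is_path Q p \<and> snd p \<noteq> [] \<longrightarrow> pend Q p \<noteq> fst p)"

definition path_alg :: "('v, 'e) quiver \<Rightarrow> ('k::field, 'v \<times> 'e list \<Rightarrow> 'k) alg" where
  "path_alg Q = salg {p. is_path Q p} (pcat Q) {(v, []) | v. v \<in> qV Q}"

definition arrow_pow :: "('v, 'e) quiver \<Rightarrow> nat \<Rightarrow> ('v \<times> 'e list \<Rightarrow> 'k::field) set" where
  "arrow_pow Q m = {f \<in> acar (path_alg Q). \<forall>p\<in>fsupp f. m \<le> length (snd p)}"

definition admissible :: "('v, 'e) quiver \<Rightarrow> ('v \<times> 'e list \<Rightarrow> 'k::field) set \<Rightarrow> bool" where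
  "admissible Q J \<longleftrightarrow> is_ideal (path_alg Q) J \<and>
     (\<exists>m\<ge>2. arrow_pow Q m \<subseteq> J) \<and> J \<subseteq> arrow_pow Q 2"

definition is_relation :: "('v, 'e) quiver \<Rightarrow> ('v \<times> 'e list \<Rightarrow> 'k::field) \<Rightarrow> bool" where
  "is_relation Q \<rho> \<longleftrightarrow> \<rho> \<in> acar (path_alg Q) \<and>
     (\<exists>a b. \<forall>p\<in>fsupp \<rho>. fst p = a \<and> pend Q p = b \<and> 2 \<le> length (snd p))"

definition Aalg :: "('v \<Rightarrow> ('w, 'f) quiver) \<Rightarrow> ('v \<Rightarrow> ('w \<times> 'f list \<Rightarrow> 'k::field) set) \<Rightarrow> 'v
     \<Rightarrow> ('k, ('w \<times> 'f list \<Rightarrow> 'k) set) alg" where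
  "Aalg \<Sigma> \<Omega> l = quot (path_alg (\<Sigma> l)) (\<Omega> l)"

text \<open>Formal A-paths a_1 beta_1 a_2 ... beta_n a_(n+1): (path in Gamma, [a_1, ..., a_(n+1)]).\<close>
definition valid_word :: "('v, 'e) quiver \<Rightarrow> ('v \<Rightarrow> ('k, 'a) alg) \<Rightarrow> ('v \<times> 'e list) \<times> 'a list \<Rightarrow> bool" where
  "valid_word \<Gamma> A w \<longleftrightarrow> is_path \<Gamma> (fst w) \<and> length (snd w) = Suc (length (snd (fst w))) \<and>
     (\<forall>r\<le>length (snd (fst w)). snd w ! r \<in> acar (A (vtx \<Gamma> (fst w) r)))"

definition wprod :: "('v, 'e) quiver \<Rightarrow> ('v \<Rightarrow> ('k, 'a) alg) \<Rightarrow> ('v \<times> 'e list) \<times> 'a list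
     \<Rightarrow> ('v \<times> 'e list) \<times> 'a list \<Rightarrow> (('v \<times> 'e list) \<times> 'a list) option" where
  "wprod \<Gamma> A u v = (if pend \<Gamma> (fst u) = fst (fst v)
     then Some ((fst (fst u), snd (fst u) @ snd (fst v)),
                butlast (snd u) @ [amul (A (fst (fst v))) (last (snd u)) (hd (snd v))] @ tl (snd v))
     else None)"

definition free_alg :: "('v, 'e) quiver \<Rightarrow> ('v \<Rightarrow> ('k::field, 'a) alg)
     \<Rightarrow> ('k, ('v \<times> 'e list) \<times> 'a list \<Rightarrow> 'k) alg" where
  "free_alg \<Gamma> A = salg {w. valid_word \<Gamma> A w} (wprod \<Gamma> A) {((l, []), [aone (A l)]) | l. l \<in> qV \<Gamma>}"

definition multilin_gens :: "('v, 'e) quiver \<Rightarrow> ('v \<Rightarrow> ('k::field, 'a) alg)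
     \<Rightarrow> (('v \<times> 'e list) \<times> 'a list \<Rightarrow> 'k) set" where
  "multilin_gens \<Gamma> A =
     {f. \<exists>p as r a a'. valid_word \<Gamma> A (p, as) \<and> r < length as \<and>
          a \<in> acar (A (vtx \<Gamma> p r)) \<and> a' \<in> acar (A (vtx \<Gamma> p r)) \<and>
          f = (\<lambda>x. delta (p, as[r := aadd (A (vtx \<Gamma> p r)) a a']) x
                    - delta (p, as[r := a]) x - delta (p, as[r := a']) x)}
   \<union> {f. \<exists>p as r a c. valid_word \<Gamma> A (p, as) \<and> r < length as \<and>
          a \<in> acar (A (vtx \<Gamma> p r)) \<and>
          f = (\<lambda>x. delta (p, as[r := asmul (A (vtx \<Gamma> p r)) c a]) x - c * delta (p, as[r := a]) x)}"

definition kGA :: "('v, 'e) quiver \<Rightarrow> ('v \<Rightarrow> ('k::field, 'a) alg)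
     \<Rightarrow> ('k, (('v \<times> 'e list) \<times> 'a list \<Rightarrow> 'k) set) alg" where
  "kGA \<Gamma> A = quot (free_alg \<Gamma> A) (span (free_alg \<Gamma> A) (multilin_gens \<Gamma> A))"

definition wcls :: "('v, 'e) quiver \<Rightarrow> ('v \<Rightarrow> ('k::field, 'a) alg) \<Rightarrow> ('v \<times> 'e list) \<times> 'a list
     \<Rightarrow> (('v \<times> 'e list) \<times> 'a list \<Rightarrow> 'k) set" where
  "wcls \<Gamma> A w = cos (free_alg \<Gamma> A) (span (free_alg \<Gamma> A) (multilin_gens \<Gamma> A)) (delta w)"

text \<open>The A-path beta_1 gamma_1bar beta_2 ... gamma_(m-1)bar beta_m attached to a path p of Gamma
  and a choice g of paths gamma_j in Sigma_(vtx p j).\<close>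
definition rel_word :: "('v, 'e) quiver \<Rightarrow> ('v \<Rightarrow> ('w, 'f) quiver) \<Rightarrow> ('v \<Rightarrow> ('w \<times> 'f list \<Rightarrow> 'k::field) set)
     \<Rightarrow> ('v \<times> 'e list) \<Rightarrow> (nat \<Rightarrow> 'w \<times> 'f list)
     \<Rightarrow> ('v \<times> 'e list) \<times> ('w \<times> 'f list \<Rightarrow> 'k) set list" where
  "rel_word \<Gamma> \<Sigma> \<Omega> p g = (p, map (\<lambda>r. if r = 0 \<or> r = length (snd p)
        then aone (Aalg \<Sigma> \<Omega> (vtx \<Gamma> p r))
        else cos (path_alg (\<Sigma> (vtx \<Gamma> p r))) (\<Omega> (vtx \<Gamma> p r)) (delta (g r)))
      [0..<Suc (length (snd p))])"

definition AI :: "('v, 'e) quiver \<Rightarrow> ('v \<Rightarrow> ('w, 'f) quiver) \<Rightarrow> ('v \<Rightarrow> ('w \<times> 'f list \<Rightarrow> 'k::field) set)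
     \<Rightarrow> ('v \<times> 'e list \<Rightarrow> 'k) set
     \<Rightarrow> (('v \<times> 'e list) \<times> ('w \<times> 'f list \<Rightarrow> 'k) set list \<Rightarrow> 'k) set set" where
  "AI \<Gamma> \<Sigma> \<Omega> I = {cos (free_alg \<Gamma> (Aalg \<Sigma> \<Omega>)) (span (free_alg \<Gamma> (Aalg \<Sigma> \<Omega>)) (multilin_gens \<Gamma> (Aalg \<Sigma> \<Omega>)))
        (\<lambda>x. \<Sum>p\<in>fsupp \<rho>. if x = rel_word \<Gamma> \<Sigma> \<Omega> p (G p) then \<rho> p else 0)
      | \<rho> G. \<rho> \<in> I \<and> (\<forall>p\<in>fsupp \<rho>. \<forall>r. 0 < r \<and> r < length (snd p) \<longrightarrow>
                                   is_path (\<Sigma> (vtx \<Gamma> p r)) (G p r))}"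

definition gbpa :: "('v, 'e) quiver \<Rightarrow> ('v \<Rightarrow> ('w, 'f) quiver) \<Rightarrow> ('v \<Rightarrow> ('w \<times> 'f list \<Rightarrow> 'k::field) set)
     \<Rightarrow> ('v \<times> 'e list \<Rightarrow> 'k) set
     \<Rightarrow> ('k, (('v \<times> 'e list) \<times> ('w \<times> 'f list \<Rightarrow> 'k) set list \<Rightarrow> 'k) set set) alg" where
  "gbpa \<Gamma> \<Sigma> \<Omega> I = quot (kGA \<Gamma> (Aalg \<Sigma> \<Omega>)) (ideal_gen (kGA \<Gamma> (Aalg \<Sigma> \<Omega>)) (AI \<Gamma> \<Sigma> \<Omega> I))"

definition lcls :: "('v, 'e) quiver \<Rightarrow> ('v \<Rightarrow> ('w, 'f) quiver) \<Rightarrow> ('v \<Rightarrow> ('w \<times> 'f list \<Rightarrow> 'k::field) set)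
     \<Rightarrow> ('v \<times> 'e list \<Rightarrow> 'k) set
     \<Rightarrow> ('v \<times> 'e list) \<times> ('w \<times> 'f list \<Rightarrow> 'k) set list
     \<Rightarrow> (('v \<times> 'e list) \<times> ('w \<times> 'f list \<Rightarrow> 'k) set list \<Rightarrow> 'k) set set" where
  "lcls \<Gamma> \<Sigma> \<Omega> I w = cos (kGA \<Gamma> (Aalg \<Sigma> \<Omega>)) (ideal_gen (kGA \<Gamma> (Aalg \<Sigma> \<Omega>)) (AI \<Gamma> \<Sigma> \<Omega> I))
                         (wcls \<Gamma> (Aalg \<Sigma> \<Omega>) w)"

definition iota where
  "iota \<Gamma> \<Sigma> \<Omega> I l a = lcls \<Gamma> \<Sigma> \<Omega> I ((l, []), [a])"

definition unit_at where
  "unit_at \<Gamma> \<Sigma> \<Omega> I l = iota \<Gamma> \<Sigma> \<Omega> I l (aone (Aalg \<Sigma> \<Omega> l))"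

definition arrow_el where
  "arrow_el \<Gamma> \<Sigma> \<Omega> I \<alpha> = lcls \<Gamma> \<Sigma> \<Omega> I ((qs \<Gamma> \<alpha>, [\<alpha>]),
       [aone (Aalg \<Sigma> \<Omega> (qs \<Gamma> \<alpha>)), aone (Aalg \<Sigma> \<Omega> (qt \<Gamma> \<alpha>))])"

definition idem :: "('k, 'a) alg \<Rightarrow> 'a \<Rightarrow> bool" where
  "idem A e \<longleftrightarrow> e \<in> acar A \<and> amul A e e = e"

definition primitive_idem :: "('k, 'a) alg \<Rightarrow> 'a \<Rightarrow> bool" where
  "primitive_idem A e \<longleftrightarrow> idem A e \<and> e \<noteq> azero A \<and>
     (\<forall>u v. idem A u \<and> idem A v \<and> amul A u v = azero A \<and> amul A v u = azero A \<and>
            aadd A u v = e \<longrightarrow> u = azero A \<or> v = azero A)"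

definition complete_prim_idems :: "('k, 'a) alg \<Rightarrow> (nat \<Rightarrow> 'a) \<Rightarrow> nat \<Rightarrow> bool" where
  "complete_prim_idems A es s \<longleftrightarrow>
     (\<forall>r\<in>{1..s}. primitive_idem A (es r)) \<and>
     (\<forall>r\<in>{1..s}. \<forall>r'\<in>{1..s}. r \<noteq> r' \<longrightarrow> amul A (es r) (es r') = azero A) \<and>
     foldr (aadd A) (map es [1..<Suc s]) (azero A) = aone A"

text \<open>Right submodules of a right ideal M of A (viewed as right A-module).\<close>
definition submod :: "('k, 'a) alg \<Rightarrow> 'a set \<Rightarrow> 'a set \<Rightarrow> bool" where
  "submod A M N \<longleftrightarrow> N \<subseteq> M \<and> azero A \<in> N \<and> (\<forall>x\<in>N. \<forall>y\<in>N. aadd A x y \<in> N) \<and>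
     (\<forall>x\<in>N. \<forall>r\<in>acar A. amul A x r \<in> N)"

definition maxsub :: "('k, 'a) alg \<Rightarrow> 'a set \<Rightarrow> 'a set \<Rightarrow> bool" where
  "maxsub A M N \<longleftrightarrow> submod A M N \<and> N \<noteq> M \<and>
     (\<forall>N'. submod A M N' \<and> N \<subseteq> N' \<longrightarrow> N' = N \<or> N' = M)"

definition mod_rad :: "('k, 'a) alg \<Rightarrow> 'a set \<Rightarrow> 'a set" where
  "mod_rad A M = M \<inter> \<Inter>{N. maxsub A M N}"

definition eA :: "('k, 'a) alg \<Rightarrow> 'a \<Rightarrow> 'a set" where
  "eA A e = {amul A e x | x. x \<in> acar A}"

text \<open>Representation of a submodule X of Lambda_Lambda: X_l = X 1_l, phi_alpha(x) = x alpha.\<close>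
definition rspace where
  "rspace \<Gamma> \<Sigma> \<Omega> I X l = {amul (gbpa \<Gamma> \<Sigma> \<Omega> I) x (unit_at \<Gamma> \<Sigma> \<Omega> I l) | x. x \<in> X}"

definition rmap where
  "rmap \<Gamma> \<Sigma> \<Omega> I X \<alpha> = restrict (\<lambda>x. amul (gbpa \<Gamma> \<Sigma> \<Omega> I) x (arrow_el \<Gamma> \<Sigma> \<Omega> I \<alpha>))
                          (rspace \<Gamma> \<Sigma> \<Omega> I X (qs \<Gamma> \<alpha>))"

end

theory Submission
  imports Defs
begin

locale kalg =
  fixes A :: "('k::field, 'a) alg"
  assumes add_C: "x \<in> acar A \<Longrightarrow> y \<in> acar A \<Longrightarrow> aadd A x y \<in> acar A"
    and mul_C: "x \<in> acar A \<Longrightarrow> y \<in> acar A \<Longrightarrow> amul A x y \<in> acar A"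
    and sm_C: "x \<in> acar A \<Longrightarrow> asmul A c x \<in> acar A"
    and zero_C: "azero A \<in> acar A"
    and one_C: "aone A \<in> acar A"
    and add_assoc: "x \<in> acar A \<Longrightarrow> y \<in> acar A \<Longrightarrow> z \<in> acar A \<Longrightarrow>
        aadd A (aadd A x y) z = aadd A x (aadd A y z)"
    and add_comm: "x \<in> acar A \<Longrightarrow> y \<in> acar A \<Longrightarrow> aadd A x y = aadd A y x"
    and add_zero: "x \<in> acar A \<Longrightarrow> aadd A (azero A) x = x"
    and add_neg: "x \<in> acar A \<Longrightarrow> aadd A (asmul A (-1) x) x = azero A"
    and mul_assoc: "x \<in> acar A \<Longrightarrow> y \<in> acar A \<Longrightarrow> z \<in> acar A \<Longrightarrow>
        amul A (amul A x y) z = amul A x (amul A y z)"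
    and one_mul: "x \<in> acar A \<Longrightarrow> amul A (aone A) x = x"
    and mul_one: "x \<in> acar A \<Longrightarrow> amul A x (aone A) = x"
    and distl: "x \<in> acar A \<Longrightarrow> y \<in> acar A \<Longrightarrow> z \<in> acar A \<Longrightarrow>
        amul A x (aadd A y z) = aadd A (amul A x y) (amul A x z)"
    and distr: "x \<in> acar A \<Longrightarrow> y \<in> acar A \<Longrightarrow> z \<in> acar A \<Longrightarrow>
        amul A (aadd A x y) z = aadd A (amul A x z) (amul A y z)"
    and sm_add: "x \<in> acar A \<Longrightarrow> y \<in> acar A \<Longrightarrow>
        asmul A c (aadd A x y) = aadd A (asmul A c x) (asmul A c y)"
    and add_sm: "x \<in> acar A \<Longrightarrow> asmul A (c + d) x = aadd A (asmul A c x) (asmul A d x)"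
    and sm_sm: "x \<in> acar A \<Longrightarrow> asmul A (c * d) x = asmul A c (asmul A d x)"
    and sm_one: "x \<in> acar A \<Longrightarrow> asmul A 1 x = x"
    and sm_mul: "x \<in> acar A \<Longrightarrow> y \<in> acar A \<Longrightarrow> amul A (asmul A c x) y = asmul A c (amul A x y)"
    and mul_sm: "x \<in> acar A \<Longrightarrow> y \<in> acar A \<Longrightarrow> amul A x (asmul A c y) = asmul A c (amul A x y)"
begin

abbreviation "neg x \<equiv> asmul A (-1) x"
abbreviation "sub x y \<equiv> aadd A x (neg y)"

lemma neg_C: "x \<in> acar A \<Longrightarrow> neg x \<in> acar A" by (rule sm_C)
lemma sub_C: "x \<in> acar A \<Longrightarrow> y \<in> acar A \<Longrightarrow> sub x y \<in> acar A" by (simp add: add_C sm_C)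

lemma add_zero_r: "x \<in> acar A \<Longrightarrow> aadd A x (azero A) = x"
  by (simp add: add_comm[of x "azero A"] zero_C add_zero)

lemma add_neg_r: "x \<in> acar A \<Longrightarrow> aadd A x (neg x) = azero A"
  by (simp add: add_comm[of x "neg x"] sm_C add_neg)

lemma add_left_cancel:
  assumes "x \<in> acar A" "y \<in> acar A" "z \<in> acar A" "aadd A x y = aadd A x z"
  shows "y = z"
proof -
  have "aadd A (neg x) (aadd A x y) = aadd A (neg x) (aadd A x z)" using assms by simp
  moreover have "aadd A (neg x) (aadd A x y) = y"
    using assms add_assoc[of "neg x" x y, symmetric] by (simp add: sm_C add_neg add_zero)
  moreover have "aadd A (neg x) (aadd A x z) = z"
    using assms add_assoc[of "neg x" x z, symmetric] by (simp add: sm_C add_neg add_zero)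
  ultimately show ?thesis by simp
qed

lemma sub_eq_zero: "x \<in> acar A \<Longrightarrow> y \<in> acar A \<Longrightarrow> sub x y = azero A \<Longrightarrow> x = y"
proof -
  assume a: "x \<in> acar A" "y \<in> acar A" "sub x y = azero A"
  have "aadd A (sub x y) y = aadd A (azero A) y" using a by simp
  moreover have "aadd A (sub x y) y = x"
    using a add_assoc[of x "neg y" y] by (simp add: sm_C add_neg add_zero_r)
  ultimately show ?thesis using a by (simp add: add_zero)
qed

lemma sub_self: "x \<in> acar A \<Longrightarrow> sub x x = azero A" by (rule add_neg_r)

lemma mul_zero: "x \<in> acar A \<Longrightarrow> amul A x (azero A) = azero A"
proof -
  assume x: "x \<in> acar A"
  have "aadd A (amul A x (azero A)) (amul A x (azero A)) = aadd A (amul A x (azero A)) (azero A)"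
    using x by (simp add: distl[symmetric] zero_C add_zero add_zero_r mul_C)
  then show ?thesis using x by (meson add_left_cancel mul_C zero_C)
qed

lemma zero_mul: "x \<in> acar A \<Longrightarrow> amul A (azero A) x = azero A"
proof -
  assume x: "x \<in> acar A"
  have "aadd A (amul A (azero A) x) (amul A (azero A) x) = aadd A (amul A (azero A) x) (azero A)"
    using x by (simp add: distr[symmetric] zero_C add_zero add_zero_r mul_C)
  then show ?thesis using x by (meson add_left_cancel mul_C zero_C)
qed

lemma sm_zero_scalar: "x \<in> acar A \<Longrightarrow> asmul A 0 x = azero A"
proof -
  assume x: "x \<in> acar A"
  have "aadd A (asmul A 0 x) (asmul A 0 x) = aadd A (asmul A 0 x) (azero A)"
    using x add_sm[of x 0 0] by (simp add: add_zero_r sm_C)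
  then show ?thesis using x by (meson add_left_cancel sm_C zero_C)
qed

lemma sm_zero: "asmul A c (azero A) = azero A"
proof -
  have "asmul A c (azero A) = asmul A c (asmul A 0 (azero A))" by (simp add: sm_zero_scalar zero_C)
  also have "\<dots> = asmul A (c * 0) (azero A)" by (rule sm_sm[symmetric], rule zero_C)
  also have "\<dots> = azero A" using sm_zero_scalar[OF zero_C] by simp
  finally show ?thesis .
qed

lemma neg_mul: "x \<in> acar A \<Longrightarrow> y \<in> acar A \<Longrightarrow> amul A (neg x) y = neg (amul A x y)"
  by (rule sm_mul)
lemma mul_neg: "x \<in> acar A \<Longrightarrow> y \<in> acar A \<Longrightarrow> amul A x (neg y) = neg (amul A x y)"
  by (rule mul_sm)

lemma mul_sub: "x \<in> acar A \<Longrightarrow> y \<in> acar A \<Longrightarrow> z \<in> acar A \<Longrightarrow>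
   amul A x (sub y z) = sub (amul A x y) (amul A x z)"
  by (simp add: distl sm_C mul_sm)
lemma sub_mul: "x \<in> acar A \<Longrightarrow> y \<in> acar A \<Longrightarrow> z \<in> acar A \<Longrightarrow>
   amul A (sub x y) z = sub (amul A x z) (amul A y z)"
  by (simp add: distr sm_C sm_mul)

lemma neg_add: "x \<in> acar A \<Longrightarrow> y \<in> acar A \<Longrightarrow> neg (aadd A x y) = aadd A (neg x) (neg y)"
  by (rule sm_add)

lemma neg_neg: "x \<in> acar A \<Longrightarrow> neg (neg x) = x"
  by (simp add: sm_sm[symmetric] sm_one)

lemma add_ac:
  "x \<in> acar A \<Longrightarrow> y \<in> acar A \<Longrightarrow> z \<in> acar A \<Longrightarrow> aadd A x (aadd A y z) = aadd A y (aadd A x z)"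
  by (simp add: add_assoc[symmetric] add_comm[of x y])

lemma add_eq_sub: "x \<in> acar A \<Longrightarrow> y \<in> acar A \<Longrightarrow> z \<in> acar A \<Longrightarrow> x = aadd A y z \<Longrightarrow> sub x z = y"
  by (simp add: add_assoc add_neg_r add_zero_r sm_C)

end

context kalg begin

lemmas ACs = add_assoc add_comm add_ac add_C sm_C mul_C zero_C one_C

lemma sub_add_cancel: "x \<in> acar A \<Longrightarrow> j \<in> acar A \<Longrightarrow> sub (aadd A x j) x = j"
  by (simp add: sm_add ACs add_neg_r add_zero_r)

lemma add_sub_cancel: "x \<in> acar A \<Longrightarrow> z \<in> acar A \<Longrightarrow> aadd A x (sub z x) = z"
  by (metis add_ac add_neg_r add_zero_r sm_C)

lemma neg_add_cancel_left: "x \<in> acar A \<Longrightarrow> y \<in> acar A \<Longrightarrow> aadd A (neg x) (aadd A x y) = y"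
  by (simp add: add_assoc[symmetric] sm_C add_neg add_zero)
lemma add_neg_cancel_left: "x \<in> acar A \<Longrightarrow> y \<in> acar A \<Longrightarrow> aadd A x (aadd A (neg x) y) = y"
  by (simp add: add_assoc[symmetric] sm_C add_neg_r add_zero)

lemma sub_trans: "x \<in> acar A \<Longrightarrow> y \<in> acar A \<Longrightarrow> z \<in> acar A \<Longrightarrow>
   sub z y = aadd A (sub z x) (sub x y)"
  by (simp add: add_assoc sm_C add_C neg_add_cancel_left)

lemma neg_sub: "x \<in> acar A \<Longrightarrow> y \<in> acar A \<Longrightarrow> neg (sub x y) = sub y x"
  by (simp add: sm_add neg_neg ACs)

lemma add_swap4: "a \<in> acar A \<Longrightarrow> b \<in> acar A \<Longrightarrow> c \<in> acar A \<Longrightarrow> d \<in> acar A \<Longrightarrow>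
   aadd A (aadd A a b) (aadd A c d) = aadd A (aadd A a c) (aadd A b d)"
  by (simp add: add_assoc add_C add_ac[of b c d])

lemma sub_add_add: "a \<in> acar A \<Longrightarrow> b \<in> acar A \<Longrightarrow> c \<in> acar A \<Longrightarrow> d \<in> acar A \<Longrightarrow>
   sub (aadd A a b) (aadd A c d) = aadd A (sub a c) (sub b d)"
  by (simp add: sm_add ACs)

lemma sub_mul_mul: "a \<in> acar A \<Longrightarrow> b \<in> acar A \<Longrightarrow> c \<in> acar A \<Longrightarrow> d \<in> acar A \<Longrightarrow>
   sub (amul A a b) (amul A c d) = aadd A (amul A (sub a c) b) (amul A c (sub b d))"
  using sub_trans[of "amul A c b" "amul A c d" "amul A a b"] by (simp add: sub_mul mul_sub mul_C)

lemma sub_sm_sm: "a \<in> acar A \<Longrightarrow> c \<in> acar A \<Longrightarrow>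
   sub (asmul A k a) (asmul A k c) = asmul A k (sub a c)"
  by (simp add: sm_add sm_sm[symmetric] mult.commute sm_C)

end

locale kalg_ideal = kalg +
  fixes J assumes ideal: "is_ideal A J"
begin

lemma J_C: "J \<subseteq> acar A" using ideal by (simp add: is_ideal_def is_subspace_def)
lemma J_zero: "azero A \<in> J" using ideal by (simp add: is_ideal_def is_subspace_def)
lemma J_add: "x \<in> J \<Longrightarrow> y \<in> J \<Longrightarrow> aadd A x y \<in> J" using ideal by (simp add: is_ideal_def is_subspace_def)
lemma J_sm: "x \<in> J \<Longrightarrow> asmul A c x \<in> J" using ideal by (simp add: is_ideal_def is_subspace_def)
lemma J_mull: "x \<in> J \<Longrightarrow> r \<in> acar A \<Longrightarrow> amul A r x \<in> J" using ideal by (simp add: is_ideal_def)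
lemma J_mulr: "x \<in> J \<Longrightarrow> r \<in> acar A \<Longrightarrow> amul A x r \<in> J" using ideal by (simp add: is_ideal_def)

lemma mem_cos: "z \<in> cos A J x \<longleftrightarrow> z \<in> acar A \<and> sub z x \<in> J" if "x \<in> acar A"
proof
  assume "z \<in> cos A J x"
  then obtain j where "z \<in> acar A" "j \<in> J" "z = aadd A x j" by (auto simp: cos_def)
  then show "z \<in> acar A \<and> sub z x \<in> J" using that J_C sub_add_cancel by auto
next
  assume "z \<in> acar A \<and> sub z x \<in> J"
  then show "z \<in> cos A J x" using that add_sub_cancel unfolding cos_def by force
qed

lemma self_cos: "x \<in> acar A \<Longrightarrow> x \<in> cos A J x"
  using mem_cos sub_self J_zero by simp

lemma cos_eq: "x \<in> acar A \<Longrightarrow> y \<in> acar A \<Longrightarrow> cos A J x = cos A J y \<longleftrightarrow> sub x y \<in> J"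
proof
  assume "x \<in> acar A" "y \<in> acar A" "cos A J x = cos A J y"
  then show "sub x y \<in> J" using self_cos mem_cos by blast
next
  assume a: "x \<in> acar A" "y \<in> acar A" "sub x y \<in> J"
  then have b: "sub y x \<in> J" using neg_sub J_sm by metis
  show "cos A J x = cos A J y"
  proof (rule set_eqI)
    fix z show "z \<in> cos A J x \<longleftrightarrow> z \<in> cos A J y"
    proof
      assume "z \<in> cos A J x"
      then have "z \<in> acar A" "sub z x \<in> J" using a mem_cos by auto
      then show "z \<in> cos A J y" using a J_add sub_trans[of x y z] mem_cos by metis
    next
      assume "z \<in> cos A J y"
      then have "z \<in> acar A" "sub z y \<in> J" using a mem_cos by auto
      then show "z \<in> cos A J x" using a b J_add sub_trans[of y x z] mem_cos by metis
    qed
  qed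
qed

lemma rep_cos: "x \<in> acar A \<Longrightarrow> rep (cos A J x) \<in> cos A J x"
  unfolding rep_def by (rule someI, rule self_cos)

lemma rep_cos_C: "x \<in> acar A \<Longrightarrow> rep (cos A J x) \<in> acar A"
  using rep_cos mem_cos by blast

lemma rep_cos_sub: "x \<in> acar A \<Longrightarrow> sub (rep (cos A J x)) x \<in> J"
  using rep_cos mem_cos by blast

lemma cos_rep_cos: "x \<in> acar A \<Longrightarrow> cos A J (rep (cos A J x)) = cos A J x"
  using cos_eq rep_cos_C rep_cos_sub by blast

lemma q_add: "x \<in> acar A \<Longrightarrow> y \<in> acar A \<Longrightarrow>
   aadd (quot A J) (cos A J x) (cos A J y) = cos A J (aadd A x y)"
  unfolding quot_def apply simp
  apply (subst cos_eq)
  by (auto simp: rep_cos_C add_C sub_add_add rep_cos_sub J_add)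

lemma q_mul: "x \<in> acar A \<Longrightarrow> y \<in> acar A \<Longrightarrow>
   amul (quot A J) (cos A J x) (cos A J y) = cos A J (amul A x y)"
  unfolding quot_def apply simp
  apply (subst cos_eq)
  by (auto simp: rep_cos_C mul_C sub_mul_mul rep_cos_sub J_add J_mull J_mulr)

lemma q_sm: "x \<in> acar A \<Longrightarrow> asmul (quot A J) c (cos A J x) = cos A J (asmul A c x)"
  unfolding quot_def apply simp
  apply (subst cos_eq)
  by (auto simp: rep_cos_C sm_C sub_sm_sm rep_cos_sub J_sm)

lemma q_zero: "azero (quot A J) = cos A J (azero A)" by (simp add: quot_def)
lemma q_one: "aone (quot A J) = cos A J (aone A)" by (simp add: quot_def)
lemma q_car: "acar (quot A J) = cos A J ` acar A" by (simp add: quot_def)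

lemma quot_kalg: "kalg (quot A J)"
proof -
  note qs = q_add q_mul q_sm q_zero q_one q_car
  show ?thesis
  proof (unfold_locales, goal_cases)
    case 1 then show ?case by (auto simp: qs add_C)
  next case 2 then show ?case by (auto simp: qs mul_C)
  next case 3 then show ?case by (auto simp: qs sm_C)
  next case 4 then show ?case by (auto simp: qs zero_C)
  next case 5 then show ?case by (auto simp: qs one_C)
  next case 6 then show ?case by (auto simp: qs add_C add_assoc)
  next case 7 then show ?case by (auto simp: qs add_comm)
  next case 8 then show ?case by (auto simp: qs add_zero zero_C)
  next case 9 then show ?case by (auto simp: qs add_neg sm_C)
  next case 10 then show ?case by (auto simp: qs mul_C mul_assoc)
  next case 11 then show ?case by (auto simp: qs one_mul one_C)
  next case 12 then show ?case by (auto simp: qs mul_one one_C)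
  next case 13 then show ?case by (auto simp: qs distl add_C mul_C)
  next case 14 then show ?case by (auto simp: qs distr add_C mul_C)
  next case 15 then show ?case by (auto simp: qs sm_add add_C sm_C)
  next case 16 then show ?case by (auto simp: qs add_sm sm_C)
  next case 17 then show ?case by (auto simp: qs sm_sm sm_C)
  next case 18 then show ?case by (auto simp: qs sm_one)
  next case 19 then show ?case by (auto simp: qs sm_mul sm_C mul_C)
  next case 20 then show ?case by (auto simp: qs mul_sm sm_C mul_C)
  qed
qed

end

lemma fsupp_iff: "x \<in> fsupp f \<longleftrightarrow> f x \<noteq> 0" by (simp add: fsupp_def)

lemma salg_simps:
  "acar (salg B pp U) = {f. finite (fsupp f) \<and> fsupp f \<subseteq> B}"
  "aadd (salg B pp U) = (\<lambda>f g x. f x + g x)"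
  "asmul (salg B pp U) = (\<lambda>c f x. c * f x)"
  "azero (salg B pp U) = (\<lambda>x. 0)"
  "aone (salg B pp U) = (\<lambda>x. if x \<in> U then 1 else 0)"
  by (simp_all add: salg_def)

lemma salg_mul_eq:
  fixes f g :: "'b \<Rightarrow> 'k::field"
  assumes "finite S" "fsupp f \<subseteq> S" "finite T" "fsupp g \<subseteq> T"
  shows "amul (salg B pp U) f g w = (\<Sum>u\<in>S. \<Sum>v\<in>T. if pp u v = Some w then f u * g v else 0)"
proof -
  have fs: "finite (fsupp f)" "finite (fsupp g)" using assms finite_subset by auto
  have "amul (salg B pp U) f g w = (\<Sum>u\<in>fsupp f. \<Sum>v\<in>fsupp g. if pp u v = Some w then f u * g v else 0)"
    by (simp add: salg_def)
  also have "\<dots> = (\<Sum>u\<in>fsupp f. \<Sum>v\<in>T. if pp u v = Some w then f u * g v else 0)"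
    by (rule sum.cong[OF refl], rule sum.mono_neutral_left[OF assms(3,4)]) (auto simp: fsupp_iff intro!: sum.neutral)
  also have "\<dots> = (\<Sum>u\<in>S. \<Sum>v\<in>T. if pp u v = Some w then f u * g v else 0)"
    by (rule sum.mono_neutral_left[OF assms(1,2)]) (auto simp: fsupp_iff intro!: sum.neutral)
  finally show ?thesis .
qed

lemma salg_mul_supp:
  fixes f g :: "'b \<Rightarrow> 'k::field"
  shows "fsupp (amul (salg B pp U) f g) \<subseteq> {w. \<exists>u\<in>fsupp f. \<exists>v\<in>fsupp g. pp u v = Some w}"
proof
  fix w assume w: "w \<in> fsupp (amul (salg B pp U) f g)"
  show "w \<in> {w. \<exists>u\<in>fsupp f. \<exists>v\<in>fsupp g. pp u v = Some w}"
  proof (rule ccontr)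
    assume "w \<notin> {w. \<exists>u\<in>fsupp f. \<exists>v\<in>fsupp g. pp u v = Some w}"
    then have "amul (salg B pp U) f g w = 0"
      by (auto simp: salg_def intro!: sum.neutral)
    then show False using w by (simp add: fsupp_iff)
  qed
qed

lemma finite_pp_image:
  assumes "finite S" "finite T"
  shows "finite {w. \<exists>u\<in>S. \<exists>v\<in>T. pp u v = Some w}"
proof -
  have "{w. \<exists>u\<in>S. \<exists>v\<in>T. pp u v = Some w} \<subseteq> (\<lambda>(u,v). the (pp u v)) ` (S \<times> T)"
    by (force simp: image_iff)
  then show ?thesis using assms finite_subset by blast
qed

lemma sum_opt_delta:
  fixes c :: "'k::field"
  assumes "finite X" "\<And>x. ob = Some x \<Longrightarrow> x \<in> X"
  shows "(\<Sum>x\<in>X. if ob = Some x \<and> Q x then c else 0) = (if (\<exists>x. ob = Some x \<and> Q x) then c else 0)"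
proof (cases ob)
  case None then show ?thesis by simp
next
  case (Some x0)
  then have "(\<Sum>x\<in>X. if ob = Some x \<and> Q x then c else 0) = (\<Sum>x\<in>X. if x = x0 then (if Q x0 then c else 0) else 0)"
    by (intro sum.cong) auto
  also have "\<dots> = (if Q x0 then c else 0)" using assms Some by (simp add: sum.delta)
  finally show ?thesis using Some by auto
qed

lemma swap3: "(\<Sum>y\<in>Y. \<Sum>v\<in>V. \<Sum>z\<in>Z. G y v z) = (\<Sum>v\<in>V. \<Sum>z\<in>Z. \<Sum>y\<in>Y. G y v z)"
proof -
  have "(\<Sum>y\<in>Y. \<Sum>v\<in>V. \<Sum>z\<in>Z. G y v z) = (\<Sum>v\<in>V. \<Sum>y\<in>Y. \<Sum>z\<in>Z. G y v z)"
    by (rule sum.swap)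
  also have "\<dots> = (\<Sum>v\<in>V. \<Sum>z\<in>Z. \<Sum>y\<in>Y. G y v z)"
    by (rule sum.cong[OF refl], rule sum.swap)
  finally show ?thesis .
qed

lemma swap4: "(\<Sum>x\<in>X. \<Sum>z\<in>Z. \<Sum>u\<in>U. \<Sum>v\<in>V. F x z u v) = (\<Sum>u\<in>U. \<Sum>v\<in>V. \<Sum>z\<in>Z. \<Sum>x\<in>X. F x z u v)"
proof -
  have "(\<Sum>x\<in>X. \<Sum>z\<in>Z. \<Sum>u\<in>U. \<Sum>v\<in>V. F x z u v) = (\<Sum>x\<in>X. \<Sum>u\<in>U. \<Sum>v\<in>V. \<Sum>z\<in>Z. F x z u v)"
    by (rule sum.cong[OF refl], rule swap3)
  also have "\<dots> = (\<Sum>u\<in>U. \<Sum>v\<in>V. \<Sum>x\<in>X. \<Sum>z\<in>Z. F x z u v)"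
    by (rule swap3)
  also have "\<dots> = (\<Sum>u\<in>U. \<Sum>v\<in>V. \<Sum>z\<in>Z. \<Sum>x\<in>X. F x z u v)"
    by (rule sum.cong[OF refl], rule sum.cong[OF refl], rule sum.swap)
  finally show ?thesis .
qed

lemma salg_assoc_l:
  fixes f g h :: "'b \<Rightarrow> 'k::field"
  assumes "finite (fsupp f)" "finite (fsupp g)" "finite (fsupp h)"
  shows "amul (salg B pp U) (amul (salg B pp U) f g) h w =
    (\<Sum>u\<in>fsupp f. \<Sum>v\<in>fsupp g. \<Sum>z\<in>fsupp h.
        if Option.bind (pp u v) (\<lambda>x. pp x z) = Some w then f u * g v * h z else 0)"
proof -
  let ?M = "amul (salg B pp U)"
  define X where "X = {w. \<exists>u\<in>fsupp f. \<exists>v\<in>fsupp g. pp u v = Some w}"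
  have fX: "finite X" unfolding X_def by (rule finite_pp_image[OF assms(1,2)])
  have sX: "fsupp (?M f g) \<subseteq> X" unfolding X_def by (rule salg_mul_supp)
  have "?M (?M f g) h w = (\<Sum>x\<in>X. \<Sum>z\<in>fsupp h. if pp x z = Some w then ?M f g x * h z else 0)"
    by (rule salg_mul_eq[OF fX sX assms(3) subset_refl])
  also have "\<dots> = (\<Sum>x\<in>X. \<Sum>z\<in>fsupp h. \<Sum>u\<in>fsupp f. \<Sum>v\<in>fsupp g.
       if pp u v = Some x \<and> pp x z = Some w then f u * g v * h z else 0)"
    apply (intro sum.cong refl)
    subgoal for x z
      apply (subst salg_mul_eq[OF assms(1) subset_refl assms(2) subset_refl])
      apply (cases "pp x z = Some w")
       apply (simp add: sum_distrib_right)
       apply (intro sum.cong refl, simp)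
      by simp
    done
  also have "\<dots> = (\<Sum>u\<in>fsupp f. \<Sum>v\<in>fsupp g. \<Sum>z\<in>fsupp h. \<Sum>x\<in>X.
       if pp u v = Some x \<and> pp x z = Some w then f u * g v * h z else 0)"
    by (rule swap4)
  also have "\<dots> = (\<Sum>u\<in>fsupp f. \<Sum>v\<in>fsupp g. \<Sum>z\<in>fsupp h.
        if Option.bind (pp u v) (\<lambda>x. pp x z) = Some w then f u * g v * h z else 0)"
  proof (intro sum.cong refl)
    fix u v z assume uv: "u \<in> fsupp f" "v \<in> fsupp g" "z \<in> fsupp h"
    have "(\<Sum>x\<in>X. if pp u v = Some x \<and> pp x z = Some w then f u * g v * h z else 0)
       = (if (\<exists>x. pp u v = Some x \<and> pp x z = Some w) then f u * g v * h z else 0)"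
      by (rule sum_opt_delta[OF fX]) (use uv in \<open>auto simp: X_def\<close>)
    also have "\<dots> = (if Option.bind (pp u v) (\<lambda>x. pp x z) = Some w then f u * g v * h z else 0)"
      by (cases "pp u v") auto
    finally show "(\<Sum>x\<in>X. if pp u v = Some x \<and> pp x z = Some w then f u * g v * h z else 0)
       = (if Option.bind (pp u v) (\<lambda>x. pp x z) = Some w then f u * g v * h z else 0)" .
  qed
  finally show ?thesis .
qed

lemma salg_assoc_r:
  fixes f g h :: "'b \<Rightarrow> 'k::field"
  assumes "finite (fsupp f)" "finite (fsupp g)" "finite (fsupp h)"
  shows "amul (salg B pp U) f (amul (salg B pp U) g h) w =
    (\<Sum>u\<in>fsupp f. \<Sum>v\<in>fsupp g. \<Sum>z\<in>fsupp h.
        if Option.bind (pp v z) (\<lambda>y. pp u y) = Some w then f u * g v * h z else 0)"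
proof -
  let ?M = "amul (salg B pp U)"
  define Y where "Y = {w. \<exists>u\<in>fsupp g. \<exists>v\<in>fsupp h. pp u v = Some w}"
  have fY: "finite Y" unfolding Y_def by (rule finite_pp_image[OF assms(2,3)])
  have sY: "fsupp (?M g h) \<subseteq> Y" unfolding Y_def by (rule salg_mul_supp)
  have "?M f (?M g h) w = (\<Sum>u\<in>fsupp f. \<Sum>y\<in>Y. if pp u y = Some w then f u * ?M g h y else 0)"
    by (rule salg_mul_eq[OF assms(1) subset_refl fY sY])
  also have "\<dots> = (\<Sum>u\<in>fsupp f. \<Sum>y\<in>Y. \<Sum>v\<in>fsupp g. \<Sum>z\<in>fsupp h.
       if pp v z = Some y \<and> pp u y = Some w then f u * g v * h z else 0)"
    apply (intro sum.cong refl)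
    subgoal for u y
      apply (subst salg_mul_eq[OF assms(2) subset_refl assms(3) subset_refl])
      apply (cases "pp u y = Some w")
       apply (simp add: sum_distrib_left mult.assoc)
       apply (intro sum.cong refl, simp)
      by simp
    done
  also have "\<dots> = (\<Sum>u\<in>fsupp f. \<Sum>v\<in>fsupp g. \<Sum>z\<in>fsupp h. \<Sum>y\<in>Y.
       if pp v z = Some y \<and> pp u y = Some w then f u * g v * h z else 0)"
    by (rule sum.cong[OF refl], rule swap3)
  also have "\<dots> = (\<Sum>u\<in>fsupp f. \<Sum>v\<in>fsupp g. \<Sum>z\<in>fsupp h.
        if Option.bind (pp v z) (\<lambda>y. pp u y) = Some w then f u * g v * h z else 0)"
  proof (intro sum.cong refl)
    fix u v z assume uv: "u \<in> fsupp f" "v \<in> fsupp g" "z \<in> fsupp h"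
    have "(\<Sum>y\<in>Y. if pp v z = Some y \<and> pp u y = Some w then f u * g v * h z else 0)
       = (if (\<exists>y. pp v z = Some y \<and> pp u y = Some w) then f u * g v * h z else 0)"
      by (rule sum_opt_delta[OF fY]) (use uv in \<open>auto simp: Y_def\<close>)
    also have "\<dots> = (if Option.bind (pp v z) (\<lambda>y. pp u y) = Some w then f u * g v * h z else 0)"
      by (cases "pp v z") auto
    finally show "(\<Sum>y\<in>Y. if pp v z = Some y \<and> pp u y = Some w then f u * g v * h z else 0)
       = (if Option.bind (pp v z) (\<lambda>y. pp u y) = Some w then f u * g v * h z else 0)" .
  qed
  finally show ?thesis .
qed


lemma fsupp_add: "fsupp (\<lambda>x. f x + g x) \<subseteq> fsupp f \<union> fsupp (g :: _ \<Rightarrow> 'k::field)" by (auto simp: fsupp_iff)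
lemma fsupp_sm: "fsupp (\<lambda>x. c * f x) \<subseteq> fsupp (f :: _ \<Rightarrow> 'k::field)" by (auto simp: fsupp_iff)
lemma fsupp_zero[simp]: "fsupp (\<lambda>x. 0 :: 'k::field) = {}" by (auto simp: fsupp_iff)
lemma fsupp_ind[simp]: "fsupp (\<lambda>x. if x \<in> U then (1::'k::field) else 0) = U" by (auto simp: fsupp_iff split: if_splits)

lemma unit_sum:
  fixes c :: "'k::field"
  assumes "finite U" "t0 \<in> U" "\<forall>t'\<in>U. t' \<noteq> t0 \<longrightarrow> ob t' = None"
  shows "(\<Sum>t\<in>U. if ob t = Some w then c else 0) = (if ob t0 = Some w then c else 0)"
proof -
  have "(\<Sum>t\<in>U. if ob t = Some w then c else 0) = (\<Sum>t\<in>U. if t = t0 then (if ob t0 = Some w then c else 0) else 0)"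
    using assms by (intro sum.cong) auto
  also have "\<dots> = (if ob t0 = Some w then c else 0)" using assms by (simp add: sum.delta)
  finally show ?thesis .
qed

lemma if_add0: "(if P then a + b else 0) = (if P then a else 0) + (if P then b else (0::'a::monoid_add))"
  by simp

theorem salg_kalg:
  fixes B :: "'b set" and pp :: "'b \<Rightarrow> 'b \<Rightarrow> 'b option" and U :: "'b set"
  assumes closed: "\<And>u v w. u \<in> B \<Longrightarrow> v \<in> B \<Longrightarrow> pp u v = Some w \<Longrightarrow> w \<in> B"
    and assoc: "\<And>u v z. u \<in> B \<Longrightarrow> v \<in> B \<Longrightarrow> z \<in> B \<Longrightarrow>
        Option.bind (pp u v) (\<lambda>x. pp x z) = Option.bind (pp v z) (\<lambda>y. pp u y)"
    and fU: "finite U" and UB: "U \<subseteq> B"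
    and lunit: "\<And>v. v \<in> B \<Longrightarrow> \<exists>t\<in>U. pp t v = Some v \<and> (\<forall>t'\<in>U. t' \<noteq> t \<longrightarrow> pp t' v = None)"
    and runit: "\<And>v. v \<in> B \<Longrightarrow> \<exists>t\<in>U. pp v t = Some v \<and> (\<forall>t'\<in>U. t' \<noteq> t \<longrightarrow> pp v t' = None)"
  shows "kalg (salg B pp U :: ('k::field, 'b \<Rightarrow> 'k) alg)"
proof -
  let ?S = "salg B pp U :: ('k::field, 'b \<Rightarrow> 'k) alg"
  let ?M = "amul ?S"
  have sa: "aadd ?S = (\<lambda>f g x. f x + g x)" "asmul ?S = (\<lambda>c f x. c * f x)" by (simp_all add: salg_def)
  have mulC: "?M f g \<in> acar ?S" if "f \<in> acar ?S" "g \<in> acar ?S" for f g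
  proof -
    have fin: "finite (fsupp f)" "finite (fsupp g)" "fsupp f \<subseteq> B" "fsupp g \<subseteq> B"
      using that by (auto simp: salg_simps)
    have "fsupp (?M f g) \<subseteq> {w. \<exists>u\<in>fsupp f. \<exists>v\<in>fsupp g. pp u v = Some w}" by (rule salg_mul_supp)
    moreover have "finite {w. \<exists>u\<in>fsupp f. \<exists>v\<in>fsupp g. pp u v = Some w}"
      by (rule finite_pp_image) (use fin in auto)
    moreover have "{w. \<exists>u\<in>fsupp f. \<exists>v\<in>fsupp g. pp u v = Some w} \<subseteq> B"
      using fin closed by blast
    ultimately show ?thesis by (auto simp: salg_simps intro: finite_subset)
  qed
  show ?thesis
  proof (unfold_locales, goal_cases)
    case (1 x y) then show ?case using fsupp_add[of x y] by (auto simp: salg_simps intro: finite_subset)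
  next case (2 x y) then show ?case by (rule mulC)
  next case (3 x c) then show ?case using fsupp_sm[of c x] by (auto simp: salg_simps intro: finite_subset)
  next case 4 then show ?case by (simp add: salg_simps)
  next case 5 then show ?case using fU UB by (simp add: salg_simps)
  next case 6 then show ?case by (simp add: salg_simps add.assoc)
  next case 7 then show ?case by (simp add: salg_simps add.commute)
  next case 8 then show ?case by (simp add: salg_simps)
  next case 9 then show ?case by (simp add: salg_simps)
  next case (10 f g h)
    then have fin: "finite (fsupp f)" "finite (fsupp g)" "finite (fsupp h)"
      "fsupp f \<subseteq> B" "fsupp g \<subseteq> B" "fsupp h \<subseteq> B" by (auto simp: salg_simps)
    show ?case
    proof
      fix w
      show "?M (?M f g) h w = ?M f (?M g h) w"
        unfolding salg_assoc_l[OF fin(1-3)] salg_assoc_r[OF fin(1-3)]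
        using fin(4-6) assoc by (intro sum.cong refl) (simp add: subset_iff)
    qed
  next case (11 f)
    then have fin: "finite (fsupp f)" "fsupp f \<subseteq> B" by (auto simp: salg_simps)
    show ?case
    proof
      fix w
      have "?M (aone ?S) f w = (\<Sum>t\<in>U. \<Sum>v\<in>fsupp f. if pp t v = Some w then 1 * f v else 0)"
        by (subst salg_mul_eq[OF fU _ fin(1) subset_refl]) (auto simp: salg_simps intro!: sum.cong)
      also have "\<dots> = (\<Sum>v\<in>fsupp f. \<Sum>t\<in>U. if pp t v = Some w then f v else 0)"
        by (subst sum.swap) (simp add: cong: if_cong)
      also have "\<dots> = (\<Sum>v\<in>fsupp f. if v = w then f v else 0)"
      proof (rule sum.cong[OF refl])
        fix v assume "v \<in> fsupp f"
        then obtain t0 where t0: "t0 \<in> U" "pp t0 v = Some v" "\<forall>t'\<in>U. t' \<noteq> t0 \<longrightarrow> pp t' v = None"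
          using lunit fin(2) by blast
        show "(\<Sum>t\<in>U. if pp t v = Some w then f v else 0) = (if v = w then f v else 0)"
          using unit_sum[OF fU t0(1) t0(3), where w=w and c="f v"] t0(2) by simp
      qed
      also have "\<dots> = f w" using fin(1) by (simp add: sum.delta fsupp_iff)
      finally show "?M (aone ?S) f w = f w" .
    qed
  next case (12 f)
    then have fin: "finite (fsupp f)" "fsupp f \<subseteq> B" by (auto simp: salg_simps)
    show ?case
    proof
      fix w
      have "?M f (aone ?S) w = (\<Sum>v\<in>fsupp f. \<Sum>t\<in>U. if pp v t = Some w then f v * 1 else 0)"
        by (subst salg_mul_eq[OF fin(1) subset_refl fU]) (auto simp: salg_simps intro!: sum.cong)
      also have "\<dots> = (\<Sum>v\<in>fsupp f. if v = w then f v else 0)"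
      proof (rule sum.cong[OF refl])
        fix v assume "v \<in> fsupp f"
        then obtain t0 where t0: "t0 \<in> U" "pp v t0 = Some v" "\<forall>t'\<in>U. t' \<noteq> t0 \<longrightarrow> pp v t' = None"
          using runit fin(2) by blast
        show "(\<Sum>t\<in>U. if pp v t = Some w then f v * 1 else 0) = (if v = w then f v else 0)"
          using unit_sum[OF fU t0(1) t0(3), where w=w and c="f v * 1"] t0(2) by simp
      qed
      also have "\<dots> = f w" using fin(1) by (simp add: sum.delta fsupp_iff)
      finally show "?M f (aone ?S) w = f w" .
    qed
  next case (13 f g h)
    then have fin: "finite (fsupp f)" "finite (fsupp g)" "finite (fsupp h)" by (auto simp: salg_simps)
    let ?T = "fsupp g \<union> fsupp h"
    have fT: "finite ?T" using fin by simp
    show ?case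
    proof
      fix w
      have "?M f (aadd ?S g h) w = (\<Sum>u\<in>fsupp f. \<Sum>v\<in>?T. if pp u v = Some w then f u * (g v + h v) else 0)"
        unfolding sa(1) by (rule salg_mul_eq[OF fin(1) subset_refl fT]) (use fsupp_add[of g h] in \<open>auto simp: salg_simps sa\<close>)
      also have "\<dots> = (\<Sum>u\<in>fsupp f. \<Sum>v\<in>?T. if pp u v = Some w then f u * g v else 0)
          + (\<Sum>u\<in>fsupp f. \<Sum>v\<in>?T. if pp u v = Some w then f u * h v else 0)"
        by (simp add: sum.distrib[symmetric] distrib_left if_add0 cong: if_cong)
      also have "\<dots> = ?M f g w + ?M f h w"
        by (simp add: salg_mul_eq[OF fin(1) subset_refl fT])
      finally show "?M f (aadd ?S g h) w = aadd ?S (?M f g) (?M f h) w" by (simp add: salg_simps)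
    qed
  next case (14 f g h)
    then have fin: "finite (fsupp f)" "finite (fsupp g)" "finite (fsupp h)" by (auto simp: salg_simps)
    let ?T = "fsupp f \<union> fsupp g"
    have fT: "finite ?T" using fin by simp
    show ?case
    proof
      fix w
      have "?M (aadd ?S f g) h w = (\<Sum>u\<in>?T. \<Sum>v\<in>fsupp h. if pp u v = Some w then (f u + g u) * h v else 0)"
        unfolding sa(1) by (rule salg_mul_eq[OF fT _ fin(3) subset_refl]) (use fsupp_add[of f g] in \<open>auto simp: salg_simps sa\<close>)
      also have "\<dots> = (\<Sum>u\<in>?T. \<Sum>v\<in>fsupp h. if pp u v = Some w then f u * h v else 0)
          + (\<Sum>u\<in>?T. \<Sum>v\<in>fsupp h. if pp u v = Some w then g u * h v else 0)"
        by (simp add: sum.distrib[symmetric] distrib_right if_add0 cong: if_cong)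
      also have "\<dots> = ?M f h w + ?M g h w"
        by (simp add: salg_mul_eq[OF fT _ fin(3) subset_refl])
      finally show "?M (aadd ?S f g) h w = aadd ?S (?M f h) (?M g h) w" by (simp add: salg_simps)
    qed
  next case 15 then show ?case by (simp add: salg_simps distrib_left)
  next case 16 then show ?case by (simp add: salg_simps distrib_right)
  next case 17 then show ?case by (simp add: salg_simps mult.assoc)
  next case 18 then show ?case by (simp add: salg_simps)
  next case (19 f g c)
    then have fin: "finite (fsupp f)" "finite (fsupp g)" by (auto simp: salg_simps)
    show ?case
    proof
      fix w
      have "?M (asmul ?S c f) g w = (\<Sum>u\<in>fsupp f. \<Sum>v\<in>fsupp g. if pp u v = Some w then (c * f u) * g v else 0)"
        unfolding sa(2) by (rule salg_mul_eq[OF fin(1) _ fin(2) subset_refl]) (use fsupp_sm[of c f] in \<open>auto simp: salg_simps sa\<close>)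
      also have "\<dots> = c * ?M f g w"
        by (simp add: salg_mul_eq[OF fin(1) subset_refl fin(2) subset_refl] sum_distrib_left if_distrib mult.assoc cong: if_cong)
      finally show "?M (asmul ?S c f) g w = asmul ?S c (?M f g) w" by (simp add: salg_simps)
    qed
  next case (20 f g c)
    then have fin: "finite (fsupp f)" "finite (fsupp g)" by (auto simp: salg_simps)
    show ?case
    proof
      fix w
      have "?M f (asmul ?S c g) w = (\<Sum>u\<in>fsupp f. \<Sum>v\<in>fsupp g. if pp u v = Some w then f u * (c * g v) else 0)"
        unfolding sa(2) by (rule salg_mul_eq[OF fin(1) subset_refl fin(2)]) (use fsupp_sm[of c g] in \<open>auto simp: salg_simps sa\<close>)
      also have "\<dots> = c * ?M f g w"
        by (simp add: salg_mul_eq[OF fin(1) subset_refl fin(2) subset_refl] sum_distrib_left if_distrib mult.left_commute cong: if_cong)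
      finally show "?M f (asmul ?S c g) w = asmul ?S c (?M f g) w" by (simp add: salg_simps)
    qed
  qed
qed

lemma pend_cat: "pend Q p = fst q \<Longrightarrow> pend Q (fst p, snd p @ snd q) = pend Q q"
  by (auto simp: pend_def)

lemma is_path_cat:
  assumes p: "is_path Q p" and q: "is_path Q q" and e: "pend Q p = fst q"
  shows "is_path Q (fst p, snd p @ snd q)"
proof -
  have P: "fst p \<in> qV Q" "set (snd p) \<subseteq> qE Q" "snd p \<noteq> [] \<longrightarrow> qs Q (hd (snd p)) = fst p"
    "\<And>r. Suc r < length (snd p) \<Longrightarrow> qs Q (snd p ! Suc r) = qt Q (snd p ! r)"
    using p by (auto simp: is_path_def)
  have Qq: "fst q \<in> qV Q" "set (snd q) \<subseteq> qE Q" "snd q \<noteq> [] \<longrightarrow> qs Q (hd (snd q)) = fst q"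
    "\<And>r. Suc r < length (snd q) \<Longrightarrow> qs Q (snd q ! Suc r) = qt Q (snd q ! r)"
    using q by (auto simp: is_path_def)
  have hd: "snd p @ snd q \<noteq> [] \<longrightarrow> qs Q (hd (snd p @ snd q)) = fst p"
    using P(3) Qq(3) e by (cases "snd p") (auto simp: pend_def)
  have cons: "qs Q ((snd p @ snd q) ! Suc r) = qt Q ((snd p @ snd q) ! r)"
    if r: "Suc r < length (snd p @ snd q)" for r
  proof (cases "Suc r < length (snd p)")
    case True then show ?thesis using P(4)[OF True] by (simp add: nth_append)
  next
    case False
    show ?thesis
    proof (cases "Suc r = length (snd p)")
      case True
      then have "snd q \<noteq> []" using r by auto
      moreover have "snd p \<noteq> []" using True by auto
      moreover have "last (snd p) = snd p ! r" using True by (metis diff_Suc_1 last_conv_nth list.size(3) nat.distinct(1))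
      ultimately show ?thesis using True Qq(3) e
        by (simp add: nth_append pend_def hd_conv_nth)
    next
      case False2: False
      then have "r \<ge> length (snd p)" using False by auto
      then show ?thesis using Qq(4)[of "r - length (snd p)"] r
        by (simp add: nth_append Suc_diff_le)
    qed
  qed
  show ?thesis unfolding is_path_def using P(1,2) Qq(2) hd cons by auto
qed

lemma pcat_assoc:
  "Option.bind (pcat Q p q) (\<lambda>x. pcat Q x r) = Option.bind (pcat Q q r) (\<lambda>y. pcat Q p y)"
  by (auto simp: pcat_def pend_cat)

lemma path_pend_V:
  assumes "finite_quiver Q" "is_path Q p" shows "pend Q p \<in> qV Q"
proof (cases "snd p = []")
  case True then show ?thesis using assms by (auto simp: is_path_def pend_def)
next
  case False
  then have "last (snd p) \<in> qE Q" using assms by (auto simp: is_path_def)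
  then show ?thesis using assms False by (auto simp: finite_quiver_def pend_def)
qed

lemma vtx_V:
  assumes "finite_quiver Q" "is_path Q p" "r \<le> length (snd p)" shows "vtx Q p r \<in> qV Q"
proof (cases r)
  case 0 then show ?thesis using assms by (simp add: vtx_def is_path_def)
next
  case (Suc k)
  then have "snd p ! k \<in> qE Q" using assms by (auto simp: is_path_def)
  then show ?thesis using assms Suc by (auto simp: vtx_def finite_quiver_def)
qed

lemma vtx_len: "vtx Q p (length (snd p)) = pend Q p"
  by (cases "snd p" rule: rev_cases) (auto simp: vtx_def pend_def nth_append)

lemma vtx_cat:
  assumes "pend Q p = fst q"
  shows "vtx Q (fst p, snd p @ snd q) r =
     (if r \<le> length (snd p) then vtx Q p r else vtx Q q (r - length (snd p)))"
proof (cases "r \<le> length (snd p)")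
  case True
  then show ?thesis
  proof (cases r)
    case 0 then show ?thesis by (simp add: vtx_def)
  next
    case (Suc k) then show ?thesis using True by (simp add: vtx_def nth_append)
  qed
next
  case False
  then show ?thesis by (auto simp: vtx_def nth_append)
qed

theorem path_alg_kalg:
  assumes "finite_quiver Q"
  shows "kalg (path_alg Q :: ('k::field, 'v \<times> 'e list \<Rightarrow> 'k) alg)"
  unfolding path_alg_def
proof (rule salg_kalg)
  show "\<And>u v w. u \<in> {p. is_path Q p} \<Longrightarrow> v \<in> {p. is_path Q p} \<Longrightarrow> pcat Q u v = Some w \<Longrightarrow> w \<in> {p. is_path Q p}"
    by (auto simp: pcat_def split: if_splits intro: is_path_cat[of Q _ _, simplified])
  show "\<And>u v z. Option.bind (pcat Q u v) (\<lambda>x. pcat Q x z) = Option.bind (pcat Q v z) (pcat Q u)"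
    using pcat_assoc by metis
  show "finite {(v, []) |v. v \<in> qV Q}" using assms by (simp add: finite_quiver_def)
  show "{(v, []) |v. v \<in> qV Q} \<subseteq> {p. is_path Q p}" by (auto simp: is_path_def)
  show "\<exists>t\<in>{(v, []) |v. v \<in> qV Q}. pcat Q t v = Some v \<and> (\<forall>t'\<in>{(v, []) |v. v \<in> qV Q}. t' \<noteq> t \<longrightarrow> pcat Q t' v = None)"
    if "v \<in> {p. is_path Q p}" for v
    using that by (rule_tac x="(fst v, [])" in bexI) (auto simp: pcat_def pend_def is_path_def)
  show "\<exists>t\<in>{(v, []) |v. v \<in> qV Q}. pcat Q v t = Some v \<and> (\<forall>t'\<in>{(v, []) |v. v \<in> qV Q}. t' \<noteq> t \<longrightarrow> pcat Q v t' = None)"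
    if "v \<in> {p. is_path Q p}" for v
    using that path_pend_V[OF assms, of v] by (rule_tac x="(pend Q v, [])" in bexI) (auto simp: pcat_def pend_def)
qed

lemma mrg_nth:
  assumes "as \<noteq> []" "bs \<noteq> []"
  shows "(butlast as @ m # tl bs) ! r =
    (if r < length as - 1 then as ! r else if r = length as - 1 then m else bs ! (r - (length as - 1)))"
proof -
  have "butlast as ! r = as ! r" if "r < length as - 1" using that by (simp add: nth_butlast)
  moreover have "tl bs ! k = bs ! Suc k" for k using assms(2) by (cases bs) auto
  moreover have "Suc (r - length as) = r - (length as - 1)" if "length as - 1 \<le> r" "r \<noteq> length as - 1"
    using that assms(1) by (cases as) auto
  ultimately show ?thesis using assms
    by (auto simp: nth_append not_less)
qed

locale fq =
  fixes \<Gamma> :: "('v, 'e) quiver" and A :: "'v \<Rightarrow> ('k::field, 'a) alg"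
  assumes fqG: "finite_quiver \<Gamma>"
    and kA: "\<And>l. l \<in> qV \<Gamma> \<Longrightarrow> kalg (A l)"
begin

lemma valid_wordD:
  assumes "valid_word \<Gamma> A w"
  shows "is_path \<Gamma> (fst w)" "length (snd w) = Suc (length (snd (fst w)))"
    "\<And>r. r \<le> length (snd (fst w)) \<Longrightarrow> snd w ! r \<in> acar (A (vtx \<Gamma> (fst w) r))"
  using assms by (auto simp: valid_word_def)

lemma wprod_valid:
  assumes u: "valid_word \<Gamma> A u" and v: "valid_word \<Gamma> A v" and w: "wprod \<Gamma> A u v = Some w"
  shows "valid_word \<Gamma> A w"
proof -
  obtain p as where U: "u = (p, as)" by (cases u)
  obtain q bs where V: "v = (q, bs)" by (cases v)
  have e: "pend \<Gamma> p = fst q" and W: "w = ((fst p, snd p @ snd q),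
      butlast as @ [amul (A (fst q)) (last as) (hd bs)] @ tl bs)"
    using w by (auto simp: wprod_def U V split: if_splits)
  note uu = valid_wordD[OF u[unfolded U]] and vv = valid_wordD[OF v[unfolded V]]
  have ne: "as \<noteq> []" "bs \<noteq> []" using uu(2) vv(2) by auto
  have path: "is_path \<Gamma> (fst p, snd p @ snd q)" by (rule is_path_cat[OF uu(1)[simplified] vv(1)[simplified] e])
  have la: "last as = as ! length (snd p)" using uu(2) ne by (simp add: last_conv_nth)
  have hb: "hd bs = bs ! 0" using ne by (simp add: hd_conv_nth)
  have fq: "fst q \<in> qV \<Gamma>" using vv(1) by (simp add: is_path_def)
  have m: "amul (A (fst q)) (last as) (hd bs) \<in> acar (A (fst q))"
  proof -
    have "last as \<in> acar (A (fst q))" using uu(3)[of "length (snd p)"] la vtx_len[of \<Gamma> p] e by simp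
    moreover have "hd bs \<in> acar (A (fst q))" using vv(3)[of 0] hb by (simp add: vtx_def)
    ultimately show ?thesis using kalg.mul_C[OF kA[OF fq]] by blast
  qed
  have ent: "(butlast as @ [amul (A (fst q)) (last as) (hd bs)] @ tl bs) ! r
      \<in> acar (A (vtx \<Gamma> (fst p, snd p @ snd q) r))" if r: "r \<le> length (snd p @ snd q)" for r
  proof -
    have la1: "length as - Suc 0 = length (snd p)" using uu(2) by simp
    show ?thesis
    proof (cases "r < length (snd p)")
      case True then show ?thesis
        using uu(3)[of r] by (simp add: mrg_nth[OF ne] vtx_cat[OF e] la1)
    next
      case False
      show ?thesis
      proof (cases "r = length (snd p)")
        case True then show ?thesis
          using m vtx_len[of \<Gamma> p] e by (simp add: mrg_nth[OF ne] vtx_cat[OF e] la1)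
      next
        case False2: False
        then show ?thesis
          using False vv(3)[of "r - length (snd p)"] r by (simp add: mrg_nth[OF ne] vtx_cat[OF e] la1)
      qed
    qed
  qed
  show ?thesis unfolding W valid_word_def using path ent uu(2) vv(2) ne by auto
qed

lemma wprod_assoc:
  assumes u: "valid_word \<Gamma> A u" and v: "valid_word \<Gamma> A v" and z: "valid_word \<Gamma> A z"
  shows "Option.bind (wprod \<Gamma> A u v) (\<lambda>x. wprod \<Gamma> A x z) = Option.bind (wprod \<Gamma> A v z) (\<lambda>y. wprod \<Gamma> A u y)"
proof -
  obtain p as where U: "u = (p, as)" by (cases u)
  obtain q bs where V: "v = (q, bs)" by (cases v)
  obtain r cs where Z: "z = (r, cs)" by (cases z)
  note uu = valid_wordD[OF u[unfolded U]] and vv = valid_wordD[OF v[unfolded V]]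
    and zz = valid_wordD[OF z[unfolded Z]]
  have ne: "as \<noteq> []" "bs \<noteq> []" "cs \<noteq> []" using uu(2) vv(2) zz(2) by auto
  show ?thesis
  proof (cases "pend \<Gamma> p = fst q \<and> pend \<Gamma> q = fst r")
    case False
    then show ?thesis by (auto simp: wprod_def U V Z pend_cat)
  next
    case True
    then have e1: "pend \<Gamma> p = fst q" and e2: "pend \<Gamma> q = fst r" by auto
    have fq: "fst q \<in> qV \<Gamma>" using vv(1) by (simp add: is_path_def)
    interpret Aq: kalg "A (fst q)" using kA[OF fq] .
    have la: "last as \<in> acar (A (fst q))"
      using uu(3)[of "length (snd p)"] uu(2) ne vtx_len[of \<Gamma> p] e1 by (simp add: last_conv_nth)
    have hb: "hd bs \<in> acar (A (fst q))" using vv(3)[of 0] ne by (simp add: hd_conv_nth vtx_def)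
    have lb: "last bs \<in> acar (A (fst r))"
      using vv(3)[of "length (snd q)"] vv(2) ne vtx_len[of \<Gamma> q] e2 by (simp add: last_conv_nth)
    have hc: "hd cs \<in> acar (A (fst r))" using zz(3)[of 0] ne by (simp add: hd_conv_nth vtx_def)
    show ?thesis
    proof (cases "tl bs = []")
      case True
      then obtain b where b: "bs = [b]" using ne by (cases bs) auto
      then have "snd q = []" using vv(2) by simp
      then have qr: "fst r = fst q" using e2 by (simp add: pend_def)
      have bA: "b \<in> acar (A (fst q))" using hb b by simp
      have hcq: "hd cs \<in> acar (A (fst q))" using hc qr by simp
      show ?thesis using e1 e2 b qr Aq.mul_assoc[OF la bA hcq]
        by (simp add: wprod_def U V Z pend_cat)
    next
      case False
      then obtain b b' bs' where b: "bs = b # b' # bs'" using ne by (cases bs; cases "tl bs") auto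
      show ?thesis using e1 e2 b
        by (simp add: wprod_def U V Z pend_cat butlast_append)
    qed
  qed
qed

definition "unitw l = ((l, []), [aone (A l)])"

lemma unitw_valid: "l \<in> qV \<Gamma> \<Longrightarrow> valid_word \<Gamma> A (unitw l)"
  using kalg.one_C[OF kA] by (simp add: unitw_def valid_word_def is_path_def vtx_def)

lemma wprod_unit_l:
  assumes v: "valid_word \<Gamma> A v"
  shows "wprod \<Gamma> A (unitw l) v = (if l = fst (fst v) then Some v else None)"
proof -
  obtain q bs where V: "v = (q, bs)" by (cases v)
  note vv = valid_wordD[OF v[unfolded V]]
  have ne: "bs \<noteq> []" using vv(2) by auto
  have fq: "fst q \<in> qV \<Gamma>" using vv(1) by (simp add: is_path_def)
  have hb: "hd bs \<in> acar (A (fst q))" using vv(3)[of 0] ne by (simp add: hd_conv_nth vtx_def)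
  show ?thesis using kalg.one_mul[OF kA[OF fq] hb] ne
    by (auto simp: wprod_def unitw_def V pend_def)
qed

lemma wprod_unit_r:
  assumes v: "valid_word \<Gamma> A v"
  shows "wprod \<Gamma> A v (unitw l) = (if l = pend \<Gamma> (fst v) then Some v else None)"
proof -
  obtain q bs where V: "v = (q, bs)" by (cases v)
  note vv = valid_wordD[OF v[unfolded V]]
  have ne: "bs \<noteq> []" using vv(2) by auto
  have fq: "pend \<Gamma> q \<in> qV \<Gamma>" using path_pend_V[OF fqG vv(1)] by simp
  have lb: "last bs \<in> acar (A (pend \<Gamma> q))"
    using vv(3)[of "length (snd q)"] vv(2) ne vtx_len[of \<Gamma> q] by (simp add: last_conv_nth)
  show ?thesis using kalg.mul_one[OF kA[OF fq] lb] ne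
    by (auto simp: wprod_def unitw_def V)
qed

lemma free_unit_set: "{((l, []), [aone (A l)]) | l. l \<in> qV \<Gamma>} = unitw ` qV \<Gamma>"
  by (auto simp: unitw_def)

lemma unitw_inj: "unitw l = unitw l' \<longleftrightarrow> l = l'" by (auto simp: unitw_def)

theorem free_alg_kalg: "kalg (free_alg \<Gamma> A)"
  unfolding free_alg_def free_unit_set
proof (rule salg_kalg)
  show "\<And>u v w. u \<in> {w. valid_word \<Gamma> A w} \<Longrightarrow> v \<in> {w. valid_word \<Gamma> A w} \<Longrightarrow>
      wprod \<Gamma> A u v = Some w \<Longrightarrow> w \<in> {w. valid_word \<Gamma> A w}"
    using wprod_valid by blast
  show "\<And>u v z. u \<in> {w. valid_word \<Gamma> A w} \<Longrightarrow> v \<in> {w. valid_word \<Gamma> A w} \<Longrightarrow> z \<in> {w. valid_word \<Gamma> A w} \<Longrightarrow>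
      Option.bind (wprod \<Gamma> A u v) (\<lambda>x. wprod \<Gamma> A x z) = Option.bind (wprod \<Gamma> A v z) (wprod \<Gamma> A u)"
    using wprod_assoc by simp
  show "finite (unitw ` qV \<Gamma>)" using fqG by (simp add: finite_quiver_def)
  show "unitw ` qV \<Gamma> \<subseteq> {w. valid_word \<Gamma> A w}" using unitw_valid by auto
  show "\<exists>t\<in>unitw ` qV \<Gamma>. wprod \<Gamma> A t v = Some v \<and> (\<forall>t'\<in>unitw ` qV \<Gamma>. t' \<noteq> t \<longrightarrow> wprod \<Gamma> A t' v = None)"
    if "v \<in> {w. valid_word \<Gamma> A w}" for v
  proof -
    have v: "valid_word \<Gamma> A v" using that by simp
    have "fst (fst v) \<in> qV \<Gamma>" using valid_wordD(1)[OF v] by (simp add: is_path_def)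
    then show ?thesis using wprod_unit_l[OF v] unitw_inj by (intro bexI[of _ "unitw (fst (fst v))"]) auto
  qed
  show "\<exists>t\<in>unitw ` qV \<Gamma>. wprod \<Gamma> A v t = Some v \<and> (\<forall>t'\<in>unitw ` qV \<Gamma>. t' \<noteq> t \<longrightarrow> wprod \<Gamma> A v t' = None)"
    if "v \<in> {w. valid_word \<Gamma> A w}" for v
  proof -
    have v: "valid_word \<Gamma> A v" using that by simp
    have "pend \<Gamma> (fst v) \<in> qV \<Gamma>" using path_pend_V[OF fqG valid_wordD(1)[OF v]] .
    then show ?thesis using wprod_unit_r[OF v] unitw_inj by (intro bexI[of _ "unitw (pend \<Gamma> (fst v))"]) auto
  qed
qed

end

context kalg begin

lemma acar_subspace: "is_subspace A (acar A)"
  by (auto simp: is_subspace_def add_C sm_C zero_C)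

lemma acar_ideal: "is_ideal A (acar A)"
  by (auto simp: is_ideal_def acar_subspace mul_C)

lemma span_inc: "S \<subseteq> span A S" by (auto simp: span_def)

lemma span_least: "is_subspace A T \<Longrightarrow> S \<subseteq> T \<Longrightarrow> span A S \<subseteq> T" by (auto simp: span_def)

lemma span_subspace: assumes "S \<subseteq> acar A" shows "is_subspace A (span A S)"
proof -
  have ne: "acar A \<in> {J. is_subspace A J \<and> S \<subseteq> J}" using assms acar_subspace by auto
  have 1: "span A S \<subseteq> acar A" using ne unfolding span_def by blast
  have 2: "azero A \<in> span A S" unfolding span_def by (auto simp: is_subspace_def)
  have 3: "\<forall>x\<in>span A S. \<forall>y\<in>span A S. aadd A x y \<in> span A S" unfolding span_def by (auto simp: is_subspace_def)
  have 4: "\<forall>c. \<forall>x\<in>span A S. asmul A c x \<in> span A S" unfolding span_def by (auto simp: is_subspace_def)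
  show ?thesis using 1 2 3 4 by (simp add: is_subspace_def)
qed

lemma ideal_gen_inc: "S \<subseteq> ideal_gen A S" by (auto simp: ideal_gen_def)

lemma ideal_gen_least: "is_ideal A T \<Longrightarrow> S \<subseteq> T \<Longrightarrow> ideal_gen A S \<subseteq> T" by (auto simp: ideal_gen_def)

lemma ideal_gen_ideal: assumes "S \<subseteq> acar A" shows "is_ideal A (ideal_gen A S)"
proof -
  have ne: "acar A \<in> {J. is_ideal A J \<and> S \<subseteq> J}" using assms acar_ideal by auto
  have 1: "ideal_gen A S \<subseteq> acar A" using ne unfolding ideal_gen_def by blast
  have 2: "azero A \<in> ideal_gen A S" unfolding ideal_gen_def by (auto simp: is_ideal_def is_subspace_def)
  have 3: "\<forall>x\<in>ideal_gen A S. \<forall>y\<in>ideal_gen A S. aadd A x y \<in> ideal_gen A S"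
    unfolding ideal_gen_def by (auto simp: is_ideal_def is_subspace_def)
  have 4: "\<forall>c. \<forall>x\<in>ideal_gen A S. asmul A c x \<in> ideal_gen A S"
    unfolding ideal_gen_def by (auto simp: is_ideal_def is_subspace_def)
  have 5: "\<forall>x\<in>ideal_gen A S. \<forall>r\<in>acar A. amul A r x \<in> ideal_gen A S \<and> amul A x r \<in> ideal_gen A S"
    unfolding ideal_gen_def by (auto simp: is_ideal_def)
  show ?thesis using 1 2 3 4 5 by (simp add: is_ideal_def is_subspace_def)
qed

end

lemma salg_induct:
  fixes f :: "'b \<Rightarrow> 'k::field"
  assumes f: "f \<in> acar (salg B pp U)"
    and z: "P (\<lambda>_. 0)"
    and st: "\<And>f w c. f \<in> acar (salg B pp U) \<Longrightarrow> P f \<Longrightarrow> w \<in> B \<Longrightarrow> P (\<lambda>y. f y + c * delta w y)"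
  shows "P f"
proof -
  have "\<forall>f. fsupp f \<subseteq> S \<longrightarrow> f \<in> acar (salg B pp U) \<longrightarrow> P f" if "finite S" for S :: "'b set"
    using that
  proof (induction S rule: finite_induct)
    case empty
    show ?case
    proof (intro allI impI)
      fix f :: "'b \<Rightarrow> 'k" assume "fsupp f \<subseteq> {}"
      then have "f = (\<lambda>_. 0)" by (intro ext) (auto simp: fsupp_iff)
      then show "P f" using z by simp
    qed
  next
    case (insert w S)
    show ?case
    proof (intro allI impI)
      fix f :: "'b \<Rightarrow> 'k" assume s: "fsupp f \<subseteq> insert w S" and fc: "f \<in> acar (salg B pp U)"
      define f' where "f' = (\<lambda>y. if y = w then 0 else f y)"
      have s': "fsupp f' \<subseteq> S" using s by (auto simp: fsupp_iff f'_def split: if_splits)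
      have "fsupp f' \<subseteq> fsupp f" by (auto simp: fsupp_iff f'_def split: if_splits)
      then have fc': "f' \<in> acar (salg B pp U)" using fc
        by (auto simp: salg_simps intro: finite_subset)
      have Pf': "P f'" using insert.IH s' fc' by blast
      show "P f"
      proof (cases "w \<in> B")
        case True
        have "f = (\<lambda>y. f' y + f w * delta w y)" by (auto simp: f'_def delta_def)
        then show ?thesis using st[OF fc' Pf' True, of "f w"] by simp
      next
        case False
        then have "f w = 0" using fc by (auto simp: salg_simps fsupp_iff)
        then have "f = f'" by (auto simp: f'_def)
        then show ?thesis using Pf' by simp
      qed
    qed
  qed
  then show ?thesis using f by (auto simp: salg_simps)
qed

lemma fsupp_delta[simp]: "fsupp (delta w :: _ \<Rightarrow> 'k::field) = {w}"
  by (auto simp: fsupp_iff delta_def split: if_splits)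

lemma salg_delta_C: "w \<in> B \<Longrightarrow> (delta w :: _ \<Rightarrow> 'k::field) \<in> acar (salg B pp U)"
  by (simp add: salg_simps)

lemma salg_delta_mul:
  "amul (salg B pp U) (delta x) (delta w :: _ \<Rightarrow> 'k::field) =
     (case pp x w of None \<Rightarrow> (\<lambda>_. 0) | Some y \<Rightarrow> delta y)"
proof (rule ext)
  fix y
  have "amul (salg B pp U) (delta x) (delta w :: _ \<Rightarrow> 'k::field) y =
     (\<Sum>u\<in>{x}. \<Sum>v\<in>{w}. if pp u v = Some y then delta x u * delta w v else 0)"
    unfolding salg_def by (simp only: alg.simps fsupp_delta)
  also have "\<dots> = (if pp x w = Some y then 1 else 0)" by (simp add: delta_def)
  finally show "amul (salg B pp U) (delta x) (delta w :: _ \<Rightarrow> 'k::field) y =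
     (case pp x w of None \<Rightarrow> (\<lambda>_. 0) | Some y \<Rightarrow> delta y) y"
    by (auto simp: delta_def split: option.splits)
qed

definition hlin :: "('k::field, 'a) alg \<Rightarrow> ('a \<Rightarrow> 'a) \<Rightarrow> bool" where
  "hlin B h \<longleftrightarrow> (\<forall>a\<in>acar B. h a \<in> acar B) \<and>
     (\<forall>a\<in>acar B. \<forall>a'\<in>acar B. h (aadd B a a') = aadd B (h a) (h a')) \<and>
     (\<forall>c. \<forall>a\<in>acar B. h (asmul B c a) = asmul B c (h a))"

lemma hlin_id: "hlin B (\<lambda>a. a)" by (simp add: hlin_def)

lemma (in kalg) hlin_mulr: "b \<in> acar A \<Longrightarrow> hlin A (\<lambda>a. amul A a b)"
  by (simp add: hlin_def mul_C distr sm_mul)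

lemma (in kalg) hlin_mull: "b \<in> acar A \<Longrightarrow> hlin A (\<lambda>a. amul A b a)"
  by (simp add: hlin_def mul_C distl mul_sm)

context fq begin

lemma valid_upd:
  assumes "valid_word \<Gamma> A (p, as)" "a \<in> acar (A (vtx \<Gamma> p r))"
  shows "valid_word \<Gamma> A (p, as[r := a])"
proof -
  have "as[r := a] ! k \<in> acar (A (vtx \<Gamma> p k))" if "k \<le> length (snd p)" for k
  proof (cases "k = r \<and> r < length as")
    case True then show ?thesis using assms by simp
  next
    case False
    then have "as[r := a] ! k = as ! k" by (metis list_update_beyond not_less nth_list_update_neq)
    then show ?thesis using assms that by (simp add: valid_word_def)
  qed
  then show ?thesis using assms by (simp add: valid_word_def)
qed

lemma wprod_None_iff: "wprod \<Gamma> A u v = None \<longleftrightarrow> pend \<Gamma> (fst u) \<noteq> fst (fst v)"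
  by (simp add: wprod_def)

lemma wprod_upd_r:
  assumes u: "valid_word \<Gamma> A (p, as)" and r: "r < length as" and w: "valid_word \<Gamma> A w"
    and e: "pend \<Gamma> p = fst (fst w)"
  shows "\<exists>L r' h. valid_word \<Gamma> A ((fst p, snd p @ snd (fst w)), L) \<and> r' < length L \<and>
     vtx \<Gamma> (fst p, snd p @ snd (fst w)) r' = vtx \<Gamma> p r \<and> hlin (A (vtx \<Gamma> p r)) h \<and>
     (\<forall>a. wprod \<Gamma> A (p, as[r := a]) w = Some ((fst p, snd p @ snd (fst w)), L[r' := h a]))"
proof -
  obtain q bs where W: "w = (q, bs)" by (cases w)
  note uu = valid_wordD[OF u] and ww = valid_wordD[OF w[unfolded W]]
  have ne: "as \<noteq> []" "bs \<noteq> []" using uu(2) ww(2) by auto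
  have lb: "0 < length bs" using ne by simp
  define L where "L = butlast as @ amul (A (fst q)) (last as) (hd bs) # tl bs"
  have wp: "wprod \<Gamma> A (p, as) w = Some ((fst p, snd p @ snd q), L)"
    using e by (simp add: wprod_def W L_def)
  have vL: "valid_word \<Gamma> A ((fst p, snd p @ snd q), L)"
    using wprod_valid[OF u w wp] .
  have lenL: "length L = length as + length bs - 1" using ne by (cases as) (auto simp: L_def)
  have fq: "fst q \<in> qV \<Gamma>" using ww(1) by (simp add: is_path_def)
  have rL: "r < length L" using lenL r lb by linarith
  show ?thesis
  proof (cases "r < length as - 1")
    case True
    have "wprod \<Gamma> A (p, as[r := a]) w = Some ((fst p, snd p @ snd q), L[r := a])" for a
    proof -
      have "butlast (as[r := a]) = (butlast as)[r := a]" using True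
        by (simp add: butlast_list_update)
      moreover have "last (as[r := a]) = last as" using True ne
        by (simp add: last_list_update)
      ultimately show ?thesis using e True
        by (simp add: wprod_def W L_def list_update_append)
    qed
    moreover have "vtx \<Gamma> (fst p, snd p @ snd q) r = vtx \<Gamma> p r"
      using True uu(2) e W by (simp add: vtx_cat)
    ultimately show ?thesis using vL W r rL hlin_id by (intro exI[of _ L] exI[of _ r]) auto
  next
    case False
    then have rl: "r = length as - 1" using r by simp
    then have rp: "r = length (snd p)" using uu(2) by simp
    have vr: "vtx \<Gamma> p r = fst q" using rp vtx_len[of \<Gamma> p] e W by simp
    have hb: "hd bs \<in> acar (A (fst q))" using ww(3)[of 0] ne by (simp add: hd_conv_nth vtx_def)
    have "wprod \<Gamma> A (p, as[r := a]) w = Some ((fst p, snd p @ snd q), L[r := amul (A (fst q)) a (hd bs)])" for a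
    proof -
      have "butlast (as[r := a]) = butlast as" using rl ne
        by (simp add: butlast_list_update)
      moreover have "last (as[r := a]) = a" using rl ne
        by (simp add: last_list_update)
      ultimately show ?thesis using e rl ne
        by (simp add: wprod_def W L_def list_update_append)
    qed
    moreover have "vtx \<Gamma> (fst p, snd p @ snd q) r = vtx \<Gamma> p r"
      using rp e W by (simp add: vtx_cat)
    ultimately show ?thesis using vL W r rL kalg.hlin_mulr[OF kA[OF fq] hb] vr
      by (intro exI[of _ L] exI[of _ r] exI[of _ "\<lambda>a. amul (A (fst q)) a (hd bs)"]) auto
  qed
qed

lemma wprod_upd_l:
  assumes u: "valid_word \<Gamma> A (p, as)" and r: "r < length as" and w: "valid_word \<Gamma> A w"
    and e: "pend \<Gamma> (fst w) = fst p"
  shows "\<exists>L r' h. valid_word \<Gamma> A ((fst (fst w), snd (fst w) @ snd p), L) \<and> r' < length L \<and>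
     vtx \<Gamma> (fst (fst w), snd (fst w) @ snd p) r' = vtx \<Gamma> p r \<and> hlin (A (vtx \<Gamma> p r)) h \<and>
     (\<forall>a. wprod \<Gamma> A w (p, as[r := a]) = Some ((fst (fst w), snd (fst w) @ snd p), L[r' := h a]))"
proof -
  obtain q bs where W: "w = (q, bs)" by (cases w)
  note uu = valid_wordD[OF u] and ww = valid_wordD[OF w[unfolded W]]
  have ne: "as \<noteq> []" "bs \<noteq> []" using uu(2) ww(2) by auto
  have e': "pend \<Gamma> q = fst p" using e W by simp
  define L where "L = butlast bs @ amul (A (fst p)) (last bs) (hd as) # tl as"
  have wp: "wprod \<Gamma> A w (p, as) = Some ((fst q, snd q @ snd p), L)"
    using e' by (simp add: wprod_def W L_def)
  have vL: "valid_word \<Gamma> A ((fst q, snd q @ snd p), L)"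
    using wprod_valid[OF w u wp] .
  have lenL: "length L = length bs - 1 + length as" using ne by (cases as) (auto simp: L_def)
  have lbq: "length bs - 1 = length (snd q)" using ww(2) by simp
  have fp: "fst p \<in> qV \<Gamma>" using uu(1) by (simp add: is_path_def)
  have rL: "length bs - 1 + r < length L" using lenL r by linarith
  show ?thesis
  proof (cases r)
    case (Suc k)
    have "wprod \<Gamma> A w (p, as[r := a]) = Some ((fst q, snd q @ snd p), L[length bs - 1 + r := a])" for a
    proof -
      obtain x xs where as: "as = x # xs" using ne by (cases as) auto
      show ?thesis using e' Suc as
        by (simp add: wprod_def W L_def list_update_append)
    qed
    moreover have "vtx \<Gamma> (fst q, snd q @ snd p) (length bs - 1 + r) = vtx \<Gamma> p r"
      using Suc lbq e' by (simp add: vtx_cat)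
    ultimately show ?thesis using vL W rL hlin_id
      by (intro exI[of _ L] exI[of _ "length bs - 1 + r"]) auto
  next
    case 0
    have lb: "last bs \<in> acar (A (fst p))"
      using ww(3)[of "length (snd q)"] ww(2) ne vtx_len[of \<Gamma> q] e' by (simp add: last_conv_nth)
    have "wprod \<Gamma> A w (p, as[r := a]) = Some ((fst q, snd q @ snd p), L[length bs - 1 := amul (A (fst p)) (last bs) a])" for a
    proof -
      obtain x xs where as: "as = x # xs" using ne by (cases as) auto
      show ?thesis using e' 0 as
        by (simp add: wprod_def W L_def list_update_append)
    qed
    moreover have "vtx \<Gamma> (fst q, snd q @ snd p) (length bs - 1) = vtx \<Gamma> p r"
      using 0 lbq e' vtx_len[of \<Gamma> q] vtx_cat[OF e', of "length (snd q)"] by (simp add: vtx_def)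
    moreover have "vtx \<Gamma> p 0 = fst p" by (simp add: vtx_def)
    ultimately show ?thesis using vL W rL 0 kalg.hlin_mull[OF kA[OF fp] lb]
      by (intro exI[of _ L] exI[of _ "length bs - 1"] exI[of _ "\<lambda>a. amul (A (fst p)) (last bs) a"]) auto
  qed
qed

end

context fq begin

abbreviation "FA \<equiv> free_alg \<Gamma> A"
abbreviation "MG \<equiv> multilin_gens \<Gamma> A"
abbreviation "SP \<equiv> span FA MG"

sublocale F: kalg FA by (rule free_alg_kalg)

lemma F_simps:
  "acar FA = {f. finite (fsupp f) \<and> fsupp f \<subseteq> {w. valid_word \<Gamma> A w}}"
  "aadd FA = (\<lambda>f g x. f x + g x)"
  "asmul FA = (\<lambda>c f x. c * f x)"
  "azero FA = (\<lambda>x. 0)"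
  by (simp_all add: free_alg_def salg_def)

lemma delta_C: "valid_word \<Gamma> A w \<Longrightarrow> delta w \<in> acar FA"
  by (simp add: F_simps)

lemma fun3_eq: "(\<lambda>x. f1 x - f2 x - f3 x) = aadd FA (aadd FA f1 (F.neg f2)) (F.neg f3)"
  by (simp add: F_simps)

lemma fun2_eq: "(\<lambda>x. f1 x - c * f2 x) = aadd FA f1 (F.neg (asmul FA c f2))"
  by (simp add: F_simps)

lemma delta_mul: "amul FA (delta x) (delta w) = (case wprod \<Gamma> A x w of None \<Rightarrow> (\<lambda>_. 0) | Some y \<Rightarrow> delta y)"
  unfolding free_alg_def by (rule salg_delta_mul)

lemma upd_C: "valid_word \<Gamma> A (p, as) \<Longrightarrow> r < length as \<Longrightarrow> a \<in> acar (A (vtx \<Gamma> p r)) \<Longrightarrow>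
   delta (p, as[r := a]) \<in> acar FA"
  by (rule delta_C, rule valid_upd)

lemma vtxV': "valid_word \<Gamma> A (p, as) \<Longrightarrow> r < length as \<Longrightarrow> vtx \<Gamma> p r \<in> qV \<Gamma>"
  by (rule vtx_V[OF fqG]) (auto dest: valid_wordD)

lemma MG_C: "MG \<subseteq> acar FA"
proof
  fix g assume "g \<in> MG"
  then show "g \<in> acar FA"
  proof (unfold multilin_gens_def, elim UnE CollectE exE conjE)
    fix p as r a a' assume h: "valid_word \<Gamma> A (p, as)" "r < length as" "a \<in> acar (A (vtx \<Gamma> p r))"
      "a' \<in> acar (A (vtx \<Gamma> p r))"
      "g = (\<lambda>x. delta (p, as[r := aadd (A (vtx \<Gamma> p r)) a a']) x - delta (p, as[r := a]) x - delta (p, as[r := a']) x)"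
    interpret V: kalg "A (vtx \<Gamma> p r)" by (rule kA[OF vtxV'[OF h(1,2)]])
    show "g \<in> acar FA" unfolding h(5) fun3_eq
      using h upd_C V.add_C by (intro F.add_C F.sm_C) auto
  next
    fix p as r a c assume h: "valid_word \<Gamma> A (p, as)" "r < length as" "a \<in> acar (A (vtx \<Gamma> p r))"
      "g = (\<lambda>x. delta (p, as[r := asmul (A (vtx \<Gamma> p r)) c a]) x - c * delta (p, as[r := a]) x)"
    interpret V: kalg "A (vtx \<Gamma> p r)" by (rule kA[OF vtxV'[OF h(1,2)]])
    show "g \<in> acar FA" unfolding h(4) fun2_eq
      using h upd_C V.sm_C by (intro F.add_C F.sm_C) auto
  qed
qed

lemma SP_sub: "is_subspace FA SP" by (rule F.span_subspace[OF MG_C])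

lemma SP_C: "SP \<subseteq> acar FA" using SP_sub by (simp add: is_subspace_def)

lemma MG_SP: "g \<in> MG \<Longrightarrow> g \<in> SP" using F.span_inc[of MG] by (rule subsetD)

lemma mul3_r: "f1 \<in> acar FA \<Longrightarrow> f2 \<in> acar FA \<Longrightarrow> f3 \<in> acar FA \<Longrightarrow> h \<in> acar FA \<Longrightarrow>
  amul FA (\<lambda>x. f1 x - f2 x - f3 x) h = (\<lambda>x. amul FA f1 h x - amul FA f2 h x - amul FA f3 h x)"
  unfolding fun3_eq by (simp add: F.distr F.sm_mul F.add_C F.sm_C F.mul_C)

lemma mul3_l: "f1 \<in> acar FA \<Longrightarrow> f2 \<in> acar FA \<Longrightarrow> f3 \<in> acar FA \<Longrightarrow> h \<in> acar FA \<Longrightarrow>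
  amul FA h (\<lambda>x. f1 x - f2 x - f3 x) = (\<lambda>x. amul FA h f1 x - amul FA h f2 x - amul FA h f3 x)"
  unfolding fun3_eq by (simp add: F.distl F.mul_sm F.add_C F.sm_C F.mul_C)

lemma mul2_r: "f1 \<in> acar FA \<Longrightarrow> f2 \<in> acar FA \<Longrightarrow> h \<in> acar FA \<Longrightarrow>
  amul FA (\<lambda>x. f1 x - c * f2 x) h = (\<lambda>x. amul FA f1 h x - c * amul FA f2 h x)"
  unfolding fun2_eq by (simp add: F.distr F.sm_mul F.add_C F.sm_C F.mul_C)

lemma mul2_l: "f1 \<in> acar FA \<Longrightarrow> f2 \<in> acar FA \<Longrightarrow> h \<in> acar FA \<Longrightarrow>
  amul FA h (\<lambda>x. f1 x - c * f2 x) = (\<lambda>x. amul FA h f1 x - c * amul FA h f2 x)"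
  unfolding fun2_eq by (simp add: F.distl F.mul_sm F.add_C F.sm_C F.mul_C)

lemma genadd_MG:
  assumes "valid_word \<Gamma> A (p, as)" "r < length as" "a \<in> acar (A (vtx \<Gamma> p r))" "a' \<in> acar (A (vtx \<Gamma> p r))"
  shows "(\<lambda>x. delta (p, as[r := aadd (A (vtx \<Gamma> p r)) a a']) x - delta (p, as[r := a]) x - delta (p, as[r := a']) x) \<in> MG"
  unfolding multilin_gens_def using assms by blast

lemma gensm_MG:
  assumes "valid_word \<Gamma> A (p, as)" "r < length as" "a \<in> acar (A (vtx \<Gamma> p r))"
  shows "(\<lambda>x. delta (p, as[r := asmul (A (vtx \<Gamma> p r)) c a]) x - c * delta (p, as[r := a]) x) \<in> MG"
  unfolding multilin_gens_def using assms by blast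

lemma MG_cases:
  assumes "g \<in> MG"
  obtains (add) p as r a a' where "valid_word \<Gamma> A (p, as)" "r < length as" "a \<in> acar (A (vtx \<Gamma> p r))"
    "a' \<in> acar (A (vtx \<Gamma> p r))"
    "g = (\<lambda>x. delta (p, as[r := aadd (A (vtx \<Gamma> p r)) a a']) x - delta (p, as[r := a]) x - delta (p, as[r := a']) x)"
  | (sm) p as r a c where "valid_word \<Gamma> A (p, as)" "r < length as" "a \<in> acar (A (vtx \<Gamma> p r))"
    "g = (\<lambda>x. delta (p, as[r := asmul (A (vtx \<Gamma> p r)) c a]) x - c * delta (p, as[r := a]) x)"
  using assms unfolding multilin_gens_def by blast

lemma SP_zero: "(\<lambda>_. 0) \<in> SP" using SP_sub by (simp add: is_subspace_def F_simps)

lemma gen_mul_r: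
  assumes g: "g \<in> MG" and w: "valid_word \<Gamma> A w"
  shows "amul FA g (delta w) \<in> SP"
  using g
proof (cases rule: MG_cases)
  case (add p as r a a')
  note h = add
  interpret V: kalg "A (vtx \<Gamma> p r)" by (rule kA[OF vtxV'[OF h(1,2)]])
  have prod: "amul FA g (delta w) = (\<lambda>x. amul FA (delta (p, as[r := aadd (A (vtx \<Gamma> p r)) a a'])) (delta w) x
      - amul FA (delta (p, as[r := a])) (delta w) x - amul FA (delta (p, as[r := a'])) (delta w) x)"
    unfolding h(5) by (rule mul3_r) (use h V.add_C upd_C delta_C w in auto)
  show "amul FA g (delta w) \<in> SP"
  proof (cases "pend \<Gamma> p = fst (fst w)")
    case False
    then show ?thesis unfolding prod delta_mul by (simp add: wprod_def SP_zero)
  next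
    case True
    obtain L r' hh where L: "valid_word \<Gamma> A ((fst p, snd p @ snd (fst w)), L)" "r' < length L"
      "vtx \<Gamma> (fst p, snd p @ snd (fst w)) r' = vtx \<Gamma> p r" "hlin (A (vtx \<Gamma> p r)) hh"
      "\<And>b. wprod \<Gamma> A (p, as[r := b]) w = Some ((fst p, snd p @ snd (fst w)), L[r' := hh b])"
      using wprod_upd_r[OF h(1,2) w True] by blast
    have hl: "hh a \<in> acar (A (vtx \<Gamma> p r))" "hh a' \<in> acar (A (vtx \<Gamma> p r))"
      "hh (aadd (A (vtx \<Gamma> p r)) a a') = aadd (A (vtx \<Gamma> p r)) (hh a) (hh a')"
      using L(4) h(3,4) by (auto simp: hlin_def)
    show ?thesis unfolding prod delta_mul L(5) option.case hl(3)
      using genadd_MG[OF L(1,2), of "hh a" "hh a'"] L(3) hl(1,2) MG_SP by simp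
  qed
next
  case (sm p as r a c)
  note h = sm
  interpret V: kalg "A (vtx \<Gamma> p r)" by (rule kA[OF vtxV'[OF h(1,2)]])
  have prod: "amul FA g (delta w) = (\<lambda>x. amul FA (delta (p, as[r := asmul (A (vtx \<Gamma> p r)) c a])) (delta w) x
      - c * amul FA (delta (p, as[r := a])) (delta w) x)"
    unfolding h(4) by (rule mul2_r) (use h V.sm_C upd_C delta_C w in auto)
  show "amul FA g (delta w) \<in> SP"
  proof (cases "pend \<Gamma> p = fst (fst w)")
    case False
    then show ?thesis unfolding prod delta_mul by (simp add: wprod_def SP_zero)
  next
    case True
    obtain L r' hh where L: "valid_word \<Gamma> A ((fst p, snd p @ snd (fst w)), L)" "r' < length L"
      "vtx \<Gamma> (fst p, snd p @ snd (fst w)) r' = vtx \<Gamma> p r" "hlin (A (vtx \<Gamma> p r)) hh"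
      "\<And>b. wprod \<Gamma> A (p, as[r := b]) w = Some ((fst p, snd p @ snd (fst w)), L[r' := hh b])"
      using wprod_upd_r[OF h(1,2) w True] by blast
    have hl: "hh a \<in> acar (A (vtx \<Gamma> p r))"
      "hh (asmul (A (vtx \<Gamma> p r)) c a) = asmul (A (vtx \<Gamma> p r)) c (hh a)"
      using L(4) h(3) by (auto simp: hlin_def)
    show ?thesis unfolding prod delta_mul L(5) option.case hl(2)
      using gensm_MG[OF L(1,2), of "hh a" c] L(3) hl(1) MG_SP by simp
  qed
qed

lemma gen_mul_l:
  assumes g: "g \<in> MG" and w: "valid_word \<Gamma> A w"
  shows "amul FA (delta w) g \<in> SP"
  using g
proof (cases rule: MG_cases)
  case (add p as r a a')
  note h = add
  interpret V: kalg "A (vtx \<Gamma> p r)" by (rule kA[OF vtxV'[OF h(1,2)]])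
  have prod: "amul FA (delta w) g = (\<lambda>x. amul FA (delta w) (delta (p, as[r := aadd (A (vtx \<Gamma> p r)) a a'])) x
      - amul FA (delta w) (delta (p, as[r := a])) x - amul FA (delta w) (delta (p, as[r := a'])) x)"
    unfolding h(5) by (rule mul3_l) (use h V.add_C upd_C delta_C w in auto)
  show "amul FA (delta w) g \<in> SP"
  proof (cases "pend \<Gamma> (fst w) = fst p")
    case False
    then show ?thesis unfolding prod delta_mul by (simp add: wprod_def SP_zero)
  next
    case True
    obtain L r' hh where L: "valid_word \<Gamma> A ((fst (fst w), snd (fst w) @ snd p), L)" "r' < length L"
      "vtx \<Gamma> (fst (fst w), snd (fst w) @ snd p) r' = vtx \<Gamma> p r" "hlin (A (vtx \<Gamma> p r)) hh"
      "\<And>b. wprod \<Gamma> A w (p, as[r := b]) = Some ((fst (fst w), snd (fst w) @ snd p), L[r' := hh b])"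
      using wprod_upd_l[OF h(1,2) w True] by blast
    have hl: "hh a \<in> acar (A (vtx \<Gamma> p r))" "hh a' \<in> acar (A (vtx \<Gamma> p r))"
      "hh (aadd (A (vtx \<Gamma> p r)) a a') = aadd (A (vtx \<Gamma> p r)) (hh a) (hh a')"
      using L(4) h(3,4) by (auto simp: hlin_def)
    show ?thesis unfolding prod delta_mul L(5) option.case hl(3)
      using genadd_MG[OF L(1,2), of "hh a" "hh a'"] L(3) hl(1,2) MG_SP by simp
  qed
next
  case (sm p as r a c)
  note h = sm
  interpret V: kalg "A (vtx \<Gamma> p r)" by (rule kA[OF vtxV'[OF h(1,2)]])
  have prod: "amul FA (delta w) g = (\<lambda>x. amul FA (delta w) (delta (p, as[r := asmul (A (vtx \<Gamma> p r)) c a])) x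
      - c * amul FA (delta w) (delta (p, as[r := a])) x)"
    unfolding h(4) by (rule mul2_l) (use h V.sm_C upd_C delta_C w in auto)
  show "amul FA (delta w) g \<in> SP"
  proof (cases "pend \<Gamma> (fst w) = fst p")
    case False
    then show ?thesis unfolding prod delta_mul by (simp add: wprod_def SP_zero)
  next
    case True
    obtain L r' hh where L: "valid_word \<Gamma> A ((fst (fst w), snd (fst w) @ snd p), L)" "r' < length L"
      "vtx \<Gamma> (fst (fst w), snd (fst w) @ snd p) r' = vtx \<Gamma> p r" "hlin (A (vtx \<Gamma> p r)) hh"
      "\<And>b. wprod \<Gamma> A w (p, as[r := b]) = Some ((fst (fst w), snd (fst w) @ snd p), L[r' := hh b])"
      using wprod_upd_l[OF h(1,2) w True] by blast
    have hl: "hh a \<in> acar (A (vtx \<Gamma> p r))"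
      "hh (asmul (A (vtx \<Gamma> p r)) c a) = asmul (A (vtx \<Gamma> p r)) c (hh a)"
      using L(4) h(3) by (auto simp: hlin_def)
    show ?thesis unfolding prod delta_mul L(5) option.case hl(2)
      using gensm_MG[OF L(1,2), of "hh a" c] L(3) hl(1) MG_SP by simp
  qed
qed

lemma SP_add: "x \<in> SP \<Longrightarrow> y \<in> SP \<Longrightarrow> aadd FA x y \<in> SP"
  using SP_sub by (simp add: is_subspace_def)
lemma SP_sm: "x \<in> SP \<Longrightarrow> asmul FA c x \<in> SP"
  using SP_sub by (simp add: is_subspace_def)

lemma gen_mul_any:
  assumes g: "g \<in> MG" and f: "f \<in> acar FA"
  shows "amul FA g f \<in> SP \<and> amul FA f g \<in> SP"
proof -
  have gC: "g \<in> acar FA" using MG_C g by (rule subsetD)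
  have f': "f \<in> acar (salg {w. valid_word \<Gamma> A w} (wprod \<Gamma> A) {((l, []), [aone (A l)]) | l. l \<in> qV \<Gamma>})"
    using f unfolding free_alg_def .
  show ?thesis
  proof (rule salg_induct[OF f', where P="\<lambda>f. amul FA g f \<in> SP \<and> amul FA f g \<in> SP"])
    have z: "(\<lambda>_. 0) = azero FA" by (simp add: F_simps)
    show "amul FA g (\<lambda>_. 0) \<in> SP \<and> amul FA (\<lambda>_. 0) g \<in> SP"
      unfolding z using F.mul_zero[OF gC] F.zero_mul[OF gC] SP_zero z by simp
  next
    fix f w c
    assume f1: "f \<in> acar (salg {w. valid_word \<Gamma> A w} (wprod \<Gamma> A) {((l, []), [aone (A l)]) | l. l \<in> qV \<Gamma>})"
      and IH: "amul FA g f \<in> SP \<and> amul FA f g \<in> SP" and w1: "w \<in> {w. valid_word \<Gamma> A w}"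
    have fC: "f \<in> acar FA" using f1 unfolding free_alg_def .
    have wv: "valid_word \<Gamma> A w" using w1 by simp
    have e: "(\<lambda>y. f y + c * delta w y) = aadd FA f (asmul FA c (delta w))" by (simp add: F_simps)
    have dC: "delta w \<in> acar FA" using delta_C[OF wv] .
    show "amul FA g (\<lambda>y. f y + c * delta w y) \<in> SP \<and> amul FA (\<lambda>y. f y + c * delta w y) g \<in> SP"
      unfolding e
      using IH gen_mul_r[OF g wv] gen_mul_l[OF g wv] gC fC dC
      by (simp add: F.distl F.distr F.mul_sm F.sm_mul F.sm_C SP_add SP_sm)
  qed
qed

theorem SP_ideal: "is_ideal FA SP"
proof -
  define T where "T = {x \<in> SP. \<forall>r\<in>acar FA. amul FA x r \<in> SP \<and> amul FA r x \<in> SP}"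
  have TC: "T \<subseteq> acar FA" using SP_C by (auto simp: T_def)
  have Tsub: "is_subspace FA T"
    unfolding is_subspace_def
  proof (intro conjI ballI allI)
    show "T \<subseteq> acar FA" by (rule TC)
    have "amul FA (azero FA) r \<in> SP \<and> amul FA r (azero FA) \<in> SP" if "r \<in> acar FA" for r
      using F.mul_zero[OF that] F.zero_mul[OF that] SP_zero by (simp add: F_simps)
    then show "azero FA \<in> T" unfolding T_def using SP_zero by (simp add: F_simps)
  next
    fix x y assume xy: "x \<in> T" "y \<in> T"
    then have xC: "x \<in> acar FA" and yC: "y \<in> acar FA" using TC by auto
    have "amul FA (aadd FA x y) r \<in> SP \<and> amul FA r (aadd FA x y) \<in> SP" if r: "r \<in> acar FA" for r
      using xy r by (simp add: F.distl[OF r xC yC] F.distr[OF xC yC r] SP_add T_def)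
    then show "aadd FA x y \<in> T" using xy unfolding T_def by (simp add: SP_add)
  next
    fix c x assume x: "x \<in> T"
    then have xC: "x \<in> acar FA" using TC by auto
    have "amul FA (asmul FA c x) r \<in> SP \<and> amul FA r (asmul FA c x) \<in> SP" if r: "r \<in> acar FA" for r
      using x r by (simp add: F.mul_sm[OF r xC] F.sm_mul[OF xC r] SP_sm T_def)
    then show "asmul FA c x \<in> T" using x unfolding T_def by (simp add: SP_sm)
  qed
  have "MG \<subseteq> T"
  proof
    fix g assume g: "g \<in> MG"
    show "g \<in> T" unfolding T_def using gen_mul_any[OF g] MG_SP[OF g] by simp
  qed
  then have ST: "SP \<subseteq> T" by (rule F.span_least[OF Tsub])
  have "\<forall>x\<in>SP. \<forall>r\<in>acar FA. amul FA r x \<in> SP \<and> amul FA x r \<in> SP"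
    using ST unfolding T_def by blast
  then show ?thesis unfolding is_ideal_def using SP_sub by simp
qed

end

lemma maxsubG:
  assumes "maxsub A M N"
  shows "N \<subseteq> M" "azero A \<in> N" "\<And>x y. x \<in> N \<Longrightarrow> y \<in> N \<Longrightarrow> aadd A x y \<in> N"
    "\<And>x r. x \<in> N \<Longrightarrow> r \<in> acar A \<Longrightarrow> amul A x r \<in> N" "N \<noteq> M"
    "\<And>N'. submod A M N' \<Longrightarrow> N \<subseteq> N' \<Longrightarrow> N' = N \<or> N' = M"
  using assms by (auto simp: maxsub_def submod_def)

lemma maxsubI:
  assumes "N \<subseteq> M" "azero A \<in> N" "\<And>x y. x \<in> N \<Longrightarrow> y \<in> N \<Longrightarrow> aadd A x y \<in> N"
    "\<And>x r. x \<in> N \<Longrightarrow> r \<in> acar A \<Longrightarrow> amul A x r \<in> N" "N \<noteq> M"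
    "\<And>N'. submod A M N' \<Longrightarrow> N \<subseteq> N' \<Longrightarrow> N' = N \<or> N' = M"
  shows "maxsub A M N"
  using assms by (auto simp: maxsub_def submod_def)

lemma submodI:
  assumes "N \<subseteq> M" "azero A \<in> N" "\<And>x y. x \<in> N \<Longrightarrow> y \<in> N \<Longrightarrow> aadd A x y \<in> N"
    "\<And>x r. x \<in> N \<Longrightarrow> r \<in> acar A \<Longrightarrow> amul A x r \<in> N"
  shows "submod A M N"
  using assms by (auto simp: submod_def)

lemma submodE:
  assumes "submod A M N"
  shows "N \<subseteq> M" "azero A \<in> N" "\<And>x y. x \<in> N \<Longrightarrow> y \<in> N \<Longrightarrow> aadd A x y \<in> N"
    "\<And>x r. x \<in> N \<Longrightarrow> r \<in> acar A \<Longrightarrow> amul A x r \<in> N"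
  using assms by (auto simp: submod_def)

locale absT = L: kalg L + B: kalg B
  for L :: "('k::field, 'x) alg" and B :: "('k, 'y) alg" +
  fixes io :: "'y \<Rightarrow> 'x" and ui :: 'x and ej :: 'y
  assumes io_C: "a \<in> acar B \<Longrightarrow> io a \<in> acar L"
    and io_add: "a \<in> acar B \<Longrightarrow> b \<in> acar B \<Longrightarrow> io (aadd B a b) = aadd L (io a) (io b)"
    and io_sm: "a \<in> acar B \<Longrightarrow> io (asmul B c a) = asmul L c (io a)"
    and io_mul: "a \<in> acar B \<Longrightarrow> b \<in> acar B \<Longrightarrow> io (amul B a b) = amul L (io a) (io b)"
    and io_inj: "a \<in> acar B \<Longrightarrow> b \<in> acar B \<Longrightarrow> io a = io b \<Longrightarrow> a = b"
    and io_one: "io (aone B) = ui"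
    and ej_C: "ej \<in> acar B" and ej_idem: "amul B ej ej = ej"
    and corner: "x \<in> acar L \<Longrightarrow> \<exists>a\<in>acar B. amul L ui (amul L x ui) = io a"
    and Kz: "x \<in> acar L \<Longrightarrow> y \<in> acar L \<Longrightarrow>
        amul L ui (amul L x (amul L (L.sub (aone L) ui) (amul L y ui))) = azero L"
begin

abbreviation mm (infixl "\<odot>" 70) where "x \<odot> y \<equiv> amul L x y"
abbreviation pp (infixl "\<oplus>" 65) where "x \<oplus> y \<equiv> aadd L x y"
abbreviation "CL \<equiv> acar L"
abbreviation "e \<equiv> io ej"
abbreviation "cc \<equiv> L.sub (aone L) ui"
abbreviation "P \<equiv> eA L e"
abbreviation "M' \<equiv> eA B ej"

lemma ui_C: "ui \<in> CL" using io_C[OF B.one_C] io_one by simp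
lemma e_C: "e \<in> CL" using io_C[OF ej_C] .
lemma cc_C: "cc \<in> CL" using ui_C by (simp add: L.sub_C L.one_C)

lemma io_zero: "io (azero B) = azero L"
proof -
  have "io (azero B) \<oplus> io (azero B) = io (azero B) \<oplus> azero L"
    using io_add[OF B.zero_C B.zero_C] B.add_zero[OF B.zero_C] L.add_zero_r io_C B.zero_C by simp
  then show ?thesis using L.add_left_cancel io_C B.zero_C L.zero_C by blast
qed

lemma io_neg: "a \<in> acar B \<Longrightarrow> io (B.neg a) = L.neg (io a)" by (rule io_sm)

lemma io_sub: "a \<in> acar B \<Longrightarrow> b \<in> acar B \<Longrightarrow> io (B.sub a b) = L.sub (io a) (io b)"
  by (simp add: io_add io_neg B.sm_C)

lemma ui_idem: "ui \<odot> ui = ui" using io_mul[OF B.one_C B.one_C] B.one_mul[OF B.one_C] io_one by simp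

lemma e_ui: "e \<odot> ui = e" using io_mul[OF ej_C B.one_C] B.mul_one[OF ej_C] io_one by simp
lemma ui_e: "ui \<odot> e = e" using io_mul[OF B.one_C ej_C] B.one_mul[OF ej_C] io_one by simp
lemma e_idem: "e \<odot> e = e" using io_mul[OF ej_C ej_C] ej_idem by simp

lemmas massoc = L.mul_assoc
lemmas CLs = L.mul_C L.add_C L.sm_C L.zero_C L.one_C ui_C e_C cc_C

lemma ui_cc: "ui \<odot> cc = azero L"
  using ui_C by (simp add: L.mul_sub L.one_C L.mul_one ui_idem L.add_neg_r)
lemma cc_ui: "cc \<odot> ui = azero L"
  using ui_C by (simp add: L.sub_mul L.one_C L.one_mul ui_idem L.add_neg_r)

lemma split_ui: "x \<in> CL \<Longrightarrow> x = (x \<odot> ui) \<oplus> (x \<odot> cc)"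
proof -
  assume x: "x \<in> CL"
  have "(x \<odot> ui) \<oplus> (x \<odot> cc) = x \<odot> (ui \<oplus> cc)" using x by (simp add: L.distl CLs)
  also have "ui \<oplus> cc = aone L" using ui_C L.one_C
    by (metis L.add_sub_cancel)
  finally show ?thesis using x L.mul_one by simp
qed

lemma Kz': "x \<in> CL \<Longrightarrow> y \<in> CL \<Longrightarrow> ui \<odot> x \<odot> cc \<odot> y \<odot> ui = azero L"
  using Kz by (simp add: massoc CLs)

lemma P_C: "P \<subseteq> CL" by (auto simp: eA_def CLs)
lemma e_P: "e \<in> P" unfolding eA_def using L.mul_one[OF e_C] L.one_C by force
lemma P_mul: "x \<in> P \<Longrightarrow> r \<in> CL \<Longrightarrow> x \<odot> r \<in> P"
  unfolding eA_def by (auto simp: massoc CLs)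
lemma P_add: "x \<in> P \<Longrightarrow> y \<in> P \<Longrightarrow> x \<oplus> y \<in> P"
  unfolding eA_def by (auto simp: L.distl[symmetric] CLs)
lemma P_zero: "azero L \<in> P"
  unfolding eA_def using L.mul_zero[OF e_C] L.zero_C by force
lemma P_ui: "x \<in> P \<Longrightarrow> ui \<odot> x = x"
  unfolding eA_def by (auto simp: massoc[symmetric] CLs ui_e)
lemma P_sm: "x \<in> P \<Longrightarrow> asmul L c x \<in> P"
  unfolding eA_def by (auto simp: L.mul_sm[symmetric] CLs)

lemma submod_P: "submod L P P"
  by (auto simp: submod_def P_zero P_add P_mul)

lemma gen_P: "submod L P N \<Longrightarrow> e \<in> N \<Longrightarrow> N = P"
  unfolding submod_def eA_def by blast

lemma R_P: "mod_rad L P \<subseteq> P" by (simp add: mod_rad_def)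

lemma maxsubD: "maxsub L P N \<Longrightarrow> submod L P N \<and> N \<noteq> P \<and> (\<forall>N'. submod L P N' \<and> N \<subseteq> N' \<longrightarrow> N' = N \<or> N' = P)"
  by (simp add: maxsub_def)

lemma mem_R: "x \<in> P \<Longrightarrow> (\<And>N. maxsub L P N \<Longrightarrow> x \<in> N) \<Longrightarrow> x \<in> mod_rad L P"
  by (auto simp: mod_rad_def)

lemma R_mem: "x \<in> mod_rad L P \<Longrightarrow> maxsub L P N \<Longrightarrow> x \<in> N"
  by (auto simp: mod_rad_def)

lemma submod_C: "submod L P N \<Longrightarrow> N \<subseteq> CL" using P_C by (auto simp: submod_def)

lemma maxsubE:
  assumes "maxsub L P N"
  shows "N \<subseteq> P" "azero L \<in> N" "\<And>x y. x \<in> N \<Longrightarrow> y \<in> N \<Longrightarrow> x \<oplus> y \<in> N"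
    "\<And>x r. x \<in> N \<Longrightarrow> r \<in> CL \<Longrightarrow> x \<odot> r \<in> N" "N \<noteq> P"
    "\<And>N'. submod L P N' \<Longrightarrow> N \<subseteq> N' \<Longrightarrow> N' = N \<or> N' = P"
  using assms by (auto simp: maxsub_def submod_def)

lemma zero_u:
  assumes u: "u \<in> CL" "u \<odot> ui = azero L" and x: "x \<in> CL" and y: "y \<in> CL"
  shows "ui \<odot> x \<odot> u \<odot> y \<odot> ui = azero L"
proof -
  have "u \<odot> cc = u" using u by (simp add: L.mul_sub L.one_C L.mul_one ui_C L.add_zero_r L.sm_zero)
  then have "ui \<odot> x \<odot> u \<odot> y \<odot> ui = ui \<odot> (x \<odot> u) \<odot> cc \<odot> y \<odot> ui"
    using u x y by (simp add: massoc CLs)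
  also have "\<dots> = azero L" using Kz' u x y CLs by simp
  finally show ?thesis .
qed

theorem A1:
  assumes u: "u \<in> CL" "u \<odot> u = u" "u \<odot> ui = azero L"
  shows "{x \<odot> u | x. x \<in> mod_rad L P} = {x \<odot> u | x. x \<in> P}"
proof
  show "{x \<odot> u | x. x \<in> mod_rad L P} \<subseteq> {x \<odot> u | x. x \<in> P}" using R_P by blast
next
  show "{x \<odot> u | x. x \<in> P} \<subseteq> {x \<odot> u | x. x \<in> mod_rad L P}"
  proof
    fix y assume "y \<in> {x \<odot> u | x. x \<in> P}"
    then obtain x where x: "x \<in> P" "y = x \<odot> u" by blast
    have xC: "x \<in> CL" using x P_C by blast
    define z where "z = x \<odot> u"
    have zC: "z \<in> CL" using xC u by (simp add: z_def CLs)
    have zP: "z \<in> P" using P_mul x u by (simp add: z_def)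
    have "z \<in> mod_rad L P"
    proof (rule mem_R[OF zP])
      fix N assume N: "maxsub L P N"
      note ND = maxsubE[OF N]
      have NC: "N \<subseteq> CL" using ND(1) P_C by blast
      show "z \<in> N"
      proof (rule ccontr)
        assume zN: "z \<notin> N"
        define N3 where "N3 = {n \<oplus> (z \<odot> r) | n r. n \<in> N \<and> r \<in> CL}"
        have N3C: "N3 \<subseteq> P"
        proof
          fix t assume "t \<in> N3"
          then obtain n r where "n \<in> N" "r \<in> CL" "t = n \<oplus> (z \<odot> r)" by (auto simp: N3_def)
          then show "t \<in> P" using ND(1) P_add P_mul[OF zP] by blast
        qed
        have sub3: "submod L P N3"
          unfolding submod_def
        proof (intro conjI ballI)
          show "N3 \<subseteq> P" by (rule N3C)
          have "azero L = azero L \<oplus> (z \<odot> azero L)" using zC by (simp add: L.mul_zero L.add_zero L.zero_C)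
          then show "azero L \<in> N3" unfolding N3_def using ND(2) L.zero_C by blast
        next
          fix s t assume "s \<in> N3" "t \<in> N3"
          then obtain n r n' r' where h: "n \<in> N" "r \<in> CL" "s = n \<oplus> (z \<odot> r)"
            "n' \<in> N" "r' \<in> CL" "t = n' \<oplus> (z \<odot> r')" by (auto simp: N3_def)
          have nC: "n \<in> CL" "n' \<in> CL" using h NC by auto
          have "s \<oplus> t = (n \<oplus> n') \<oplus> (z \<odot> (r \<oplus> r'))"
            using h nC zC by (simp add: L.distl CLs L.add_swap4)
          moreover have "n \<oplus> n' \<in> N" using h ND(3) by simp
          ultimately show "s \<oplus> t \<in> N3" unfolding N3_def using h CLs by blast
        next
          fix s r0 assume "s \<in> N3" "r0 \<in> CL"
          then obtain n r where h: "n \<in> N" "r \<in> CL" "s = n \<oplus> (z \<odot> r)" "r0 \<in> CL" by (auto simp: N3_def)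
          have nC: "n \<in> CL" using h NC by auto
          have "s \<odot> r0 = (n \<odot> r0) \<oplus> (z \<odot> (r \<odot> r0))"
            using h nC zC by (simp add: L.distr massoc CLs)
          moreover have "n \<odot> r0 \<in> N" using h ND(4) by simp
          ultimately show "s \<odot> r0 \<in> N3" unfolding N3_def using h CLs by blast
        qed
        have NN3: "N \<subseteq> N3"
        proof
          fix n assume n: "n \<in> N"
          then have "n = n \<oplus> (z \<odot> azero L)" using NC zC by (auto simp: L.mul_zero L.add_zero_r)
          then show "n \<in> N3" unfolding N3_def using n L.zero_C by blast
        qed
        have "z \<in> N3"
        proof -
          have "z = azero L \<oplus> (z \<odot> aone L)" using zC by (simp add: L.mul_one L.add_zero)
          moreover have "azero L \<in> N" using ND(2) by simp
          ultimately show ?thesis unfolding N3_def using L.one_C by blast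
        qed
        then have "N3 \<noteq> N" using zN by blast
        then have "N3 = P" using ND(6)[OF sub3 NN3] by blast
        then have "e \<in> N3" using e_P by simp
        then obtain n r where h: "n \<in> N" "r \<in> CL" "e = n \<oplus> (z \<odot> r)" by (auto simp: N3_def)
        have nC: "n \<in> CL" using h NC by auto
        have "e = e \<odot> e" using e_idem by simp
        also have "\<dots> = (n \<odot> e) \<oplus> (z \<odot> r \<odot> e)" using h(3) nC zC h(2) by (simp add: L.distr CLs)
        also have "z \<odot> r \<odot> e = azero L"
        proof -
          have "z \<odot> r \<odot> e = ui \<odot> x \<odot> u \<odot> r \<odot> ui \<odot> e"
            using P_ui[OF x(1)] xC u h(2) by (simp add: z_def massoc CLs ui_e)
          also have "\<dots> = azero L \<odot> e" using zero_u[OF u(1) u(3) xC h(2)] by simp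
          also have "\<dots> = azero L" using L.zero_mul e_C by simp
          finally show ?thesis .
        qed
        finally have "e = n \<odot> e \<oplus> azero L" .
        then have "e = n \<odot> e" using nC by (simp add: L.add_zero_r CLs)
        moreover have "n \<odot> e \<in> N" using ND(4) h(1) e_C by simp
        ultimately have "e \<in> N" by simp
        then have "N = P" using gen_P maxsubD[OF N] by blast
        then show False using ND(5) by blast
      qed
    qed
    moreover have "y = z \<odot> u" using x u xC by (simp add: z_def massoc)
    ultimately show "y \<in> {x \<odot> u | x. x \<in> mod_rad L P}" by blast
  qed
qed

lemma ui_cc_one: "ui \<oplus> cc = aone L" using ui_C L.one_C by (metis L.add_sub_cancel)

lemma M'_C: "M' \<subseteq> acar B" using ej_C by (auto simp: eA_def B.mul_C)
lemma ej_M': "ej \<in> M'" unfolding eA_def using B.mul_one[OF ej_C] B.one_C by force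
lemma M'_mul: "a \<in> M' \<Longrightarrow> r \<in> acar B \<Longrightarrow> amul B a r \<in> M'"
  unfolding eA_def using ej_C by (auto simp: B.mul_assoc B.mul_C)
lemma M'_add: "a \<in> M' \<Longrightarrow> b \<in> M' \<Longrightarrow> aadd B a b \<in> M'"
  unfolding eA_def using ej_C by (auto simp: B.distl[symmetric] B.add_C)
lemma M'_sub: "a \<in> M' \<Longrightarrow> b \<in> M' \<Longrightarrow> B.sub a b \<in> M'"
  unfolding eA_def using ej_C by (auto simp: B.mul_sub[symmetric] B.sm_C B.add_C)
lemma M'_zero: "azero B \<in> M'"
  unfolding eA_def using B.mul_zero[OF ej_C] B.zero_C by force

lemma io_ui: "a \<in> acar B \<Longrightarrow> io a \<odot> ui = io a"
  using io_mul[OF _ B.one_C, of a] B.mul_one io_one by simp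

lemma io_M'_P: "a \<in> M' \<Longrightarrow> io a \<in> P"
proof -
  assume "a \<in> M'"
  then obtain b where b: "b \<in> acar B" "a = amul B ej b" by (auto simp: eA_def)
  then have "io a = e \<odot> io b" using io_mul ej_C by simp
  then show "io a \<in> P" using io_C[OF b(1)] unfolding eA_def by blast
qed

lemma F4: "x \<in> P \<Longrightarrow> \<exists>a\<in>M'. x \<odot> ui = io a"
proof -
  assume "x \<in> P"
  then obtain w where w: "w \<in> CL" "x = e \<odot> w" by (auto simp: eA_def)
  obtain b where b: "b \<in> acar B" "ui \<odot> (w \<odot> ui) = io b" using corner[OF w(1)] by blast
  have "x \<odot> ui = e \<odot> ui \<odot> w \<odot> ui" using w by (simp add: e_ui)
  also have "\<dots> = e \<odot> (ui \<odot> (w \<odot> ui))" using w by (simp add: massoc CLs)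
  also have "\<dots> = io (amul B ej b)" using b io_mul ej_C by simp
  finally show ?thesis using b ej_C unfolding eA_def by blast
qed

lemma C1: "x \<in> P \<Longrightarrow> r \<in> CL \<Longrightarrow> x \<odot> r \<odot> ui = x \<odot> ui \<odot> r \<odot> ui"
proof -
  assume x: "x \<in> P" and r: "r \<in> CL"
  have xC: "x \<in> CL" using x P_C by blast
  have "x \<odot> r \<odot> ui = x \<odot> ((ui \<oplus> cc) \<odot> r) \<odot> ui" using ui_cc_one r by (simp add: L.one_mul)
  also have "\<dots> = (x \<odot> ui \<odot> r \<odot> ui) \<oplus> (x \<odot> cc \<odot> r \<odot> ui)"
    using xC r by (simp add: L.distr L.distl CLs massoc)
  also have "x \<odot> cc \<odot> r \<odot> ui = ui \<odot> x \<odot> cc \<odot> r \<odot> ui" using P_ui[OF x] by simp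
  also have "\<dots> = azero L" using Kz'[OF xC r] .
  finally show ?thesis using xC r by (simp add: L.add_zero_r CLs)
qed

lemma Phi_max:
  assumes N': "maxsub B M' N'"
  shows "maxsub L P {y \<in> P. \<exists>n\<in>N'. y \<odot> ui = io n}"
proof -
  note ND = maxsubG[OF N']
  have N'C: "N' \<subseteq> acar B" using ND(1) M'_C by blast
  define Phi where "Phi = {y \<in> P. \<exists>n\<in>N'. y \<odot> ui = io n}"
  have sub: "submod L P Phi"
  proof (rule submodI)
    show "Phi \<subseteq> P" by (auto simp: Phi_def)
    have "azero L \<odot> ui = io (azero B)" using io_zero L.zero_mul ui_C by simp
    then show "azero L \<in> Phi" unfolding Phi_def using P_zero ND(2) by blast
  next
    fix x y assume "x \<in> Phi" "y \<in> Phi"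
    then obtain n n' where h: "x \<in> P" "y \<in> P" "n \<in> N'" "n' \<in> N'" "x \<odot> ui = io n" "y \<odot> ui = io n'"
      by (auto simp: Phi_def)
    have xyC: "x \<in> CL" "y \<in> CL" "n \<in> acar B" "n' \<in> acar B" using h P_C N'C by auto
    have "(x \<oplus> y) \<odot> ui = io (aadd B n n')"
      using h by (simp add: L.distr[OF xyC(1,2) ui_C] io_add[OF xyC(3,4)])
    moreover have "aadd B n n' \<in> N'" using ND(3) h by simp
    ultimately show "x \<oplus> y \<in> Phi" using P_add h unfolding Phi_def by blast
  next
    fix x r assume "x \<in> Phi" "r \<in> CL"
    then obtain n where h: "x \<in> P" "n \<in> N'" "x \<odot> ui = io n" "r \<in> CL" by (auto simp: Phi_def)
    have nC: "n \<in> acar B" using h N'C by blast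
    obtain b where b: "b \<in> acar B" "ui \<odot> (r \<odot> ui) = io b" using corner[OF h(4)] by blast
    have "x \<odot> r \<odot> ui = x \<odot> ui \<odot> r \<odot> ui" using C1 h by simp
    also have "\<dots> = io n \<odot> ui \<odot> r \<odot> ui" using h io_ui nC by simp
    also have "\<dots> = io n \<odot> (ui \<odot> (r \<odot> ui))" using h nC io_C by (simp add: massoc CLs)
    also have "\<dots> = io (amul B n b)" using b nC io_mul by simp
    finally show "x \<odot> r \<in> Phi" unfolding Phi_def using P_mul h ND(4)[OF h(2) b(1)] by blast
  qed
  have ne: "Phi \<noteq> P"
  proof
    assume eq: "Phi = P"
    have "M' \<subseteq> N'"
    proof
      fix m assume m: "m \<in> M'"
      then have "io m \<in> Phi" using eq io_M'_P by simp
      then obtain n where "n \<in> N'" "io m \<odot> ui = io n" by (auto simp: Phi_def)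
      moreover have "io m \<odot> ui = io m" using io_ui m M'_C by blast
      ultimately show "m \<in> N'" using io_inj m M'_C N'C by (metis subsetD)
    qed
    then show False using ND(1,5) by blast
  qed
  have maxi: "N2 = Phi \<or> N2 = P" if N2: "submod L P N2" "Phi \<subseteq> N2" for N2
  proof -
    note N2D = submodE[OF N2(1)]
    define N2' where "N2' = {a \<in> M'. io a \<in> N2}"
    have sub2: "submod B M' N2'"
    proof (rule submodI)
      show "N2' \<subseteq> M'" by (auto simp: N2'_def)
      show "azero B \<in> N2'" unfolding N2'_def using M'_zero io_zero N2D(2) by simp
    next
      fix a b assume "a \<in> N2'" "b \<in> N2'"
      then have h: "a \<in> M'" "b \<in> M'" "io a \<in> N2" "io b \<in> N2" by (auto simp: N2'_def)
      then have "io (aadd B a b) = io a \<oplus> io b" using io_add M'_C by blast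
      then show "aadd B a b \<in> N2'" unfolding N2'_def using M'_add h N2D(3) by simp
    next
      fix a r assume "a \<in> N2'" "r \<in> acar B"
      then have h: "a \<in> M'" "io a \<in> N2" "r \<in> acar B" by (auto simp: N2'_def)
      then have "io (amul B a r) = io a \<odot> io r" using io_mul M'_C by blast
      then show "amul B a r \<in> N2'" unfolding N2'_def using M'_mul h N2D(4) io_C by simp
    qed
    have sub2': "N' \<subseteq> N2'"
    proof
      fix a assume a: "a \<in> N'"
      then have aM: "a \<in> M'" using ND(1) by blast
      have "io a \<in> Phi" unfolding Phi_def using io_M'_P[OF aM] io_ui aM M'_C a by blast
      then show "a \<in> N2'" unfolding N2'_def using aM N2(2) by blast
    qed
    from ND(6)[OF sub2 sub2'] show ?thesis
    proof
      assume eq: "N2' = N'"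
      have "N2 \<subseteq> Phi"
      proof
        fix y assume y: "y \<in> N2"
        then have yP: "y \<in> P" using N2D(1) by blast
        obtain a where a: "a \<in> M'" "y \<odot> ui = io a" using F4[OF yP] by blast
        have "io a \<in> N2" using N2D(4)[OF y ui_C] a by simp
        then have "a \<in> N'" using eq a unfolding N2'_def by blast
        then show "y \<in> Phi" unfolding Phi_def using yP a by blast
      qed
      then show ?thesis using N2(2) by blast
    next
      assume eq: "N2' = M'"
      have "P \<subseteq> N2"
      proof
        fix y assume yP: "y \<in> P"
        have yC: "y \<in> CL" using yP P_C by blast
        obtain a where a: "a \<in> M'" "y \<odot> ui = io a" using F4[OF yP] by blast
        have 1: "y \<odot> ui \<in> N2" using a eq unfolding N2'_def by auto
        have "y \<odot> cc \<odot> ui = io (azero B)" using yC by (simp add: massoc CLs cc_ui L.mul_zero io_zero)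
        then have "y \<odot> cc \<in> Phi" unfolding Phi_def using P_mul[OF yP cc_C] ND(2) by blast
        then have 2: "y \<odot> cc \<in> N2" using N2(2) by blast
        show "y \<in> N2" using N2D(3)[OF 1 2] split_ui[OF yC] by simp
      qed
      then show ?thesis using N2D(1) by blast
    qed
  qed
  show ?thesis unfolding Phi_def[symmetric]
    using sub ne maxi by (simp add: maxsub_def)
qed

lemma Psi_max:
  assumes N: "maxsub L P N"
  shows "maxsub B M' {b \<in> M'. io b \<in> N}"
proof -
  note ND = maxsubG[OF N]
  have NC: "N \<subseteq> CL" using ND(1) P_C by blast
  define Psi where "Psi = {b \<in> M'. io b \<in> N}"
  have sub: "submod B M' Psi"
  proof (rule submodI)
    show "Psi \<subseteq> M'" by (auto simp: Psi_def)
    show "azero B \<in> Psi" unfolding Psi_def using M'_zero io_zero ND(2) by simp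
  next
    fix a b assume "a \<in> Psi" "b \<in> Psi"
    then have h: "a \<in> M'" "b \<in> M'" "io a \<in> N" "io b \<in> N" by (auto simp: Psi_def)
    then have "io (aadd B a b) = io a \<oplus> io b" using io_add M'_C by blast
    then show "aadd B a b \<in> Psi" unfolding Psi_def using M'_add h ND(3) by simp
  next
    fix a r assume "a \<in> Psi" "r \<in> acar B"
    then have h: "a \<in> M'" "io a \<in> N" "r \<in> acar B" by (auto simp: Psi_def)
    then have "io (amul B a r) = io a \<odot> io r" using io_mul M'_C by blast
    then show "amul B a r \<in> Psi" unfolding Psi_def using M'_mul h ND(4) io_C by simp
  qed
  have ne: "Psi \<noteq> M'"
  proof
    assume "Psi = M'"
    then have "e \<in> N" using ej_M' by (auto simp: Psi_def)
    then have "N = P" using gen_P maxsubD[OF N] by blast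
    then show False using ND(5) by blast
  qed
  have maxi: "N2' = Psi \<or> N2' = M'" if N2': "submod B M' N2'" "Psi \<subseteq> N2'" for N2'
  proof -
    note N2D = submodE[OF N2'(1)]
    have N2C: "N2' \<subseteq> acar B" using N2D(1) M'_C by blast
    define N2 where "N2 = {y \<in> P. \<exists>n\<in>N. \<exists>b\<in>N2'. y \<odot> ui = (n \<odot> ui) \<oplus> io b}"
    have sub2: "submod L P N2"
    proof (rule submodI)
      show "N2 \<subseteq> P" by (auto simp: N2_def)
      have "azero L \<odot> ui = (azero L \<odot> ui) \<oplus> io (azero B)"
        using io_zero ui_C by (simp add: L.zero_mul L.add_zero_r L.zero_C)
      then show "azero L \<in> N2" unfolding N2_def using P_zero ND(2) N2D(2) by blast
    next
      fix x y assume "x \<in> N2" "y \<in> N2"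
      then obtain n b n' b' where h: "x \<in> P" "y \<in> P" "n \<in> N" "b \<in> N2'" "n' \<in> N" "b' \<in> N2'"
        "x \<odot> ui = (n \<odot> ui) \<oplus> io b" "y \<odot> ui = (n' \<odot> ui) \<oplus> io b'"
        by (auto simp: N2_def)
      have C: "x \<in> CL" "y \<in> CL" "n \<in> CL" "n' \<in> CL" "b \<in> acar B" "b' \<in> acar B"
        using h P_C NC N2C by auto
      have "(x \<oplus> y) \<odot> ui = ((n \<oplus> n') \<odot> ui) \<oplus> io (aadd B b b')"
        using h C io_C by (simp add: L.distr io_add CLs L.add_swap4)
      then show "x \<oplus> y \<in> N2" unfolding N2_def
        using P_add[OF h(1,2)] ND(3)[OF h(3,5)] N2D(3)[OF h(4,6)] by blast
    next
      fix x r assume "x \<in> N2" "r \<in> CL"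
      then obtain n b where h: "x \<in> P" "n \<in> N" "b \<in> N2'" "x \<odot> ui = (n \<odot> ui) \<oplus> io b" "r \<in> CL"
        by (auto simp: N2_def)
      have C: "x \<in> CL" "n \<in> CL" "b \<in> acar B" using h P_C NC N2C by auto
      obtain c where c: "c \<in> acar B" "ui \<odot> (r \<odot> ui) = io c" using corner[OF h(5)] by blast
      have "x \<odot> r \<odot> ui = x \<odot> ui \<odot> r \<odot> ui" using C1 h by simp
      also have "\<dots> = ((n \<odot> ui \<odot> r) \<odot> ui) \<oplus> (io b \<odot> ui \<odot> r \<odot> ui)"
        using h C io_C by (simp add: L.distr CLs io_ui)
      also have "io b \<odot> ui \<odot> r \<odot> ui = io (amul B b c)"
        using C c h io_C io_mul by (simp add: massoc CLs)
      finally have "x \<odot> r \<odot> ui = ((n \<odot> ui \<odot> r) \<odot> ui) \<oplus> io (amul B b c)" .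
      moreover have "n \<odot> ui \<odot> r \<in> N" using ND(4) h(2,5) ui_C by simp
      moreover have "amul B b c \<in> N2'" using N2D(4) h(3) c(1) by simp
      ultimately show "x \<odot> r \<in> N2" unfolding N2_def using P_mul[OF h(1,5)] by blast
    qed
    have NN2: "N \<subseteq> N2"
    proof
      fix y assume y: "y \<in> N"
      then have "y \<odot> ui = (y \<odot> ui) \<oplus> io (azero B)" using NC ui_C io_zero by (auto simp: L.add_zero_r CLs)
      then show "y \<in> N2" unfolding N2_def using y ND(1) N2D(2) by blast
    qed
    from ND(6)[OF sub2 NN2] show ?thesis
    proof
      assume eq: "N2 = N"
      have "N2' \<subseteq> Psi"
      proof
        fix b assume b: "b \<in> N2'"
        have bM: "b \<in> M'" using b N2D(1) by blast
        have "io b \<odot> ui = (azero L \<odot> ui) \<oplus> io b"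
          using io_ui bM M'_C io_C ui_C by (auto simp: L.zero_mul L.add_zero)
        then have "io b \<in> N2" unfolding N2_def using io_M'_P[OF bM] ND(2) b by blast
        then show "b \<in> Psi" unfolding Psi_def using eq bM by simp
      qed
      then show ?thesis using N2'(2) by blast
    next
      assume eq: "N2 = P"
      have "M' \<subseteq> N2'"
      proof
        fix m assume m: "m \<in> M'"
        have mC: "m \<in> acar B" using m M'_C by blast
        have "io m \<in> N2" using eq io_M'_P[OF m] by simp
        then obtain n b where h: "n \<in> N" "b \<in> N2'" "io m \<odot> ui = (n \<odot> ui) \<oplus> io b"
          by (auto simp: N2_def)
        have C: "n \<in> CL" "b \<in> acar B" using h NC N2C by auto
        have bM: "b \<in> M'" using h(2) N2D(1) by blast
        have "io m = (n \<odot> ui) \<oplus> io b" using h(3) io_ui mC by simp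
        then have "L.sub (io m) (io b) = n \<odot> ui"
          by (rule L.add_eq_sub[rotated 3]) (use C mC io_C ui_C in \<open>auto simp: CLs\<close>)
        then have "n \<odot> ui = L.sub (io m) (io b)" by simp
        also have "\<dots> = io (B.sub m b)" using io_sub mC C by simp
        finally have "io (B.sub m b) \<in> N" using ND(4)[OF h(1) ui_C] by simp
        then have "B.sub m b \<in> Psi" unfolding Psi_def using M'_sub[OF m bM] by simp
        then have "B.sub m b \<in> N2'" using N2'(2) by blast
        then have "aadd B (B.sub m b) b \<in> N2'" using N2D(3) h(2) by simp
        moreover have "aadd B (B.sub m b) b = m" using mC C
          by (simp add: B.add_assoc B.sm_C B.add_neg B.add_zero_r)
        ultimately show "m \<in> N2'" by simp
      qed
      then show ?thesis using N2D(1) by blast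
    qed
  qed
  show ?thesis unfolding Psi_def[symmetric]
    using sub ne maxi by (simp add: maxsub_def)
qed

theorem A2: "{x \<odot> ui | x. x \<in> mod_rad L P} = io ` mod_rad B M'"
proof
  show "{x \<odot> ui | x. x \<in> mod_rad L P} \<subseteq> io ` mod_rad B M'"
  proof
    fix y assume "y \<in> {x \<odot> ui | x. x \<in> mod_rad L P}"
    then obtain x where x: "x \<in> mod_rad L P" "y = x \<odot> ui" by blast
    have xP: "x \<in> P" using x R_P by blast
    obtain a where a: "a \<in> M'" "x \<odot> ui = io a" using F4[OF xP] by blast
    have "a \<in> mod_rad B M'"
      unfolding mod_rad_def
    proof (intro IntI InterI)
      show "a \<in> M'" by (rule a(1))
      fix N' assume "N' \<in> {N. maxsub B M' N}"
      then have N': "maxsub B M' N'" by simp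
      have "x \<in> {y \<in> P. \<exists>n\<in>N'. y \<odot> ui = io n}" using R_mem[OF x(1) Phi_max[OF N']] .
      then obtain n where n: "n \<in> N'" "x \<odot> ui = io n" by blast
      have nC: "n \<in> acar B" using n(1) maxsubG(1)[OF N'] M'_C by blast
      have aC: "a \<in> acar B" using a(1) M'_C by blast
      have "a = n" using io_inj[OF aC nC] a(2) n(2) by simp
      then show "a \<in> N'" using n by simp
    qed
    then show "y \<in> io ` mod_rad B M'" using x a by simp
  qed
next
  show "io ` mod_rad B M' \<subseteq> {x \<odot> ui | x. x \<in> mod_rad L P}"
  proof
    fix y assume "y \<in> io ` mod_rad B M'"
    then obtain a where a: "a \<in> mod_rad B M'" "y = io a" by blast
    have aM: "a \<in> M'" using a by (simp add: mod_rad_def)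
    have "io a \<in> mod_rad L P"
    proof (rule mem_R)
      show "io a \<in> P" using io_M'_P[OF aM] .
      fix N assume N: "maxsub L P N"
      have "a \<in> \<Inter>{N. maxsub B M' N}" using a(1) by (simp add: mod_rad_def)
      then have "a \<in> {b \<in> M'. io b \<in> N}" using Psi_max[OF N] by blast
      then show "io a \<in> N" by simp
    qed
    moreover have "y = io a \<odot> ui" using a(2) io_ui aM M'_C by auto
    ultimately show "y \<in> {x \<odot> ui | x. x \<in> mod_rad L P}" by blast
  qed
qed

end

locale mainL =
  fixes \<Gamma> :: "('v, 'e) quiver" and \<Sigma> :: "'v \<Rightarrow> ('w, 'f) quiver"
    and \<Omega> :: "'v \<Rightarrow> ('w \<times> 'f list \<Rightarrow> 'k::field) set" and I :: "('v \<times> 'e list \<Rightarrow> 'k) set"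
  assumes fG: "finite_quiver \<Gamma>" and acG: "acyclic_quiver \<Gamma>"
    and SO: "\<forall>l\<in>qV \<Gamma>. finite_quiver (\<Sigma> l) \<and> admissible (\<Sigma> l) (\<Omega> l)"
    and relI: "\<forall>\<rho>\<in>I. is_relation \<Gamma> \<rho>"
begin

abbreviation "Al \<equiv> Aalg \<Sigma> \<Omega>"

lemma Omega_ideal: "l \<in> qV \<Gamma> \<Longrightarrow> kalg_ideal (path_alg (\<Sigma> l)) (\<Omega> l)"
  unfolding kalg_ideal_def kalg_ideal_axioms_def
  using SO path_alg_kalg by (auto simp: admissible_def)

lemma Al_kalg: "l \<in> qV \<Gamma> \<Longrightarrow> kalg (Al l)"
  unfolding Aalg_def using kalg_ideal.quot_kalg[OF Omega_ideal] by blast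

sublocale fq \<Gamma> Al
  by (rule fq.intro[OF fG Al_kalg])

abbreviation "KG \<equiv> kGA \<Gamma> Al"
abbreviation "JJ \<equiv> ideal_gen KG (AI \<Gamma> \<Sigma> \<Omega> I)"
abbreviation "LL \<equiv> gbpa \<Gamma> \<Sigma> \<Omega> I"

lemma KG_def': "KG = quot FA SP" by (simp add: kGA_def)

sublocale KI: kalg_ideal FA SP
  unfolding kalg_ideal_def kalg_ideal_axioms_def using F.kalg_axioms SP_ideal by simp

sublocale K: kalg KG unfolding KG_def' by (rule KI.quot_kalg)

definition pi1 where "pi1 f = cos FA SP f"

lemma pi1_C: "f \<in> acar FA \<Longrightarrow> pi1 f \<in> acar KG"
  by (simp add: KG_def' KI.q_car pi1_def)

lemma KG_car: "acar KG = pi1 ` acar FA"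
  by (simp add: KG_def' KI.q_car pi1_def image_def)

lemma pi1_add: "f \<in> acar FA \<Longrightarrow> g \<in> acar FA \<Longrightarrow> pi1 (aadd FA f g) = aadd KG (pi1 f) (pi1 g)"
  by (simp add: KG_def' KI.q_add pi1_def)
lemma pi1_mul: "f \<in> acar FA \<Longrightarrow> g \<in> acar FA \<Longrightarrow> pi1 (amul FA f g) = amul KG (pi1 f) (pi1 g)"
  by (simp add: KG_def' KI.q_mul pi1_def)
lemma pi1_sm: "f \<in> acar FA \<Longrightarrow> pi1 (asmul FA c f) = asmul KG c (pi1 f)"
  by (simp add: KG_def' KI.q_sm pi1_def)
lemma pi1_zero: "pi1 (azero FA) = azero KG" by (simp add: KG_def' KI.q_zero pi1_def)
lemma pi1_one: "pi1 (aone FA) = aone KG" by (simp add: KG_def' KI.q_one pi1_def)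
lemma pi1_eq: "f \<in> acar FA \<Longrightarrow> g \<in> acar FA \<Longrightarrow> pi1 f = pi1 g \<longleftrightarrow> F.sub f g \<in> SP"
  by (simp add: pi1_def KI.cos_eq)

lemma quot_car: "acar (quot A J) = cos A J ` acar A" by (simp add: quot_def)

lemma path_delta_C: "is_path Q p \<Longrightarrow> (delta p :: _ \<Rightarrow> 'k) \<in> acar (path_alg Q)"
  unfolding path_alg_def by (rule salg_delta_C) simp

lemma rel_word_valid:
  assumes p: "is_path \<Gamma> p" and g: "\<And>r. 0 < r \<Longrightarrow> r < length (snd p) \<Longrightarrow> is_path (\<Sigma> (vtx \<Gamma> p r)) (g r)"
  shows "valid_word \<Gamma> Al (rel_word \<Gamma> \<Sigma> \<Omega> p g)"
proof -
  define f where "f = (\<lambda>r. if r = 0 \<or> r = length (snd p) then aone (Al (vtx \<Gamma> p r))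
        else cos (path_alg (\<Sigma> (vtx \<Gamma> p r))) (\<Omega> (vtx \<Gamma> p r)) (delta (g r)))"
  have rw: "rel_word \<Gamma> \<Sigma> \<Omega> p g = (p, map f [0..<Suc (length (snd p))])"
    by (simp add: rel_word_def f_def)
  have ent: "f r \<in> acar (Al (vtx \<Gamma> p r))" if r: "r \<le> length (snd p)" for r
  proof -
    have V: "vtx \<Gamma> p r \<in> qV \<Gamma>" using vtx_V[OF fG p r] .
    show ?thesis
    proof (cases "r = 0 \<or> r = length (snd p)")
      case True then show ?thesis using kalg.one_C[OF Al_kalg[OF V]] by (simp add: f_def)
    next
      case False
      then have "is_path (\<Sigma> (vtx \<Gamma> p r)) (g r)" using g r by simp
      then have "(delta (g r) :: _ \<Rightarrow> 'k) \<in> acar (path_alg (\<Sigma> (vtx \<Gamma> p r)))"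
        unfolding path_alg_def by (intro salg_delta_C) simp
      then show ?thesis using False by (simp add: f_def Aalg_def quot_car imageI)
    qed
  qed
  have "\<forall>r\<le>length (snd p). map f [0..<Suc (length (snd p))] ! r \<in> acar (Al (vtx \<Gamma> p r))"
  proof (intro allI impI)
    fix r assume r: "r \<le> length (snd p)"
    have "map f [0..<Suc (length (snd p))] ! r = f r" using r by (simp add: nth_map_upt del: upt_Suc)
    then show "map f [0..<Suc (length (snd p))] ! r \<in> acar (Al (vtx \<Gamma> p r))" using ent[OF r] by simp
  qed
  then show ?thesis unfolding rw valid_word_def using p by simp
qed

lemma AI_fun_C:
  assumes rho: "\<rho> \<in> I" and G: "\<forall>p\<in>fsupp \<rho>. \<forall>r. 0 < r \<and> r < length (snd p) \<longrightarrow> is_path (\<Sigma> (vtx \<Gamma> p r)) (G p r)"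
  shows "(\<lambda>x. \<Sum>p\<in>fsupp \<rho>. if x = rel_word \<Gamma> \<Sigma> \<Omega> p (G p) then \<rho> p else 0) \<in> acar FA"
proof -
  have rC: "\<rho> \<in> acar (path_alg \<Gamma>)" using relI rho by (simp add: is_relation_def)
  then have fin: "finite (fsupp \<rho>)" and paths: "fsupp \<rho> \<subseteq> {p. is_path \<Gamma> p}"
    by (auto simp: path_alg_def salg_simps)
  let ?f = "(\<lambda>x. \<Sum>p\<in>fsupp \<rho>. if x = rel_word \<Gamma> \<Sigma> \<Omega> p (G p) then \<rho> p else 0)"
  have s: "fsupp ?f \<subseteq> (\<lambda>p. rel_word \<Gamma> \<Sigma> \<Omega> p (G p)) ` fsupp \<rho>"
  proof
    fix x assume x: "x \<in> fsupp ?f"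
    show "x \<in> (\<lambda>p. rel_word \<Gamma> \<Sigma> \<Omega> p (G p)) ` fsupp \<rho>"
    proof (rule ccontr)
      assume "x \<notin> (\<lambda>p. rel_word \<Gamma> \<Sigma> \<Omega> p (G p)) ` fsupp \<rho>"
      then have "?f x = 0" by (intro sum.neutral) auto
      then show False using x by (simp add: fsupp_iff)
    qed
  qed
  have v: "(\<lambda>p. rel_word \<Gamma> \<Sigma> \<Omega> p (G p)) ` fsupp \<rho> \<subseteq> {w. valid_word \<Gamma> Al w}"
  proof
    fix x assume "x \<in> (\<lambda>p. rel_word \<Gamma> \<Sigma> \<Omega> p (G p)) ` fsupp \<rho>"
    then obtain p where p: "p \<in> fsupp \<rho>" "x = rel_word \<Gamma> \<Sigma> \<Omega> p (G p)" by blast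
    have "valid_word \<Gamma> Al (rel_word \<Gamma> \<Sigma> \<Omega> p (G p))"
      by (rule rel_word_valid) (use p paths G in auto)
    then show "x \<in> {w. valid_word \<Gamma> Al w}" using p by simp
  qed
  have "finite (fsupp ?f)" using finite_subset[OF s finite_imageI[OF fin]] .
  then show ?thesis unfolding F_simps using s v by blast
qed

lemma AI_C: "AI \<Gamma> \<Sigma> \<Omega> I \<subseteq> acar KG"
proof
  fix X assume "X \<in> AI \<Gamma> \<Sigma> \<Omega> I"
  then obtain \<rho> G where h: "\<rho> \<in> I" "\<forall>p\<in>fsupp \<rho>. \<forall>r. 0 < r \<and> r < length (snd p) \<longrightarrow> is_path (\<Sigma> (vtx \<Gamma> p r)) (G p r)"
    "X = pi1 (\<lambda>x. \<Sum>p\<in>fsupp \<rho>. if x = rel_word \<Gamma> \<Sigma> \<Omega> p (G p) then \<rho> p else 0)"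
    unfolding AI_def pi1_def by blast
  show "X \<in> acar KG" using h(3) pi1_C AI_fun_C[OF h(1,2)] by simp
qed

sublocale LI: kalg_ideal KG JJ
  unfolding kalg_ideal_def kalg_ideal_axioms_def using K.kalg_axioms K.ideal_gen_ideal[OF AI_C] by simp

lemma LL_def': "LL = quot KG JJ" by (simp add: gbpa_def)

sublocale Lm: kalg LL unfolding LL_def' by (rule LI.quot_kalg)

definition pii where "pii f = cos KG JJ (pi1 f)"

lemma LL_car: "acar LL = pii ` acar FA"
  by (auto simp: LL_def' LI.q_car pii_def KG_car)
lemma pii_C: "f \<in> acar FA \<Longrightarrow> pii f \<in> acar LL" using LL_car by blast
lemma pii_add: "f \<in> acar FA \<Longrightarrow> g \<in> acar FA \<Longrightarrow> pii (aadd FA f g) = aadd LL (pii f) (pii g)"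
  by (simp add: pii_def pi1_add pi1_C LL_def' LI.q_add)
lemma pii_mul: "f \<in> acar FA \<Longrightarrow> g \<in> acar FA \<Longrightarrow> pii (amul FA f g) = amul LL (pii f) (pii g)"
  by (simp add: pii_def pi1_mul pi1_C LL_def' LI.q_mul)
lemma pii_sm: "f \<in> acar FA \<Longrightarrow> pii (asmul FA c f) = asmul LL c (pii f)"
  by (simp add: pii_def pi1_sm pi1_C LL_def' LI.q_sm)
lemma pii_zero: "pii (azero FA) = azero LL" by (simp add: pii_def pi1_zero LL_def' LI.q_zero)
lemma pii_one: "pii (aone FA) = aone LL" by (simp add: pii_def pi1_one LL_def' LI.q_one)

lemma lcls_pii: "lcls \<Gamma> \<Sigma> \<Omega> I w = pii (delta w)"
  by (simp add: lcls_def wcls_def pii_def pi1_def)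

end

context mainL begin

abbreviation "iot l a \<equiv> iota \<Gamma> \<Sigma> \<Omega> I l a"
abbreviation "uu l \<equiv> unit_at \<Gamma> \<Sigma> \<Omega> I l"

definition "tw l a = ((l, []), [a])"

lemma tw_valid: "l \<in> qV \<Gamma> \<Longrightarrow> a \<in> acar (Al l) \<Longrightarrow> valid_word \<Gamma> Al (tw l a)"
  by (simp add: tw_def valid_word_def is_path_def vtx_def)

lemma iot_pii: "iot l a = pii (delta (tw l a))" by (simp add: iota_def lcls_pii tw_def)
lemma uu_pii: "uu l = pii (delta (unitw l))" by (simp add: unit_at_def iot_pii tw_def unitw_def)

lemma iot_C: "l \<in> qV \<Gamma> \<Longrightarrow> a \<in> acar (Al l) \<Longrightarrow> iot l a \<in> acar LL"
  by (simp add: iot_pii pii_C delta_C tw_valid)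

lemma uu_C: "l \<in> qV \<Gamma> \<Longrightarrow> uu l \<in> acar LL"
  by (simp add: uu_pii pii_C delta_C unitw_valid)


lemma iot_add:
  assumes l: "l \<in> qV \<Gamma>" and a: "a \<in> acar (Al l)" and b: "b \<in> acar (Al l)"
  shows "iot l (aadd (Al l) a b) = aadd LL (iot l a) (iot l b)"
proof -
  interpret V: kalg "Al l" using Al_kalg[OF l] .
  have v: "valid_word \<Gamma> Al ((l, []), [a])" using tw_valid[OF l a] by (simp add: tw_def)
  have g: "(\<lambda>x. delta (tw l (aadd (Al l) a b)) x - delta (tw l a) x - delta (tw l b) x) \<in> MG"
    using genadd_MG[OF v, of 0 a b] a b by (simp add: tw_def vtx_def)
  have C: "delta (tw l (aadd (Al l) a b)) \<in> acar FA" "delta (tw l a) \<in> acar FA" "delta (tw l b) \<in> acar FA"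
    using delta_C tw_valid l a b V.add_C by auto
  have "F.sub (delta (tw l (aadd (Al l) a b))) (aadd FA (delta (tw l a)) (delta (tw l b)))
     = (\<lambda>x. delta (tw l (aadd (Al l) a b)) x - delta (tw l a) x - delta (tw l b) x)"
    by (simp add: F_simps algebra_simps)
  then have "pi1 (delta (tw l (aadd (Al l) a b))) = pi1 (aadd FA (delta (tw l a)) (delta (tw l b)))"
    using pi1_eq C F.add_C g MG_SP by simp
  then have "pii (delta (tw l (aadd (Al l) a b))) = pii (aadd FA (delta (tw l a)) (delta (tw l b)))"
    by (simp add: pii_def)
  then show ?thesis using C by (simp add: iot_pii pii_add)
qed

lemma iot_sm:
  assumes l: "l \<in> qV \<Gamma>" and a: "a \<in> acar (Al l)"
  shows "iot l (asmul (Al l) c a) = asmul LL c (iot l a)"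
proof -
  interpret V: kalg "Al l" using Al_kalg[OF l] .
  have v: "valid_word \<Gamma> Al ((l, []), [a])" using tw_valid[OF l a] by (simp add: tw_def)
  have g: "(\<lambda>x. delta (tw l (asmul (Al l) c a)) x - c * delta (tw l a) x) \<in> MG"
    using gensm_MG[OF v, of 0 a c] a by (simp add: tw_def vtx_def)
  have C: "delta (tw l (asmul (Al l) c a)) \<in> acar FA" "delta (tw l a) \<in> acar FA"
    using delta_C tw_valid l a V.sm_C by auto
  have "F.sub (delta (tw l (asmul (Al l) c a))) (asmul FA c (delta (tw l a)))
     = (\<lambda>x. delta (tw l (asmul (Al l) c a)) x - c * delta (tw l a) x)"
    by (simp add: F_simps algebra_simps)
  then have "pi1 (delta (tw l (asmul (Al l) c a))) = pi1 (asmul FA c (delta (tw l a)))"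
    using pi1_eq C F.sm_C g MG_SP by simp
  then have "pii (delta (tw l (asmul (Al l) c a))) = pii (asmul FA c (delta (tw l a)))"
    by (simp add: pii_def)
  then show ?thesis using C by (simp add: iot_pii pii_sm)
qed

lemma iot_mul:
  assumes l: "l \<in> qV \<Gamma>" and a: "a \<in> acar (Al l)" and b: "b \<in> acar (Al l)"
  shows "iot l (amul (Al l) a b) = amul LL (iot l a) (iot l b)"
proof -
  have "wprod \<Gamma> Al (tw l a) (tw l b) = Some (tw l (amul (Al l) a b))"
    by (simp add: wprod_def tw_def pend_def)
  then have "amul FA (delta (tw l a)) (delta (tw l b)) = delta (tw l (amul (Al l) a b))"
    by (simp add: delta_mul)
  then show ?thesis using delta_C tw_valid l a b by (simp add: iot_pii pii_mul[symmetric])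
qed

lemma iot_zero: assumes l: "l \<in> qV \<Gamma>" shows "iot l (azero (Al l)) = azero LL"
proof -
  interpret V: kalg "Al l" using Al_kalg[OF l] .
  have "aadd LL (iot l (azero (Al l))) (iot l (azero (Al l))) = aadd LL (iot l (azero (Al l))) (azero LL)"
    using iot_add[OF l V.zero_C V.zero_C] V.add_zero[OF V.zero_C] Lm.add_zero_r iot_C[OF l V.zero_C] by simp
  then show ?thesis using Lm.add_left_cancel iot_C[OF l V.zero_C] Lm.zero_C by blast
qed

lemma uu_idem: "l \<in> qV \<Gamma> \<Longrightarrow> amul LL (uu l) (uu l) = uu l"
proof -
  assume l: "l \<in> qV \<Gamma>"
  have "wprod \<Gamma> Al (unitw l) (unitw l) = Some (unitw l)"
    using wprod_unit_l[OF unitw_valid[OF l]] by (simp add: unitw_def)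
  then show ?thesis using delta_C unitw_valid l
    by (simp add: uu_pii pii_mul[symmetric] delta_mul)
qed

lemma uu_orth: "l \<in> qV \<Gamma> \<Longrightarrow> i \<in> qV \<Gamma> \<Longrightarrow> l \<noteq> i \<Longrightarrow> amul LL (uu l) (uu i) = azero LL"
proof -
  assume l: "l \<in> qV \<Gamma>" and i: "i \<in> qV \<Gamma>" and ne: "l \<noteq> i"
  have "wprod \<Gamma> Al (unitw l) (unitw i) = None"
    using wprod_unit_l[OF unitw_valid[OF i], of l] ne by (simp add: unitw_def)
  then have "amul FA (delta (unitw l)) (delta (unitw i)) = azero FA" by (simp add: delta_mul F_simps)
  then show ?thesis using delta_C unitw_valid l i
    by (simp add: uu_pii pii_mul[symmetric] pii_zero)
qed

lemma FA_supp_mul: "fsupp (amul FA f g) \<subseteq> {y. \<exists>u\<in>fsupp f. \<exists>v\<in>fsupp g. wprod \<Gamma> Al u v = Some y}"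
  unfolding free_alg_def by (rule salg_mul_supp)

lemma FA_supp_valid: "f \<in> acar FA \<Longrightarrow> w \<in> fsupp f \<Longrightarrow> valid_word \<Gamma> Al w"
  by (auto simp: F_simps)

lemma supp_unit_l:
  assumes f: "f \<in> acar FA"
  shows "fsupp (amul FA (delta (unitw l)) f) \<subseteq> {v \<in> fsupp f. fst (fst v) = l}"
proof
  fix y assume "y \<in> fsupp (amul FA (delta (unitw l)) f)"
  then obtain v where v: "v \<in> fsupp f" "wprod \<Gamma> Al (unitw l) v = Some y" using FA_supp_mul by fastforce
  have "valid_word \<Gamma> Al v" using FA_supp_valid[OF f v(1)] .
  then have "y = v \<and> l = fst (fst v)" using v(2) wprod_unit_l by (auto split: if_splits)
  then show "y \<in> {v \<in> fsupp f. fst (fst v) = l}" using v(1) by auto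
qed

lemma supp_unit_r:
  assumes f: "f \<in> acar FA"
  shows "fsupp (amul FA f (delta (unitw l))) \<subseteq> {v \<in> fsupp f. pend \<Gamma> (fst v) = l}"
proof
  fix y assume "y \<in> fsupp (amul FA f (delta (unitw l)))"
  then obtain v where v: "v \<in> fsupp f" "wprod \<Gamma> Al v (unitw l) = Some y" using FA_supp_mul by fastforce
  have "valid_word \<Gamma> Al v" using FA_supp_valid[OF f v(1)] .
  then have "y = v \<and> l = pend \<Gamma> (fst v)" using v(2) wprod_unit_r by (auto split: if_splits)
  then show "y \<in> {v \<in> fsupp f. pend \<Gamma> (fst v) = l}" using v(1) by auto
qed

lemma acyc_triv:
  assumes "valid_word \<Gamma> Al w" "pend \<Gamma> (fst w) = fst (fst w)"
  shows "snd (fst w) = []"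
  using acG assms valid_wordD(1)[OF assms(1)] unfolding acyclic_quiver_def by blast

lemma triv_word:
  assumes "valid_word \<Gamma> Al w" "fst (fst w) = l" "pend \<Gamma> (fst w) = l"
  shows "\<exists>a\<in>acar (Al l). w = tw l a"
proof -
  have e: "snd (fst w) = []" using acyc_triv assms by simp
  obtain p as where W: "w = (p, as)" by (cases w)
  have "length as = 1" using valid_wordD(2)[OF assms(1)] e W by simp
  then obtain a where as: "as = [a]" by (cases as) auto
  have "a \<in> acar (Al (vtx \<Gamma> p 0))" using valid_wordD(3)[OF assms(1), of 0] W as by simp
  then show ?thesis using W as e assms(2) by (auto simp: tw_def vtx_def prod_eq_iff)
qed

lemma triv_induct:
  assumes l: "l \<in> qV \<Gamma>" and g: "g \<in> acar FA" and s: "fsupp g \<subseteq> {tw l a | a. a \<in> acar (Al l)}"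
  shows "\<exists>a\<in>acar (Al l). pii g = iot l a"
proof -
  interpret V: kalg "Al l" using Al_kalg[OF l] .
  have "\<forall>g. g \<in> acar FA \<longrightarrow> fsupp g \<subseteq> S \<longrightarrow> S \<subseteq> {tw l a | a. a \<in> acar (Al l)} \<longrightarrow>
      (\<exists>a\<in>acar (Al l). pii g = iot l a)" if "finite S" for S
    using that
  proof (induction S rule: finite_induct)
    case empty
    show ?case
    proof (intro allI impI)
      fix g assume "g \<in> acar FA" "fsupp g \<subseteq> {}"
      then have "g = azero FA" by (intro ext) (auto simp: fsupp_iff F_simps)
      then show "\<exists>a\<in>acar (Al l). pii g = iot l a" using pii_zero iot_zero[OF l] V.zero_C by auto
    qed
  next
    case (insert w S)
    show ?case
    proof (intro allI impI)
      fix g assume gC: "g \<in> acar FA" and sg: "fsupp g \<subseteq> insert w S"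
        and sT: "insert w S \<subseteq> {tw l a | a. a \<in> acar (Al l)}"
      define g' where "g' = (\<lambda>y. if y = w then 0 else g y)"
      have sg': "fsupp g' \<subseteq> S" using sg by (auto simp: fsupp_iff g'_def split: if_splits)
      have "fsupp g' \<subseteq> fsupp g" by (auto simp: fsupp_iff g'_def split: if_splits)
      then have gC': "g' \<in> acar FA" using gC by (auto simp: F_simps intro: finite_subset)
      obtain a' where a': "a' \<in> acar (Al l)" "pii g' = iot l a'" using insert.IH gC' sg' sT by blast
      obtain b where b: "b \<in> acar (Al l)" "w = tw l b" using sT by blast
      have dC: "delta w \<in> acar FA" using b tw_valid[OF l] delta_C by simp
      define c where "c = g w"
      have "g = aadd FA g' (asmul FA c (delta w))" by (auto simp: F_simps g'_def delta_def c_def)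
      then have "pii g = pii (aadd FA g' (asmul FA c (delta w)))" by (rule arg_cong)
      also have "\<dots> = aadd LL (pii g') (asmul LL c (pii (delta w)))"
        using gC' dC by (simp add: pii_add pii_sm F.sm_C)
      also have "\<dots> = aadd LL (iot l a') (asmul LL c (iot l b))"
        using a' b by (simp add: iot_pii)
      also have "\<dots> = iot l (aadd (Al l) a' (asmul (Al l) c b))"
        using a' b l by (simp add: iot_add iot_sm V.sm_C)
      finally show "\<exists>a\<in>acar (Al l). pii g = iot l a" using a' b V.add_C V.sm_C by blast
    qed
  qed
  then show ?thesis using g s by (auto simp: F_simps)
qed

lemma LL_rep: "x \<in> acar LL \<Longrightarrow> \<exists>f\<in>acar FA. x = pii f" using LL_car by blast

lemma corner_c:
  assumes i: "i \<in> qV \<Gamma>" and x: "x \<in> acar LL"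
  shows "\<exists>a\<in>acar (Al i). amul LL (uu i) (amul LL x (uu i)) = iot i a"
proof -
  obtain f where f: "f \<in> acar FA" "x = pii f" using LL_rep[OF x] by blast
  have dC: "delta (unitw i) \<in> acar FA" using delta_C unitw_valid i by simp
  define g where "g = amul FA (delta (unitw i)) (amul FA f (delta (unitw i)))"
  have gC: "g \<in> acar FA" using f dC by (simp add: g_def F.mul_C)
  have "fsupp g \<subseteq> {tw i a | a. a \<in> acar (Al i)}"
  proof
    fix y assume "y \<in> fsupp g"
    then have y: "y \<in> fsupp (amul FA f (delta (unitw i)))" "fst (fst y) = i"
      using supp_unit_l[OF F.mul_C[OF f(1) dC]] unfolding g_def by auto
    then have y2: "y \<in> fsupp f" "pend \<Gamma> (fst y) = i" using supp_unit_r[OF f(1)] by auto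
    have "valid_word \<Gamma> Al y" using FA_supp_valid[OF f(1) y2(1)] .
    then show "y \<in> {tw i a | a. a \<in> acar (Al i)}" using triv_word y(2) y2(2) by blast
  qed
  then obtain a where "a \<in> acar (Al i)" "pii g = iot i a" using triv_induct[OF i gC] by blast
  moreover have "pii g = amul LL (uu i) (amul LL x (uu i))"
    using f dC by (simp add: g_def pii_mul F.mul_C uu_pii)
  ultimately show ?thesis by auto
qed

lemma Kz_c:
  assumes i: "i \<in> qV \<Gamma>" and x: "x \<in> acar LL" and y: "y \<in> acar LL"
  shows "amul LL (uu i) (amul LL x (amul LL (Lm.sub (aone LL) (uu i)) (amul LL y (uu i)))) = azero LL"
proof -
  obtain f where f: "f \<in> acar FA" "x = pii f" using LL_rep[OF x] by blast
  obtain g where g: "g \<in> acar FA" "y = pii g" using LL_rep[OF y] by blast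
  have dC: "delta (unitw i) \<in> acar FA" using delta_C unitw_valid i by simp
  define h where "h = F.sub (aone FA) (delta (unitw i))"
  have hC: "h \<in> acar FA" using dC by (simp add: h_def F.sub_C F.one_C)
  have ph: "pii h = Lm.sub (aone LL) (uu i)"
    using dC by (simp add: h_def pii_add pii_sm F.sm_C F.one_C pii_one uu_pii)
  have hsupp: "fsupp h \<subseteq> {unitw l | l. l \<in> qV \<Gamma> \<and> l \<noteq> i}"
  proof
    fix t assume "t \<in> fsupp h"
    then have "h t \<noteq> 0" by (simp add: fsupp_iff)
    moreover have "aone FA = (\<lambda>x. if x \<in> unitw ` qV \<Gamma> then 1 else 0)"
      by (simp add: free_alg_def salg_def free_unit_set)
    ultimately have "t \<in> unitw ` qV \<Gamma> \<and> t \<noteq> unitw i"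
      using i by (auto simp: h_def F_simps delta_def split: if_splits)
    then show "t \<in> {unitw l | l. l \<in> qV \<Gamma> \<and> l \<noteq> i}" by auto
  qed
  define G1 where "G1 = amul FA g (delta (unitw i))"
  define G2 where "G2 = amul FA h G1"
  define G3 where "G3 = amul FA f G2"
  define G4 where "G4 = amul FA (delta (unitw i)) G3"
  have C: "G1 \<in> acar FA" "G2 \<in> acar FA" "G3 \<in> acar FA" "G4 \<in> acar FA"
    using f g dC hC by (simp_all add: G1_def G2_def G3_def G4_def F.mul_C)
  have S1: "fsupp G1 \<subseteq> {v. valid_word \<Gamma> Al v \<and> pend \<Gamma> (fst v) = i}"
    using supp_unit_r[OF g(1)] FA_supp_valid[OF g(1)] unfolding G1_def by blast
  have S2: "fsupp G2 \<subseteq> {v. valid_word \<Gamma> Al v \<and> pend \<Gamma> (fst v) = i \<and> fst (fst v) \<noteq> i}"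
  proof
    fix y assume "y \<in> fsupp G2"
    then obtain t v where tv: "t \<in> fsupp h" "v \<in> fsupp G1" "wprod \<Gamma> Al t v = Some y"
      using FA_supp_mul unfolding G2_def by blast
    obtain l where l: "t = unitw l" "l \<noteq> i" using hsupp tv(1) by blast
    have v: "valid_word \<Gamma> Al v" "pend \<Gamma> (fst v) = i" using S1 tv(2) by auto
    have "y = v \<and> l = fst (fst v)" using tv(3) wprod_unit_l[OF v(1)] l(1) by (auto split: if_splits)
    then show "y \<in> {v. valid_word \<Gamma> Al v \<and> pend \<Gamma> (fst v) = i \<and> fst (fst v) \<noteq> i}" using v l by auto
  qed
  have S3: "fsupp G3 \<subseteq> {v. valid_word \<Gamma> Al v \<and> pend \<Gamma> (fst v) = i \<and> snd (fst v) \<noteq> []}"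
  proof
    fix y assume "y \<in> fsupp G3"
    then obtain u v where uv: "u \<in> fsupp f" "v \<in> fsupp G2" "wprod \<Gamma> Al u v = Some y"
      using FA_supp_mul unfolding G3_def by blast
    have v: "valid_word \<Gamma> Al v" "pend \<Gamma> (fst v) = i" "fst (fst v) \<noteq> i" using S2 uv(2) by auto
    have u: "valid_word \<Gamma> Al u" using FA_supp_valid[OF f(1) uv(1)] .
    have vne: "snd (fst v) \<noteq> []" using v by (auto simp: pend_def)
    have e: "pend \<Gamma> (fst u) = fst (fst v)" and yv: "fst y = (fst (fst u), snd (fst u) @ snd (fst v))"
      using uv(3) by (auto simp: wprod_def split: if_splits)
    have "pend \<Gamma> (fst y) = i" using yv pend_cat[OF e] v(2) by simp
    moreover have "snd (fst y) \<noteq> []" using yv vne by simp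
    moreover have "valid_word \<Gamma> Al y" using wprod_valid[OF u v(1) uv(3)] .
    ultimately show "y \<in> {v. valid_word \<Gamma> Al v \<and> pend \<Gamma> (fst v) = i \<and> snd (fst v) \<noteq> []}" by simp
  qed
  have "fsupp G4 = {}"
  proof -
    have "fsupp G4 \<subseteq> {v \<in> fsupp G3. fst (fst v) = i}" using supp_unit_l[OF C(3)] unfolding G4_def .
    moreover have "{v \<in> fsupp G3. fst (fst v) = i} = {}"
    proof -
      have "False" if "v \<in> fsupp G3" "fst (fst v) = i" for v
      proof -
        have "valid_word \<Gamma> Al v" "pend \<Gamma> (fst v) = i" "snd (fst v) \<noteq> []" using S3 that(1) by auto
        then show False using acyc_triv that(2) by simp
      qed
      then show ?thesis by blast
    qed
    ultimately show ?thesis by blast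
  qed
  then have "G4 = azero FA" by (intro ext) (auto simp: F_simps fsupp_iff)
  then have "pii G4 = azero LL" by (simp add: pii_zero)
  moreover have "pii G4 = amul LL (uu i) (amul LL x (amul LL (Lm.sub (aone LL) (uu i)) (amul LL y (uu i))))"
    using f g dC hC C by (simp add: G4_def G3_def G2_def G1_def pii_mul F.mul_C uu_pii ph)
  ultimately show ?thesis by simp
qed

end

context mainL begin

definition z0 :: "(('v \<times> 'e list) \<times> ('w \<times> 'f list \<Rightarrow> 'k) set list \<Rightarrow> 'k) \<Rightarrow> _" where
  "z0 f = (\<lambda>w. if snd (fst w) = [] then f w else 0)"

lemma z0_supp: "fsupp (z0 f) \<subseteq> fsupp f" by (auto simp: z0_def fsupp_iff split: if_splits)

lemma z0_C: "f \<in> acar FA \<Longrightarrow> z0 f \<in> acar FA"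
  using z0_supp by (auto simp: F_simps intro: finite_subset)

lemma z0_add: "z0 (aadd FA f g) = aadd FA (z0 f) (z0 g)" by (auto simp: z0_def F_simps)
lemma z0_sm: "z0 (asmul FA c f) = asmul FA c (z0 f)" by (auto simp: z0_def F_simps)
lemma z0_zero: "z0 (azero FA) = azero FA" by (auto simp: z0_def F_simps)

lemma wprod_snd: "wprod \<Gamma> Al u v = Some w \<Longrightarrow> snd (fst w) = snd (fst u) @ snd (fst v)"
  by (auto simp: wprod_def split: if_splits)

lemma z0_mul:
  assumes f: "f \<in> acar FA" and g: "g \<in> acar FA"
  shows "z0 (amul FA f g) = amul FA (z0 f) (z0 g)"
proof (rule ext)
  fix w
  have fin: "finite (fsupp f)" "finite (fsupp g)" using f g by (auto simp: F_simps)
  have M: "amul FA f g w = (\<Sum>u\<in>fsupp f. \<Sum>v\<in>fsupp g. if wprod \<Gamma> Al u v = Some w then f u * g v else 0)"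
    unfolding free_alg_def by (rule salg_mul_eq[OF fin(1) subset_refl fin(2) subset_refl])
  have M0: "amul FA (z0 f) (z0 g) w = (\<Sum>u\<in>fsupp f. \<Sum>v\<in>fsupp g. if wprod \<Gamma> Al u v = Some w then z0 f u * z0 g v else 0)"
    unfolding free_alg_def by (rule salg_mul_eq[OF fin(1) z0_supp fin(2) z0_supp])
  show "z0 (amul FA f g) w = amul FA (z0 f) (z0 g) w"
  proof (cases "snd (fst w) = []")
    case True
    have "(if wprod \<Gamma> Al u v = Some w then f u * g v else 0) =
          (if wprod \<Gamma> Al u v = Some w then z0 f u * z0 g v else 0)" for u v
    proof (cases "wprod \<Gamma> Al u v = Some w")
      case T: True
      then have "snd (fst u) = [] \<and> snd (fst v) = []" using wprod_snd True by auto
      then show ?thesis using T by (simp add: z0_def)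
    qed simp
    then have "amul FA f g w = amul FA (z0 f) (z0 g) w" unfolding M M0 by simp
    then show ?thesis using True by (simp add: z0_def)
  next
    case False
    have "(if wprod \<Gamma> Al u v = Some w then z0 f u * z0 g v else 0) = 0" for u v
    proof (cases "wprod \<Gamma> Al u v = Some w")
      case True
      then have "snd (fst u) \<noteq> [] \<or> snd (fst v) \<noteq> []" using wprod_snd False by auto
      then show ?thesis by (auto simp: z0_def)
    qed simp
    then have "amul FA (z0 f) (z0 g) w = 0" unfolding M0 by simp
    then show ?thesis using False by (simp add: z0_def)
  qed
qed

lemma z0_fst: "fsupp f \<subseteq> {x. fst x = p} \<Longrightarrow> z0 f = (if snd p = [] then f else azero FA)"
  by (rule ext) (auto simp: z0_def F_simps fsupp_iff)

lemma delta_fst: "delta (p, xs) x \<noteq> 0 \<Longrightarrow> fst x = p" by (auto simp: delta_def split: if_splits)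

lemma MG_fst: assumes g: "g \<in> MG" shows "\<exists>p. fsupp g \<subseteq> {x. fst x = p}"
  using g
proof (cases rule: MG_cases)
  case (add p as r a a')
  then show ?thesis by (intro exI[of _ p]) (auto simp: fsupp_iff delta_def split: if_splits)
next
  case (sm p as r a c)
  then show ?thesis by (intro exI[of _ p]) (auto simp: fsupp_iff delta_def split: if_splits)
qed

lemma z0_SP: "m \<in> SP \<Longrightarrow> z0 m \<in> SP"
proof -
  define T where "T = {m \<in> acar FA. z0 m \<in> SP}"
  have Tsub: "is_subspace FA T"
    unfolding is_subspace_def T_def
    using SP_zero z0_zero z0_add z0_sm SP_add SP_sm F.add_C F.sm_C F.zero_C
    by (auto simp: F_simps[symmetric])
  have "MG \<subseteq> T"
  proof
    fix g assume g: "g \<in> MG"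
    obtain p where p: "fsupp g \<subseteq> {x. fst x = p}" using MG_fst[OF g] by blast
    have "z0 g \<in> SP" using z0_fst[OF p] MG_SP[OF g] SP_zero by (simp add: F_simps)
    then show "g \<in> T" unfolding T_def using MG_C g by blast
  qed
  then have "SP \<subseteq> T" by (rule F.span_least[OF Tsub])
  then show "m \<in> SP \<Longrightarrow> z0 m \<in> SP" unfolding T_def by blast
qed

definition "J0 = pi1 ` {f \<in> acar FA. z0 f \<in> SP}"

lemma J0_ideal: "is_ideal KG J0"
proof -
  have sub: "is_subspace KG J0"
    unfolding is_subspace_def
  proof (intro conjI ballI allI)
    show "J0 \<subseteq> acar KG" unfolding J0_def using pi1_C by blast
    show "azero KG \<in> J0" unfolding J0_def using pi1_zero z0_zero SP_zero F.zero_C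
      by (force simp: F_simps)
  next
    fix x y assume "x \<in> J0" "y \<in> J0"
    then obtain f g where h: "f \<in> acar FA" "z0 f \<in> SP" "x = pi1 f" "g \<in> acar FA" "z0 g \<in> SP" "y = pi1 g"
      by (auto simp: J0_def)
    then have "aadd KG x y = pi1 (aadd FA f g)" by (simp add: pi1_add)
    moreover have "z0 (aadd FA f g) \<in> SP" using h z0_add SP_add by simp
    ultimately show "aadd KG x y \<in> J0" unfolding J0_def using F.add_C h by blast
  next
    fix c x assume "x \<in> J0"
    then obtain f where h: "f \<in> acar FA" "z0 f \<in> SP" "x = pi1 f" by (auto simp: J0_def)
    then have "asmul KG c x = pi1 (asmul FA c f)" by (simp add: pi1_sm)
    moreover have "z0 (asmul FA c f) \<in> SP" using h z0_sm SP_sm by simp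
    ultimately show "asmul KG c x \<in> J0" unfolding J0_def using F.sm_C h by blast
  qed
  have "amul KG r x \<in> J0 \<and> amul KG x r \<in> J0" if x: "x \<in> J0" and r: "r \<in> acar KG" for x r
  proof -
    obtain f where h: "f \<in> acar FA" "z0 f \<in> SP" "x = pi1 f" using x by (auto simp: J0_def)
    obtain g where g: "g \<in> acar FA" "r = pi1 g" using r KG_car by blast
    have "amul KG r x = pi1 (amul FA g f)" "amul KG x r = pi1 (amul FA f g)"
      using h g by (simp_all add: pi1_mul)
    moreover have "z0 (amul FA g f) \<in> SP" "z0 (amul FA f g) \<in> SP"
      using h g z0_mul z0_C SP_ideal by (auto simp: is_ideal_def)
    ultimately show ?thesis unfolding J0_def using F.mul_C h g by blast
  qed
  then show ?thesis using sub by (simp add: is_ideal_def)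
qed

lemma AI_J0: "AI \<Gamma> \<Sigma> \<Omega> I \<subseteq> J0"
proof
  fix X assume "X \<in> AI \<Gamma> \<Sigma> \<Omega> I"
  then obtain \<rho> G where h: "\<rho> \<in> I" "\<forall>p\<in>fsupp \<rho>. \<forall>r. 0 < r \<and> r < length (snd p) \<longrightarrow> is_path (\<Sigma> (vtx \<Gamma> p r)) (G p r)"
    "X = pi1 (\<lambda>x. \<Sum>p\<in>fsupp \<rho>. if x = rel_word \<Gamma> \<Sigma> \<Omega> p (G p) then \<rho> p else 0)"
    unfolding AI_def pi1_def by blast
  let ?f = "(\<lambda>x. \<Sum>p\<in>fsupp \<rho>. if x = rel_word \<Gamma> \<Sigma> \<Omega> p (G p) then \<rho> p else 0)"
  have "is_relation \<Gamma> \<rho>" using relI h(1) by blast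
  then obtain a b where ab: "\<forall>p\<in>fsupp \<rho>. fst p = a \<and> pend \<Gamma> p = b \<and> 2 \<le> length (snd p)"
    unfolding is_relation_def by blast
  have "z0 ?f = azero FA"
  proof (rule ext)
    fix x
    show "z0 ?f x = azero FA x"
    proof (cases "snd (fst x) = []")
      case True
      have "(if x = rel_word \<Gamma> \<Sigma> \<Omega> p (G p) then \<rho> p else 0) = 0" if "p \<in> fsupp \<rho>" for p
        using ab that True by (auto simp: rel_word_def)
      then show ?thesis by (simp add: z0_def F_simps)
    qed (simp add: z0_def F_simps)
  qed
  then have "z0 ?f \<in> SP" using SP_zero by (simp add: F_simps)
  then show "X \<in> J0" unfolding J0_def using h(3) AI_fun_C[OF h(1,2)] by blast
qed

lemma JJ_J0: "JJ \<subseteq> J0" by (rule K.ideal_gen_least[OF J0_ideal AI_J0])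

definition phi :: "'v \<Rightarrow> ((('v \<times> 'e list) \<times> ('w \<times> 'f list \<Rightarrow> 'k) set list) \<Rightarrow> 'k) \<Rightarrow> ('w \<times> 'f list \<Rightarrow> 'k)" where
  "phi i f = (\<lambda>t. \<Sum>w\<in>fsupp f. if fst w = (i, []) then f w * rep (hd (snd w)) t else 0)"

lemma phi_eq:
  assumes "finite S" "fsupp f \<subseteq> S"
  shows "phi i f = (\<lambda>t. \<Sum>w\<in>S. if fst w = (i, []) then f w * rep (hd (snd w)) t else 0)"
  unfolding phi_def
  by (rule ext, rule sum.mono_neutral_left[OF assms]) (auto simp: fsupp_iff)

lemma fin_supp: "f \<in> acar FA \<Longrightarrow> finite (fsupp f)" by (simp add: F_simps)

lemma phi_add: "f \<in> acar FA \<Longrightarrow> g \<in> acar FA \<Longrightarrow> phi i (aadd FA f g) = (\<lambda>t. phi i f t + phi i g t)"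
proof -
  assume f: "f \<in> acar FA" and g: "g \<in> acar FA"
  let ?S = "fsupp f \<union> fsupp g"
  have fS: "finite ?S" using fin_supp f g by simp
  have s: "fsupp (aadd FA f g) \<subseteq> ?S" by (auto simp: F_simps fsupp_iff)
  show ?thesis
    unfolding phi_eq[OF fS s] phi_eq[OF fS Un_upper1] phi_eq[OF fS Un_upper2]
    by (auto simp: F_simps sum.distrib[symmetric] distrib_right intro!: sum.cong)
qed

lemma phi_sm: "f \<in> acar FA \<Longrightarrow> phi i (asmul FA c f) = (\<lambda>t. c * phi i f t)"
proof -
  assume f: "f \<in> acar FA"
  have fS: "finite (fsupp f)" using fin_supp f by simp
  have s: "fsupp (asmul FA c f) \<subseteq> fsupp f" by (auto simp: F_simps fsupp_iff)
  show ?thesis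
    unfolding phi_eq[OF fS s] phi_eq[OF fS subset_refl]
    by (auto simp: F_simps sum_distrib_left mult.assoc intro!: sum.cong)
qed

lemma phi_zero: "phi i (azero FA) = (\<lambda>t. 0)" by (simp add: phi_def F_simps)

lemma phi_delta: "phi i (delta w) = (\<lambda>t. if fst w = (i, []) then rep (hd (snd w)) t else 0)"
proof -
  have "delta w w = (1::'k)" by (simp add: delta_def)
  then show ?thesis unfolding phi_def fsupp_delta by (simp cong: if_cong)
qed

lemma PA_simps: "aadd (path_alg Q) = (\<lambda>f g x. f x + g x)" "asmul (path_alg Q) = (\<lambda>c f x. c * f x)"
  "azero (path_alg Q) = (\<lambda>x. 0)"
  by (simp_all add: path_alg_def salg_def)

lemma Al_car_rep: "i \<in> qV \<Gamma> \<Longrightarrow> a \<in> acar (Al i) \<Longrightarrow> rep a \<in> acar (path_alg (\<Sigma> i)) \<and> cos (path_alg (\<Sigma> i)) (\<Omega> i) (rep a) = a"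
proof -
  assume i: "i \<in> qV \<Gamma>" and a: "a \<in> acar (Al i)"
  interpret O: kalg_ideal "path_alg (\<Sigma> i)" "\<Omega> i" by (rule Omega_ideal[OF i])
  obtain x where x: "x \<in> acar (path_alg (\<Sigma> i))" "a = cos (path_alg (\<Sigma> i)) (\<Omega> i) x"
    using a by (auto simp: Aalg_def quot_car)
  then show ?thesis using O.rep_cos_C O.cos_rep_cos by simp
qed

lemma MG_Z:
  assumes i: "i \<in> qV \<Gamma>" and g: "g \<in> MG"
  shows "phi i g \<in> \<Omega> i"
proof -
  interpret O: kalg_ideal "path_alg (\<Sigma> i)" "\<Omega> i" by (rule Omega_ideal[OF i])
  have z: "(\<lambda>t. 0) \<in> \<Omega> i" using O.J_zero by (simp add: PA_simps)
  show ?thesis using g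
  proof (cases rule: MG_cases)
    case (add p as r a a')
    have dC: "delta (p, as[r := aadd (Al (vtx \<Gamma> p r)) a a']) \<in> acar FA" "delta (p, as[r := a]) \<in> acar FA"
      "delta (p, as[r := a']) \<in> acar FA"
      using add upd_C kalg.add_C[OF kA[OF vtxV'[OF add(1,2)]]] by auto
    have pg: "phi i g = (\<lambda>t. phi i (delta (p, as[r := aadd (Al (vtx \<Gamma> p r)) a a'])) t
         - phi i (delta (p, as[r := a])) t - phi i (delta (p, as[r := a'])) t)"
      unfolding add(5) fun3_eq using dC
      by (simp add: phi_add phi_sm F.add_C F.sm_C)
    show ?thesis
    proof (cases "p = (i, [])")
      case False then show ?thesis using z by (simp add: pg phi_delta)
    next
      case True
      have las: "length as = 1" using valid_wordD(2)[OF add(1)] True by simp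
      then have r0: "r = 0" using add(2) by simp
      have vi: "vtx \<Gamma> p r = i" using True r0 by (simp add: vtx_def)
      have hd: "hd (as[r := x]) = x" for x using las r0 by (cases as) auto
      have aC: "a \<in> acar (Al i)" "a' \<in> acar (Al i)" using add(3,4) vi by auto
      note ra = Al_car_rep[OF i aC(1)] and ra' = Al_car_rep[OF i aC(2)]
      define y where "y = aadd (path_alg (\<Sigma> i)) (rep a) (rep a')"
      have yC: "y \<in> acar (path_alg (\<Sigma> i))" using ra ra' O.add_C by (simp add: y_def)
      have sum: "aadd (Al i) a a' = cos (path_alg (\<Sigma> i)) (\<Omega> i) y"
        by (simp add: Aalg_def quot_def y_def)
      have pd: "phi i (delta (p, as[r := x])) = rep x" for x using True hd by (simp add: phi_delta)
      have pg': "phi i g = (\<lambda>t. rep (aadd (Al i) a a') t - rep a t - rep a' t)" using pg pd vi by simp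
      have "O.sub (rep (cos (path_alg (\<Sigma> i)) (\<Omega> i) y)) y \<in> \<Omega> i" using O.rep_cos_sub[OF yC] .
      moreover have "O.sub (rep (cos (path_alg (\<Sigma> i)) (\<Omega> i) y)) y = phi i g"
        by (rule ext) (simp add: pg' sum PA_simps y_def)
      ultimately show ?thesis by simp
    qed
  next
    case (sm p as r a c)
    have dC: "delta (p, as[r := asmul (Al (vtx \<Gamma> p r)) c a]) \<in> acar FA" "delta (p, as[r := a]) \<in> acar FA"
      using sm upd_C kalg.sm_C[OF kA[OF vtxV'[OF sm(1,2)]]] by auto
    have pg: "phi i g = (\<lambda>t. phi i (delta (p, as[r := asmul (Al (vtx \<Gamma> p r)) c a])) t
         - c * phi i (delta (p, as[r := a])) t)"
      unfolding sm(4) fun2_eq using dC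
      by (simp add: phi_add phi_sm F.add_C F.sm_C)
    show ?thesis
    proof (cases "p = (i, [])")
      case False then show ?thesis using z by (simp add: pg phi_delta)
    next
      case True
      have las: "length as = 1" using valid_wordD(2)[OF sm(1)] True by simp
      then have r0: "r = 0" using sm(2) by simp
      have vi: "vtx \<Gamma> p r = i" using True r0 by (simp add: vtx_def)
      have hd: "hd (as[r := x]) = x" for x using las r0 by (cases as) auto
      have aC: "a \<in> acar (Al i)" using sm(3) vi by auto
      note ra = Al_car_rep[OF i aC]
      define y where "y = asmul (path_alg (\<Sigma> i)) c (rep a)"
      have yC: "y \<in> acar (path_alg (\<Sigma> i))" using ra O.sm_C by (simp add: y_def)
      have sum: "asmul (Al i) c a = cos (path_alg (\<Sigma> i)) (\<Omega> i) y"
        by (simp add: Aalg_def quot_def y_def)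
      have pd: "phi i (delta (p, as[r := x])) = rep x" for x using True hd by (simp add: phi_delta)
      have pg': "phi i g = (\<lambda>t. rep (asmul (Al i) c a) t - c * rep a t)" using pg pd vi by simp
      have "O.sub (rep (cos (path_alg (\<Sigma> i)) (\<Omega> i) y)) y \<in> \<Omega> i" using O.rep_cos_sub[OF yC] .
      moreover have "O.sub (rep (cos (path_alg (\<Sigma> i)) (\<Omega> i) y)) y = phi i g"
        by (rule ext) (simp add: pg' sum PA_simps y_def)
      ultimately show ?thesis by simp
    qed
  qed
qed

lemma SP_Z:
  assumes i: "i \<in> qV \<Gamma>" and m: "m \<in> SP"
  shows "phi i m \<in> \<Omega> i"
proof -
  interpret O: kalg_ideal "path_alg (\<Sigma> i)" "\<Omega> i" by (rule Omega_ideal[OF i])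
  define Z where "Z = {f \<in> acar FA. phi i f \<in> \<Omega> i}"
  have Zsub: "is_subspace FA Z"
    unfolding is_subspace_def
  proof (intro conjI ballI allI)
    show "Z \<subseteq> acar FA" by (auto simp: Z_def)
    show "azero FA \<in> Z" unfolding Z_def using F.zero_C O.J_zero by (simp add: phi_zero PA_simps)
  next
    fix x y assume "x \<in> Z" "y \<in> Z"
    then show "aadd FA x y \<in> Z" unfolding Z_def using O.J_add[of "phi i x" "phi i y"]
      by (simp add: phi_add F.add_C PA_simps)
  next
    fix c x assume "x \<in> Z"
    then show "asmul FA c x \<in> Z" unfolding Z_def using O.J_sm[of "phi i x" c]
      by (simp add: phi_sm F.sm_C PA_simps)
  qed
  have "MG \<subseteq> Z" unfolding Z_def using MG_Z[OF i] MG_C by blast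
  then have "SP \<subseteq> Z" by (rule F.span_least[OF Zsub])
  then show ?thesis using m by (auto simp: Z_def)
qed

lemma iot_inj:
  assumes i: "i \<in> qV \<Gamma>" and a: "a \<in> acar (Al i)" and b: "b \<in> acar (Al i)"
    and eq: "iot i a = iot i b"
  shows "a = b"
proof -
  interpret O: kalg_ideal "path_alg (\<Sigma> i)" "\<Omega> i" by (rule Omega_ideal[OF i])
  define da where "da = (delta (tw i a) :: ('v \<times> 'e list) \<times> ('w \<times> 'f list \<Rightarrow> 'k) set list \<Rightarrow> 'k)"
  define db where "db = (delta (tw i b) :: ('v \<times> 'e list) \<times> ('w \<times> 'f list \<Rightarrow> 'k) set list \<Rightarrow> 'k)"
  have dC: "da \<in> acar FA" "db \<in> acar FA" using delta_C tw_valid i a b by (auto simp: da_def db_def)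
  define d where "d = F.sub da db"
  have dC': "d \<in> acar FA" using dC by (simp add: d_def F.sub_C)
  have "cos KG JJ (pi1 da) = cos KG JJ (pi1 db)" using eq by (simp add: iot_pii pii_def da_def db_def)
  then have "K.sub (pi1 da) (pi1 db) \<in> JJ" using LI.cos_eq pi1_C dC by blast
  moreover have "K.sub (pi1 da) (pi1 db) = pi1 d" using dC by (simp add: d_def pi1_add pi1_sm F.sm_C)
  ultimately have "pi1 d \<in> J0" using JJ_J0 by auto
  then obtain f where f: "f \<in> acar FA" "z0 f \<in> SP" "pi1 f = pi1 d" by (auto simp: J0_def)
  have "F.sub f d \<in> SP" using pi1_eq f dC' by blast
  then have z1: "z0 (F.sub f d) \<in> SP" by (rule z0_SP)
  have "z0 d = aadd FA (z0 f) (F.neg (z0 (F.sub f d)))" by (rule ext) (simp add: z0_def F_simps)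
  then have "z0 d \<in> SP" using SP_add SP_sm f(2) z1 by simp
  moreover have "z0 d = d" by (rule ext) (simp add: z0_def d_def da_def db_def F_simps delta_def tw_def)
  ultimately have "d \<in> SP" by simp
  then have "phi i d \<in> \<Omega> i" by (rule SP_Z[OF i])
  moreover have "phi i d = O.sub (rep a) (rep b)"
    using dC by (simp add: d_def phi_add phi_sm F.sm_C phi_delta da_def db_def tw_def PA_simps)
  ultimately have "O.sub (rep a) (rep b) \<in> \<Omega> i" by simp
  then have "cos (path_alg (\<Sigma> i)) (\<Omega> i) (rep a) = cos (path_alg (\<Sigma> i)) (\<Omega> i) (rep b)"
    using O.cos_eq Al_car_rep[OF i a] Al_car_rep[OF i b] by blast
  then show ?thesis using Al_car_rep[OF i a] Al_car_rep[OF i b] by simp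
qed

end

context mainL begin

lemma restrict_restrict_sub: "A \<subseteq> B \<Longrightarrow> restrict (restrict F B) A = restrict F A"
  by (rule ext) (auto simp: restrict_def)

theorem final:
  assumes i: "i \<in> qV \<Gamma>" and cp: "complete_prim_idems (Al i) es s" and j: "j \<in> {1..s}"
  shows "let \<Lambda> = gbpa \<Gamma> \<Sigma> \<Omega> I;
             P = eA \<Lambda> (iota \<Gamma> \<Sigma> \<Omega> I i (es j));
             R = mod_rad \<Lambda> P;
             N = (\<lambda>l. if l = i then iota \<Gamma> \<Sigma> \<Omega> I i ` mod_rad (Aalg \<Sigma> \<Omega> i) (eA (Aalg \<Sigma> \<Omega> i) (es j))
                      else rspace \<Gamma> \<Sigma> \<Omega> I P l)
         in (\<forall>l\<in>qV \<Gamma>. rspace \<Gamma> \<Sigma> \<Omega> I R l = N l) \<and>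
            (\<forall>\<alpha>\<in>qE \<Gamma>. rmap \<Gamma> \<Sigma> \<Omega> I R \<alpha> = restrict (rmap \<Gamma> \<Sigma> \<Omega> I P \<alpha>) (N (qs \<Gamma> \<alpha>)))"
proof -
  have pe: "primitive_idem (Al i) (es j)" using cp j by (simp add: complete_prim_idems_def)
  then have ejC: "es j \<in> acar (Al i)" and ejI: "amul (Al i) (es j) (es j) = es j"
    by (auto simp: primitive_idem_def idem_def)
  interpret Ai: kalg "Al i" using Al_kalg[OF i] .
  interpret T: absT LL "Al i" "iot i" "uu i" "es j"
  proof (unfold_locales)
    show "\<And>a. a \<in> acar (Al i) \<Longrightarrow> iot i a \<in> acar LL" using iot_C[OF i] .
    show "\<And>a b. a \<in> acar (Al i) \<Longrightarrow> b \<in> acar (Al i) \<Longrightarrow> iot i (aadd (Al i) a b) = aadd LL (iot i a) (iot i b)"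
      using iot_add[OF i] .
    show "\<And>a c. a \<in> acar (Al i) \<Longrightarrow> iot i (asmul (Al i) c a) = asmul LL c (iot i a)"
      using iot_sm[OF i] .
    show "\<And>a b. a \<in> acar (Al i) \<Longrightarrow> b \<in> acar (Al i) \<Longrightarrow> iot i (amul (Al i) a b) = amul LL (iot i a) (iot i b)"
      using iot_mul[OF i] .
    show "\<And>a b. a \<in> acar (Al i) \<Longrightarrow> b \<in> acar (Al i) \<Longrightarrow> iot i a = iot i b \<Longrightarrow> a = b"
      using iot_inj[OF i] .
    show "iot i (aone (Al i)) = uu i" by (simp add: unit_at_def)
    show "es j \<in> acar (Al i)" by (rule ejC)
    show "amul (Al i) (es j) (es j) = es j" by (rule ejI)
    show "\<And>x. x \<in> acar LL \<Longrightarrow> \<exists>a\<in>acar (Al i). amul LL (uu i) (amul LL x (uu i)) = iot i a"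
      using corner_c[OF i] .
    show "\<And>x y. x \<in> acar LL \<Longrightarrow> y \<in> acar LL \<Longrightarrow>
      amul LL (uu i) (amul LL x (amul LL (Lm.sub (aone LL) (uu i)) (amul LL y (uu i)))) = azero LL"
      using Kz_c[OF i] .
  qed
  define P where "P = eA LL (iot i (es j))"
  define R where "R = mod_rad LL P"
  define N where "N = (\<lambda>l. if l = i then iot i ` mod_rad (Al i) (eA (Al i) (es j)) else rspace \<Gamma> \<Sigma> \<Omega> I P l)"
  have rs: "rspace \<Gamma> \<Sigma> \<Omega> I X l = {amul LL x (uu l) | x. x \<in> X}" for X l by (simp add: rspace_def)
  have 1: "\<forall>l\<in>qV \<Gamma>. rspace \<Gamma> \<Sigma> \<Omega> I R l = N l"
  proof
    fix l assume l: "l \<in> qV \<Gamma>"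
    show "rspace \<Gamma> \<Sigma> \<Omega> I R l = N l"
    proof (cases "l = i")
      case True
      then show ?thesis using T.A2 by (simp add: rs N_def R_def P_def)
    next
      case False
      then show ?thesis
        using T.A1[OF uu_C[OF l] uu_idem[OF l] uu_orth[OF l i False]]
        by (simp add: rs N_def R_def P_def)
    qed
  qed
  have sub: "N l \<subseteq> rspace \<Gamma> \<Sigma> \<Omega> I P l" if l: "l \<in> qV \<Gamma>" for l
  proof -
    have "rspace \<Gamma> \<Sigma> \<Omega> I R l \<subseteq> rspace \<Gamma> \<Sigma> \<Omega> I P l" unfolding rs R_def using T.R_P P_def by blast
    then show ?thesis using 1 l by simp
  qed
  have 2: "\<forall>\<alpha>\<in>qE \<Gamma>. rmap \<Gamma> \<Sigma> \<Omega> I R \<alpha> = restrict (rmap \<Gamma> \<Sigma> \<Omega> I P \<alpha>) (N (qs \<Gamma> \<alpha>))"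
  proof
    fix \<alpha> assume a: "\<alpha> \<in> qE \<Gamma>"
    then have q: "qs \<Gamma> \<alpha> \<in> qV \<Gamma>" using fG by (simp add: finite_quiver_def)
    show "rmap \<Gamma> \<Sigma> \<Omega> I R \<alpha> = restrict (rmap \<Gamma> \<Sigma> \<Omega> I P \<alpha>) (N (qs \<Gamma> \<alpha>))"
    proof -
      have "rspace \<Gamma> \<Sigma> \<Omega> I P (qs \<Gamma> \<alpha>) \<inter> N (qs \<Gamma> \<alpha>) = N (qs \<Gamma> \<alpha>)" using sub[OF q] by blast
      then show ?thesis unfolding rmap_def using 1 q by simp
    qed
  qed
  show ?thesis using 1 2 by (simp add: Let_def P_def R_def N_def)
qed

end

theorem proposition5p4:
  fixes \<Gamma> :: "('v, 'e) quiver"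
    and \<Sigma> :: "'v \<Rightarrow> ('w, 'f) quiver"
    and \<Omega> :: "'v \<Rightarrow> ('w \<times> 'f list \<Rightarrow> 'k::field) set"
    and I :: "('v \<times> 'e list \<Rightarrow> 'k) set"
    and es :: "nat \<Rightarrow> ('w \<times> 'f list \<Rightarrow> 'k) set"
    and s j :: nat and i :: 'v
  assumes alg_closed: "\<forall>p :: 'k poly. 0 < degree p \<longrightarrow> (\<exists>x. poly p x = 0)"
    and "finite_quiver \<Gamma>" and "acyclic_quiver \<Gamma>"
    and "\<forall>l\<in>qV \<Gamma>. finite_quiver (\<Sigma> l) \<and> admissible (\<Sigma> l) (\<Omega> l)"
    and "finite I" and "\<forall>\<rho>\<in>I. is_relation \<Gamma> \<rho>"
    and "admissible \<Gamma> (ideal_gen (path_alg \<Gamma>) I)"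
    and "i \<in> qV \<Gamma>"
    and "complete_prim_idems (Aalg \<Sigma> \<Omega> i) es s" and "j \<in> {1..s}"
  shows "let \<Lambda> = gbpa \<Gamma> \<Sigma> \<Omega> I;
             P = eA \<Lambda> (iota \<Gamma> \<Sigma> \<Omega> I i (es j));
             R = mod_rad \<Lambda> P;
             N = (\<lambda>l. if l = i then iota \<Gamma> \<Sigma> \<Omega> I i ` mod_rad (Aalg \<Sigma> \<Omega> i) (eA (Aalg \<Sigma> \<Omega> i) (es j))
                      else rspace \<Gamma> \<Sigma> \<Omega> I P l)
         in (\<forall>l\<in>qV \<Gamma>. rspace \<Gamma> \<Sigma> \<Omega> I R l = N l) \<and>
            (\<forall>\<alpha>\<in>qE \<Gamma>. rmap \<Gamma> \<Sigma> \<Omega> I R \<alpha> = restrict (rmap \<Gamma> \<Sigma> \<Omega> I P \<alpha>) (N (qs \<Gamma> \<alpha>)))"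
proof -
  interpret mainL \<Gamma> \<Sigma> \<Omega> I
    by (rule mainL.intro) (use assms in auto)
  show ?thesis by (rule final) (use assms in auto)
qed

end
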